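(* Let $n\ge 2$ and $\alpha,\beta\in[0,1]$. Suppose $U$ is a $2n$-qubit circuit such that $U|\mathrm{CAT}^{\alpha}_{2n}\rangle\langle\mathrm{CAT}^{\alpha}_{2n}|U^\dagger = |\mathrm{CAT}^{\beta}_{n}\rangle\langle\mathrm{CAT}^{\beta}_{n}|\otimes|\mathrm{CAT}^{\beta}_{n}\rangle\langle\mathrm{CAT}^{\beta}_{n}|$. If $H(\alpha)\neq 2H(\beta)$, then $U$ requires depth $\Omega(\log n)$. Moreover, if $V$ is a $2n$-qubit circuit with $V|\mathrm{CAT}^{\alpha}_{2n}\rangle\langle\mathrm{CAT}^{\alpha}_{2n}|V^\dagger = \psi$ and $\|\psi - |\mathrm{CAT}^{\beta}_{n}\rangle\langle\mathrm{CAT}^{\beta}_{n}|\otimes|\mathrm{CAT}^{\beta}_{n}\rangle\langle\mathrm{CAT}^{\beta}_{n}|\|_1\le\varepsilon$, then $\mathrm{depth}(V)\geq\Omega\left(\log\min\left\{n,\frac{1}{\varepsilon}\,|2H(\beta)-H(\alpha)|^{\ln 4}\right\}\right)$.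
   Context: The $\gamma$-biased CAT state on $m$ qubits is $|\mathrm{CAT}^{\gamma}_m\rangle = \sqrt{\gamma}|0^m\rangle+\sqrt{1-\gamma}|1^m\rangle$. $H(p)=-p\log p-(1-p)\log(1-p)$ is the binary entropy function. Circuits consist of layers of one- and two-qubit gates; depth is the number of layers. $\|\cdot\|_1$ is the trace norm. *)

theory Defs
  imports "Jordan_Normal_Form.Matrix" "Jordan_Normal_Form.Char_Poly"
begin

text \<open>An m-qubit register has Hilbert space of dimension 2^m; basis index x
  encodes the computational basis string with qubit k given by bit k of x.\<close>

definition qbit :: "nat \<Rightarrow> nat \<Rightarrow> nat" where
  "qbit k x = x div 2 ^ k mod 2"

definition adj :: "complex mat \<Rightarrow> complex mat" where
  "adj A = mat (dim_col A) (dim_row A) (\<lambda>(i,j). cnj (A $$ (j,i)))"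

definition is_unitary :: "nat \<Rightarrow> complex mat \<Rightarrow> bool" where
  "is_unitary d U \<longleftrightarrow> U \<in> carrier_mat d d \<and> adj U * U = 1\<^sub>m d"

type_synonym gate = "nat list \<times> complex mat"

definition valid_gate :: "nat \<Rightarrow> gate \<Rightarrow> bool" where
  "valid_gate m g \<longleftrightarrow> (let qs = fst g in
     (length qs = 1 \<or> length qs = 2) \<and> distinct qs \<and> set qs \<subseteq> {..<m}
     \<and> is_unitary (2 ^ length qs) (snd g))"

definition loc_index :: "nat list \<Rightarrow> nat \<Rightarrow> nat" where
  "loc_index qs x = (\<Sum>t<length qs. qbit (qs ! t) x * 2 ^ (length qs - 1 - t))"

definition embed_gate :: "nat \<Rightarrow> gate \<Rightarrow> complex mat" where
  "embed_gate m g = mat (2 ^ m) (2 ^ m) (\<lambda>(x,y).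
     if (\<forall>k<m. k \<notin> set (fst g) \<longrightarrow> qbit k x = qbit k y)
     then snd g $$ (loc_index (fst g) x, loc_index (fst g) y) else 0)"

type_synonym layer = "gate list"

definition valid_layer :: "nat \<Rightarrow> layer \<Rightarrow> bool" where
  "valid_layer m L \<longleftrightarrow> (\<forall>g \<in> set L. valid_gate m g) \<and>
     (\<forall>i<length L. \<forall>j<length L. i \<noteq> j \<longrightarrow> set (fst (L ! i)) \<inter> set (fst (L ! j)) = {})"

definition layer_mat :: "nat \<Rightarrow> layer \<Rightarrow> complex mat" where
  "layer_mat m L = foldr (\<lambda>g M. embed_gate m g * M) L (1\<^sub>m (2 ^ m))"

text \<open>A circuit is a list of layers (first layer applied first); its depth is
  the number of layers.\<close>
type_synonym circuit = "layer list"

definition valid_circuit :: "nat \<Rightarrow> circuit \<Rightarrow> bool" where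
  "valid_circuit m C \<longleftrightarrow> (\<forall>L \<in> set C. valid_layer m L)"

definition circuit_mat :: "nat \<Rightarrow> circuit \<Rightarrow> complex mat" where
  "circuit_mat m C = foldl (\<lambda>M L. layer_mat m L * M) (1\<^sub>m (2 ^ m)) C"

definition depth :: "circuit \<Rightarrow> nat" where
  "depth C = length C"

definition cat_vec :: "real \<Rightarrow> nat \<Rightarrow> complex vec" where
  "cat_vec \<gamma> m = vec (2 ^ m) (\<lambda>i. if i = 0 then complex_of_real (sqrt \<gamma>)
      else if i = 2 ^ m - 1 then complex_of_real (sqrt (1 - \<gamma>)) else 0)"

definition proj :: "complex vec \<Rightarrow> complex mat" where
  "proj v = mat (dim_vec v) (dim_vec v) (\<lambda>(i,j). v $ i * cnj (v $ j))"

definition cat_dm :: "real \<Rightarrow> nat \<Rightarrow> complex mat" where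
  "cat_dm \<gamma> m = proj (cat_vec \<gamma> m)"

definition tensor_mat :: "complex mat \<Rightarrow> complex mat \<Rightarrow> complex mat" where
  "tensor_mat A B = mat (dim_row A * dim_row B) (dim_col A * dim_col B)
     (\<lambda>(i,j). A $$ (i div dim_row B, j div dim_col B) * B $$ (i mod dim_row B, j mod dim_col B))"

text \<open>Trace norm = sum of singular values = sum, with algebraic multiplicity,
  of the square roots of the eigenvalues of A^dagger A.\<close>
definition trace_norm :: "complex mat \<Rightarrow> real" where
  "trace_norm A = (let p = char_poly (adj A * A) in
     \<Sum>z\<in>{x. poly p x = 0}. real (order z p) * sqrt (Re z))"

definition bin_entropy :: "real \<Rightarrow> real" where
  "bin_entropy p = (if p = 0 \<or> p = 1 then 0 else - p * log 2 p - (1 - p) * log 2 (1 - p))"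

end

theory Submission
  imports Defs "Jordan_Normal_Form.Schur_Decomposition"
begin

lemma mult_entry:
  assumes "A \<in> carrier_mat n k" "B \<in> carrier_mat k l" "i < n" "j < l"
  shows "(A * B) $$ (i,j) = (\<Sum>z<k. A $$ (i,z) * B $$ (z,j))"
  using assms by (auto simp: scalar_prod_def lessThan_atLeast0 intro!: sum.cong)

lemma high_bit: "(x::nat) < 2^m \<Longrightarrow> bit x k \<Longrightarrow> k < m"
proof (rule ccontr)
  assume a: "x < 2^m" "bit x k" "\<not> k < m"
  then have "2^m \<le> (2::nat)^k" by simp
  with a have "x < 2^k" by linarith
  then have "x div 2^k = 0" by simp
  with a show False by (simp add: bit_iff_odd)
qed

lemma bits_eq: "(\<And>k. bit (x::nat) k = bit y k) \<Longrightarrow> x = y"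
  by (simp add: bit_eq_iff)

lemma bits_lt: assumes "\<And>k. bit (x::nat) k \<Longrightarrow> k < m" shows "x < 2^m"
proof -
  have "take_bit m x = x" by (rule bits_eq) (use assms in \<open>auto simp: bit_take_bit_iff\<close>)
  then show ?thesis by (metis take_bit_nat_less_exp)
qed

lemma qbit_bit: "qbit k x = (if bit x k then 1 else 0)"
  unfolding qbit_def by (simp add: bit_iff_odd odd_iff_mod_2_eq_one)

definition agree :: "nat set \<Rightarrow> nat \<Rightarrow> nat \<Rightarrow> bool" where
  "agree S x y \<longleftrightarrow> (\<forall>k. k \<notin> S \<longrightarrow> bit x k = bit y k)"

definition same :: "nat set \<Rightarrow> nat \<Rightarrow> nat \<Rightarrow> bool" where
  "same S x y \<longleftrightarrow> (\<forall>k\<in>S. bit x k = bit y k)"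

definition mix :: "nat \<Rightarrow> nat set \<Rightarrow> nat \<Rightarrow> nat \<Rightarrow> nat" where
  "mix m S a b = horner_sum of_bool 2 (map (\<lambda>k. if k \<in> S then bit a k else bit b k) [0..<m])"

lemma bit_mix: "bit (mix m S a b) k \<longleftrightarrow> k < m \<and> (if k \<in> S then bit a k else bit b k)"
  by (auto simp: mix_def bit_horner_sum_bit_iff)

lemma mix_lt: "mix m S a b < 2^m"
  by (rule bits_lt) (simp add: bit_mix)

definition supp :: "nat \<Rightarrow> nat set \<Rightarrow> complex mat \<Rightarrow> bool" where
  "supp m S M \<longleftrightarrow> M \<in> carrier_mat (2^m) (2^m) \<and>
     (\<forall>x y. x < 2^m \<longrightarrow> y < 2^m \<longrightarrow> \<not> agree S x y \<longrightarrow> M $$ (x,y) = 0) \<and>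
     (\<forall>x y x' y'. x < 2^m \<longrightarrow> y < 2^m \<longrightarrow> x' < 2^m \<longrightarrow> y' < 2^m \<longrightarrow>
        agree S x y \<longrightarrow> agree S x' y' \<longrightarrow> same S x x' \<longrightarrow> same S y y' \<longrightarrow> M $$ (x,y) = M $$ (x',y'))"

lemma suppD:
  assumes "supp m S M"
  shows "M \<in> carrier_mat (2^m) (2^m)"
    "x < 2^m \<Longrightarrow> y < 2^m \<Longrightarrow> \<not> agree S x y \<Longrightarrow> M $$ (x,y) = 0"
    "x < 2^m \<Longrightarrow> y < 2^m \<Longrightarrow> x' < 2^m \<Longrightarrow> y' < 2^m \<Longrightarrow>
        agree S x y \<Longrightarrow> agree S x' y' \<Longrightarrow> same S x x' \<Longrightarrow> same S y y' \<Longrightarrow> M $$ (x,y) = M $$ (x',y')"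
  using assms unfolding supp_def by blast+

lemma supp_mono:
  assumes "supp m S M" "S \<subseteq> T" shows "supp m T M"
  unfolding supp_def
proof (intro conjI allI impI)
  show "M \<in> carrier_mat (2^m) (2^m)" using suppD(1)[OF assms(1)] .
  fix x y assume "x < 2^m" "y < 2^m" "\<not> agree T x y"
  then show "M $$ (x,y) = 0" using suppD(2)[OF assms(1)] assms(2) unfolding agree_def by blast
next
  fix x y x' y' assume xy: "x < 2^m" "y < 2^m" "x' < 2^m" "y' < 2^m"
    and a: "agree T x y" "agree T x' y'" "same T x x'" "same T y y'"
  show "M $$ (x,y) = M $$ (x',y')"
  proof (cases "agree S x y")
    case True
    have "agree S x' y'" unfolding agree_def
    proof (intro allI impI)
      fix k assume "k \<notin> S"
      show "bit x' k = bit y' k"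
      proof (cases "k \<in> T")
        case True with a \<open>k \<notin> S\<close> \<open>agree S x y\<close> show ?thesis unfolding agree_def same_def by metis
      next
        case False with a show ?thesis unfolding agree_def by blast
      qed
    qed
    moreover have "same S x x'" "same S y y'" using a assms(2) unfolding same_def by auto
    ultimately show ?thesis using suppD(3)[OF assms(1)] xy True by blast
  next
    case False
    have "\<not> agree S x' y'"
    proof
      assume h: "agree S x' y'"
      have "agree S x y" unfolding agree_def
      proof (intro allI impI)
        fix k assume "k \<notin> S"
        show "bit x k = bit y k"
        proof (cases "k \<in> T")
          case True with a \<open>k \<notin> S\<close> h show ?thesis unfolding agree_def same_def by metis
        next
          case False with a show ?thesis unfolding agree_def by blast
        qed
      qed
      with False show False by simp
    qed
    then show ?thesis using suppD(2)[OF assms(1)] xy False by metis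
  qed
qed

lemma supp_one: "supp m S (1\<^sub>m (2^m))"
  unfolding supp_def
proof (intro conjI allI impI)
  fix x y assume "x < 2^m" "y < 2^m" "\<not> agree S x y"
  then show "1\<^sub>m (2^m) $$ (x,y) = 0" unfolding agree_def by auto
next
  fix x y x' y' :: nat assume xy: "x < 2^m" "y < 2^m" "x' < 2^m" "y' < 2^m"
    and a: "agree S x y" "agree S x' y'" "same S x x'" "same S y y'"
  have "x = y \<longleftrightarrow> x' = y'"
  proof
    assume "x = y" show "x' = y'"
      by (rule bits_eq) (use a \<open>x = y\<close> in \<open>auto simp: agree_def same_def\<close>)
  next
    assume "x' = y'" show "x = y"
      by (rule bits_eq) (use a \<open>x' = y'\<close> in \<open>auto simp: agree_def same_def\<close>)
  qed
  then show "1\<^sub>m (2^m) $$ (x,y) = 1\<^sub>m (2^m) $$ (x',y')" using xy by simp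
qed simp

lemma supp_mult:
  assumes A: "supp m S A" and B: "supp m T B"
  shows "supp m (S \<union> T) (A * B)"
proof -
  have cA: "A \<in> carrier_mat (2^m) (2^m)" and cB: "B \<in> carrier_mat (2^m) (2^m)"
    using suppD(1) A B by auto
  define G where "G x y = {z. z < 2^m \<and> agree S x z \<and> agree T z y}" for x y
  have sumG: "(A * B) $$ (x,y) = (\<Sum>z\<in>G x y. A $$ (x,z) * B $$ (z,y))"
    if "x < 2^m" "y < 2^m" for x y
  proof -
    have "(A * B) $$ (x,y) = (\<Sum>z<2^m. A $$ (x,z) * B $$ (z,y))"
      by (rule mult_entry[OF cA cB that])
    also have "\<dots> = (\<Sum>z\<in>G x y. A $$ (x,z) * B $$ (z,y))"
    proof (rule sum.mono_neutral_right)
      show "\<forall>z\<in>{..<2^m} - G x y. A $$ (x,z) * B $$ (z,y) = 0"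
      proof
        fix z assume z: "z \<in> {..<2^m} - G x y"
        then have "\<not> agree S x z \<or> \<not> agree T z y" "z < 2^m" by (auto simp: G_def)
        then show "A $$ (x,z) * B $$ (z,y) = 0" using suppD(2)[OF A] suppD(2)[OF B] that by auto
      qed
    qed (auto simp: G_def)
    finally show ?thesis .
  qed
  show ?thesis unfolding supp_def
  proof (intro conjI allI impI)
    show "A * B \<in> carrier_mat (2^m) (2^m)" using cA cB by simp
  next
    fix x y assume xy: "x < 2^m" "y < 2^m" "\<not> agree (S \<union> T) x y"
    have "G x y = {}" using xy(3) unfolding G_def agree_def by auto
    then show "(A * B) $$ (x,y) = 0" using sumG xy by simp
  next
    fix x y x' y' assume xy: "x < 2^m" "y < 2^m" "x' < 2^m" "y' < 2^m"
      and a: "agree (S \<union> T) x y" "agree (S \<union> T) x' y'" "same (S \<union> T) x x'" "same (S \<union> T) y y'"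
    define \<phi> where "\<phi> z = mix m (S \<union> T) z x'" for z
    define \<psi> where "\<psi> z = mix m (S \<union> T) z x" for z
    have bij: "bij_betw \<phi> (G x y) (G x' y')"
    proof (rule bij_betw_byWitness[where f' = \<psi>])
      show "\<forall>z\<in>G x y. \<psi> (\<phi> z) = z"
      proof
        fix z assume z: "z \<in> G x y"
        show "\<psi> (\<phi> z) = z"
        proof (rule bits_eq)
          fix k
          show "bit (\<psi> (\<phi> z)) k = bit z k"
            using z xy high_bit[of z m k] high_bit[of x m k]
            by (auto simp: \<psi>_def \<phi>_def bit_mix G_def agree_def)
        qed
      qed
      show "\<forall>z\<in>G x' y'. \<phi> (\<psi> z) = z"
      proof
        fix z assume z: "z \<in> G x' y'"
        show "\<phi> (\<psi> z) = z"
        proof (rule bits_eq)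
          fix k
          show "bit (\<phi> (\<psi> z)) k = bit z k"
            using z xy high_bit[of z m k] high_bit[of x' m k]
            by (auto simp: \<psi>_def \<phi>_def bit_mix G_def agree_def)
        qed
      qed
      show "\<phi> ` G x y \<subseteq> G x' y'"
      proof
        fix w assume "w \<in> \<phi> ` G x y"
        then obtain z where z: "z \<in> G x y" "w = \<phi> z" by auto
        show "w \<in> G x' y'" unfolding G_def
        proof (intro CollectI conjI)
          show "w < 2^m" using z by (simp add: \<phi>_def mix_lt)
          show "agree S x' w" unfolding agree_def
          proof (intro allI impI)
            fix k assume k: "k \<notin> S"
            show "bit x' k = bit w k"
              using z k a xy high_bit[of x' m k] by (auto simp: \<phi>_def bit_mix G_def agree_def same_def)
          qed
          show "agree T w y'" unfolding agree_def
          proof (intro allI impI)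
            fix k assume k: "k \<notin> T"
            show "bit w k = bit y' k"
              using z k a xy high_bit[of x' m k] high_bit[of y' m k]
              by (auto simp: \<phi>_def bit_mix G_def agree_def same_def)
          qed
        qed
      qed
      show "\<psi> ` G x' y' \<subseteq> G x y"
      proof
        fix w assume "w \<in> \<psi> ` G x' y'"
        then obtain z where z: "z \<in> G x' y'" "w = \<psi> z" by auto
        show "w \<in> G x y" unfolding G_def
        proof (intro CollectI conjI)
          show "w < 2^m" using z by (simp add: \<psi>_def mix_lt)
          show "agree S x w" unfolding agree_def
          proof (intro allI impI)
            fix k assume k: "k \<notin> S"
            show "bit x k = bit w k"
              using z k a xy high_bit[of x m k] by (auto simp: \<psi>_def bit_mix G_def agree_def same_def)
          qed
          show "agree T w y" unfolding agree_def
          proof (intro allI impI)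
            fix k assume k: "k \<notin> T"
            show "bit w k = bit y k"
              using z k a xy high_bit[of x m k] high_bit[of y m k]
              by (auto simp: \<psi>_def bit_mix G_def agree_def same_def)
          qed
        qed
      qed
    qed
    have trm: "A $$ (x,z) * B $$ (z,y) = A $$ (x', \<phi> z) * B $$ (\<phi> z, y')" if z: "z \<in> G x y" for z
    proof -
      have pz: "\<phi> z \<in> G x' y'" using bij z by (auto simp: bij_betw_def)
      have "A $$ (x,z) = A $$ (x', \<phi> z)"
      proof (rule suppD(3)[OF A])
        show "x < 2^m" "z < 2^m" "x' < 2^m" "\<phi> z < 2^m" using xy z pz by (auto simp: G_def)
        show "agree S x z" "agree S x' (\<phi> z)" using z pz by (auto simp: G_def)
        show "same S x x'" using a by (auto simp: same_def)
        show "same S z (\<phi> z)" using z by (auto simp: same_def \<phi>_def bit_mix G_def high_bit)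
      qed
      moreover have "B $$ (z,y) = B $$ (\<phi> z, y')"
      proof (rule suppD(3)[OF B])
        show "z < 2^m" "y < 2^m" "\<phi> z < 2^m" "y' < 2^m" using xy z pz by (auto simp: G_def)
        show "agree T z y" "agree T (\<phi> z) y'" using z pz by (auto simp: G_def)
        show "same T y y'" using a by (auto simp: same_def)
        show "same T z (\<phi> z)" using z by (auto simp: same_def \<phi>_def bit_mix G_def high_bit)
      qed
      ultimately show ?thesis by simp
    qed
    have "(A * B) $$ (x,y) = (\<Sum>z\<in>G x y. A $$ (x', \<phi> z) * B $$ (\<phi> z, y'))"
      using sumG[OF xy(1,2)] trm by simp
    also have "\<dots> = (\<Sum>w\<in>G x' y'. A $$ (x', w) * B $$ (w, y'))"
      by (rule sum.reindex_bij_betw[OF bij, where g = "\<lambda>w. A $$ (x', w) * B $$ (w, y')"])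
    also have "\<dots> = (A * B) $$ (x',y')" using sumG[OF xy(3,4)] by simp
    finally show "(A * B) $$ (x,y) = (A * B) $$ (x',y')" .
  qed
qed

lemma adj_dim[simp]: "dim_row (adj A) = dim_col A" "dim_col (adj A) = dim_row A"
  by (auto simp: adj_def)

lemma adj_carrier: "A \<in> carrier_mat n k \<Longrightarrow> adj A \<in> carrier_mat k n"
  by (auto simp: adj_def)

lemma adj_index[simp]: "i < dim_col A \<Longrightarrow> j < dim_row A \<Longrightarrow> adj A $$ (i,j) = cnj (A $$ (j,i))"
  by (simp add: adj_def)

lemma adj_adj[simp]: "adj (adj A) = A"
proof (rule eq_matI)
  fix i j assume "i < dim_row A" "j < dim_col A"
  then show "adj (adj A) $$ (i,j) = A $$ (i,j)" by simp
qed simp_all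

lemma adj_mult:
  assumes "A \<in> carrier_mat n k" "B \<in> carrier_mat k l"
  shows "adj (A * B) = adj B * adj A"
proof (rule eq_matI)
  fix i j assume ij: "i < dim_row (adj B * adj A)" "j < dim_col (adj B * adj A)"
  then have i: "i < l" and j: "j < n" using assms by auto
  have "adj (A * B) $$ (i,j) = cnj ((A * B) $$ (j,i))" using assms i j by simp
  also have "\<dots> = cnj (\<Sum>z<k. A $$ (j,z) * B $$ (z,i))" using mult_entry[OF assms j i] by simp
  also have "\<dots> = (\<Sum>z<k. adj B $$ (i,z) * adj A $$ (z,j))"
    using assms i j by (auto simp: mult.commute intro!: sum.cong)
  also have "\<dots> = (adj B * adj A) $$ (i,j)"
    using mult_entry[OF adj_carrier[OF assms(2)] adj_carrier[OF assms(1)] i j] by simp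
  finally show "adj (A * B) $$ (i,j) = (adj B * adj A) $$ (i,j)" .
qed (use assms in auto)

lemma adj_one[simp]: "adj (1\<^sub>m n) = 1\<^sub>m n"
  by (rule eq_matI) (auto simp: adj_def)

lemma unitary_right:
  assumes "is_unitary d U" shows "U * adj U = 1\<^sub>m d"
  using assms mat_mult_left_right_inverse[of "adj U" d U] adj_carrier[of U d d]
  unfolding is_unitary_def by auto

lemma unitary_adj: "is_unitary d U \<Longrightarrow> is_unitary d (adj U)"
  using unitary_right[of d U] adj_carrier[of U d d] unfolding is_unitary_def by auto

lemma unitary_mult:
  assumes "is_unitary d U" "is_unitary d V" shows "is_unitary d (U * V)"
proof -
  have c: "U \<in> carrier_mat d d" "V \<in> carrier_mat d d" "adj U \<in> carrier_mat d d" "adj V \<in> carrier_mat d d"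
    using assms adj_carrier unfolding is_unitary_def by auto
  have "adj (U * V) * (U * V) = adj V * (adj U * U) * V"
    using c by (simp add: adj_mult[OF c(1,2)] assoc_mult_mat[of _ d d _ d _ d])
  also have "\<dots> = 1\<^sub>m d" using assms c unfolding is_unitary_def by simp
  finally show ?thesis using c unfolding is_unitary_def by simp
qed

lemma unitary_one: "is_unitary d (1\<^sub>m d)"
  unfolding is_unitary_def by simp

lemma agree_sym: "agree S x y = agree S y x"
  unfolding agree_def by auto

lemma same_sym: "same S x y = same S y x"
  unfolding same_def by auto

lemma supp_adj:
  assumes "supp m S M" shows "supp m S (adj M)"
proof -
  have c: "M \<in> carrier_mat (2^m) (2^m)" using suppD(1)[OF assms] .
  show ?thesis unfolding supp_def
  proof (intro conjI allI impI)
    show "adj M \<in> carrier_mat (2^m) (2^m)" using adj_carrier[OF c] .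
  next
    fix x y assume "x < 2^m" "y < 2^m" "\<not> agree S x y"
    then show "adj M $$ (x,y) = 0" using c suppD(2)[OF assms, of y x] agree_sym by auto
  next
    fix x y x' y' assume xy: "x < 2^m" "y < 2^m" "x' < 2^m" "y' < 2^m"
      and a: "agree S x y" "agree S x' y'" "same S x x'" "same S y y'"
    have "M $$ (y,x) = M $$ (y',x')"
      by (rule suppD(3)[OF assms]) (use xy a agree_sym in auto)
    then show "adj M $$ (x,y) = adj M $$ (x',y')" using c xy by simp
  qed
qed

lemma sum_single:
  assumes "finite A" "z0 \<in> A" "\<And>z. z \<in> A \<Longrightarrow> z \<noteq> z0 \<Longrightarrow> f z = 0"
  shows "sum f A = f z0"
proof -
  have "sum f A = sum f {z0}"
    by (rule sum.mono_neutral_right) (use assms in auto)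
  then show ?thesis by simp
qed

lemma prod_single:
  assumes A: "supp m S A" and B: "supp m T B" and ST: "S \<inter> T = {}"
    and xy: "x < 2^m" "y < 2^m"
  shows "(A * B) $$ (x,y) = A $$ (x, mix m S y x) * B $$ (mix m S y x, y)"
proof -
  have cA: "A \<in> carrier_mat (2^m) (2^m)" and cB: "B \<in> carrier_mat (2^m) (2^m)"
    using suppD(1) A B by auto
  let ?z = "mix m S y x"
  have "(A * B) $$ (x,y) = (\<Sum>z<2^m. A $$ (x,z) * B $$ (z,y))"
    by (rule mult_entry[OF cA cB xy])
  also have "\<dots> = A $$ (x, ?z) * B $$ (?z, y)"
  proof (rule sum_single)
    show "?z \<in> {..<2^m}" by (simp add: mix_lt)
    fix z assume z: "z \<in> {..<2^m}" "z \<noteq> ?z"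
    show "A $$ (x,z) * B $$ (z,y) = 0"
    proof (cases "agree S x z \<and> agree T z y")
      case True
      have "z = ?z"
      proof (rule bits_eq)
        fix k show "bit z k = bit ?z k"
          using True ST z high_bit[of z m k] by (auto simp: bit_mix agree_def)
      qed
      with z show ?thesis by simp
    next
      case False
      then show ?thesis using suppD(2)[OF A] suppD(2)[OF B] z xy by auto
    qed
  qed simp
  finally show ?thesis .
qed

lemma diag_prod:
  assumes A: "supp m S A" and B: "supp m T B" and ST: "S \<inter> T = {}" and x: "x < 2^m"
  shows "(A * B) $$ (x,x) = A $$ (x,x) * B $$ (x,x)"
proof -
  have "mix m S x x = x"
    by (rule bits_eq) (use x high_bit[of x m] in \<open>auto simp: bit_mix\<close>)
  then show ?thesis using prod_single[OF A B ST x x] by simp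
qed

lemma supp_commute:
  assumes A: "supp m S A" and B: "supp m T B" and ST: "S \<inter> T = {}"
  shows "A * B = B * A"
proof -
  have cA: "A \<in> carrier_mat (2^m) (2^m)" and cB: "B \<in> carrier_mat (2^m) (2^m)"
    using suppD(1) A B by auto
  show ?thesis
  proof (rule eq_matI)
    fix x y assume "x < dim_row (B * A)" "y < dim_col (B * A)"
    then have xy: "x < 2^m" "y < 2^m" using cA cB by auto
    show "(A * B) $$ (x,y) = (B * A) $$ (x,y)"
    proof (cases "agree (S \<union> T) x y")
      case False
      have "(A * B) $$ (x,y) = 0" using suppD(2)[OF supp_mult[OF A B]] xy False by simp
      moreover have "(B * A) $$ (x,y) = 0" using suppD(2)[OF supp_mult[OF B A]] xy False
        by (simp add: Un_commute)
      ultimately show ?thesis by simp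
    next
      case True
      let ?z = "mix m S y x" and ?w = "mix m T y x"
      have TS: "T \<inter> S = {}" using ST by auto
      have 1: "(A * B) $$ (x,y) = A $$ (x, ?z) * B $$ (?z, y)" by (rule prod_single[OF A B ST xy])
      have 2: "(B * A) $$ (x,y) = B $$ (x, ?w) * A $$ (?w, y)" by (rule prod_single[OF B A TS xy])
      have zl: "?z < 2^m" "?w < 2^m" by (auto simp: mix_lt)
      have "A $$ (x, ?z) = A $$ (?w, y)"
        by (rule suppD(3)[OF A]) (use xy zl True ST high_bit[of x m] high_bit[of y m] in
            \<open>auto simp: agree_def same_def bit_mix\<close>)
      moreover have "B $$ (?z, y) = B $$ (x, ?w)"
        by (rule suppD(3)[OF B]) (use xy zl True ST high_bit[of x m] high_bit[of y m] in
            \<open>auto simp: agree_def same_def bit_mix\<close>)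
      ultimately show ?thesis using 1 2 by simp
    qed
  qed (use cA cB in auto)
qed

lemma conj_disjoint:
  assumes Ob: "supp m S Ob" and V: "supp m G V" and SG: "S \<inter> G = {}"
    and u: "adj V * V = 1\<^sub>m (2^m)"
  shows "adj V * Ob * V = Ob"
proof -
  have cO: "Ob \<in> carrier_mat (2^m) (2^m)" and cV: "V \<in> carrier_mat (2^m) (2^m)"
    using suppD(1) Ob V by auto
  have cV': "adj V \<in> carrier_mat (2^m) (2^m)" using adj_carrier[OF cV] .
  have "adj V * Ob * V = adj V * (Ob * V)" using cO cV cV' by simp
  also have "Ob * V = V * Ob" by (rule supp_commute[OF Ob V SG])
  also have "adj V * (V * Ob) = (adj V * V) * Ob" using cO cV cV' by simp
  also have "\<dots> = Ob" using u cO by simp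
  finally show ?thesis .
qed

lemma conj_supp:
  assumes Ob: "supp m S Ob" and V: "supp m G V"
  shows "supp m (S \<union> G) (adj V * Ob * V)"
proof -
  have "supp m ((G \<union> S) \<union> G) (adj V * Ob * V)"
    by (rule supp_mult[OF supp_mult[OF supp_adj[OF V] Ob] V])
  then show ?thesis by (rule supp_mono) auto
qed

definition diagm :: "nat \<Rightarrow> (nat \<Rightarrow> complex) \<Rightarrow> complex mat" where
  "diagm m f = mat (2^m) (2^m) (\<lambda>(i,j). if i = j then f i else 0)"

lemma supp_diag:
  assumes "\<And>i i'. i < 2^m \<Longrightarrow> i' < 2^m \<Longrightarrow> same S i i' \<Longrightarrow> f i = f i'"
  shows "supp m S (diagm m f)"
  unfolding supp_def
proof (intro conjI allI impI)
  show "diagm m f \<in> carrier_mat (2^m) (2^m)" by (simp add: diagm_def)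
next
  fix x y assume "x < 2^m" "y < 2^m" "\<not> agree S x y"
  then show "diagm m f $$ (x,y) = 0" by (auto simp: diagm_def agree_def)
next
  fix x y x' y' :: nat assume xy: "x < 2^m" "y < 2^m" "x' < 2^m" "y' < 2^m"
    and a: "agree S x y" "agree S x' y'" "same S x x'" "same S y y'"
  have e: "x = y \<longleftrightarrow> x' = y'"
  proof
    assume "x = y" show "x' = y'"
      by (rule bits_eq) (use a \<open>x = y\<close> in \<open>auto simp: agree_def same_def\<close>)
  next
    assume "x' = y'" show "x = y"
      by (rule bits_eq) (use a \<open>x' = y'\<close> in \<open>auto simp: agree_def same_def\<close>)
  qed
  show "diagm m f $$ (x,y) = diagm m f $$ (x',y')"
    using xy e assms[of x x'] a by (auto simp: diagm_def)
qed

definition zmat :: "nat \<Rightarrow> nat \<Rightarrow> complex mat" where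
  "zmat m a = diagm m (\<lambda>i. if bit i a then -1 else 1)"

lemma supp_zmat: "supp m {a} (zmat m a)"
  unfolding zmat_def by (rule supp_diag) (auto simp: same_def)

lemma zmat_carrier: "zmat m a \<in> carrier_mat (2^m) (2^m)"
  by (simp add: zmat_def diagm_def)

lemma diagm_mult: "diagm m f * diagm m g = diagm m (\<lambda>i. f i * g i)"
proof (rule eq_matI)
  fix i j assume ij: "i < dim_row (diagm m (\<lambda>i. f i * g i))" "j < dim_col (diagm m (\<lambda>i. f i * g i))"
  then have i: "i < 2^m" and j: "j < 2^m" by (auto simp: diagm_def)
  have "(diagm m f * diagm m g) $$ (i,j) = (\<Sum>z<2^m. diagm m f $$ (i,z) * diagm m g $$ (z,j))"
    by (rule mult_entry[OF _ _ i j]) (auto simp: diagm_def)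
  also have "\<dots> = diagm m f $$ (i,i) * diagm m g $$ (i,j)"
    by (rule sum_single) (use i j in \<open>auto simp: diagm_def\<close>)
  finally show "(diagm m f * diagm m g) $$ (i,j) = diagm m (\<lambda>i. f i * g i) $$ (i,j)"
    using i j by (auto simp: diagm_def)
qed (auto simp: diagm_def)

lemma unitary_zmat: "is_unitary (2^m) (zmat m a)"
proof -
  have "adj (zmat m a) = zmat m a"
    by (rule eq_matI) (auto simp: zmat_def diagm_def adj_def)
  moreover have "zmat m a * zmat m a = 1\<^sub>m (2^m)"
    unfolding zmat_def diagm_mult by (rule eq_matI) (auto simp: diagm_def)
  ultimately show ?thesis unfolding is_unitary_def using zmat_carrier by simp
qed

lemma cond_agree:
  assumes "x < 2^m" "y < 2^m"
  shows "(\<forall>k<m. k \<notin> G \<longrightarrow> qbit k x = qbit k y) \<longleftrightarrow> agree G x y"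
  using assms high_bit[of x m] high_bit[of y m] unfolding agree_def qbit_bit
  by (metis one_neq_zero)

lemma loc_index_horner:
  "loc_index qs z = horner_sum of_bool 2 (rev (map (bit z) qs))"
proof -
  let ?k = "length qs"
  have "loc_index qs z = (\<Sum>t<?k. (of_bool (bit z (qs ! t)) :: nat) * 2 ^ (?k - 1 - t))"
    unfolding loc_index_def qbit_bit by (intro sum.cong) auto
  also have "\<dots> = (\<Sum>i<?k. (of_bool (bit z (qs ! (?k - Suc i))) :: nat) * 2 ^ (?k - 1 - (?k - Suc i)))"
    by (rule sum.nat_diff_reindex[symmetric])
  also have "\<dots> = (\<Sum>i<?k. (of_bool (bit z (qs ! (?k - Suc i))) :: nat) * 2 ^ i)"
    by (intro sum.cong) auto
  also have "\<dots> = horner_sum of_bool 2 (rev (map (bit z) qs))"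
    by (simp add: horner_sum_eq_sum rev_nth lessThan_atLeast0)
  finally show ?thesis .
qed

lemma bit_loc_index:
  "bit (loc_index qs z) i \<longleftrightarrow> i < length qs \<and> bit z (qs ! (length qs - Suc i))"
  unfolding loc_index_horner by (auto simp: bit_horner_sum_bit_iff rev_nth)

lemma loc_index_lt: "loc_index qs z < 2 ^ length qs"
  by (rule bits_lt) (simp add: bit_loc_index)

lemma loc_index_same:
  assumes "same (set qs) x x'" shows "loc_index qs x = loc_index qs x'"
  unfolding loc_index_def using assms by (auto simp: same_def qbit_bit intro!: sum.cong)

definition idx :: "nat list \<Rightarrow> nat \<Rightarrow> nat" where
  "idx qs q = (THE t. t < length qs \<and> qs ! t = q)"

lemma idx_nth: "distinct qs \<Longrightarrow> t < length qs \<Longrightarrow> idx qs (qs ! t) = t"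
  unfolding idx_def by (rule the_equality) (auto simp: nth_eq_iff_index_eq)

lemma idx_in: "distinct qs \<Longrightarrow> q \<in> set qs \<Longrightarrow> idx qs q < length qs \<and> qs ! idx qs q = q"
  by (metis idx_nth in_set_conv_nth)

lemma loc_bij:
  assumes d: "distinct qs" and sub: "set qs \<subseteq> {..<m}" and x: "x < 2^m"
  shows "bij_betw (loc_index qs) {z. z < 2^m \<and> agree (set qs) x z} {..<2 ^ length qs}"
proof -
  let ?k = "length qs"
  define mk where "mk j = (horner_sum of_bool 2
     (map (\<lambda>q. if q \<in> set qs then bit j (?k - Suc (idx qs q)) else bit x q) [0..<m]) :: nat)" for j :: nat
  have bit_mk: "bit (mk j) q \<longleftrightarrow> q < m \<and> (if q \<in> set qs then bit j (?k - Suc (idx qs q)) else bit x q)" for j q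
    by (auto simp: mk_def bit_horner_sum_bit_iff)
  show ?thesis
  proof (rule bij_betw_byWitness[where f' = mk])
    show "\<forall>z\<in>{z. z < 2^m \<and> agree (set qs) x z}. mk (loc_index qs z) = z"
    proof
      fix z assume z: "z \<in> {z. z < 2^m \<and> agree (set qs) x z}"
      show "mk (loc_index qs z) = z"
      proof (rule bits_eq)
        fix q
        show "bit (mk (loc_index qs z)) q = bit z q"
        proof (cases "q \<in> set qs")
          case True
          then have i: "idx qs q < ?k" "qs ! idx qs q = q" using idx_in[OF d] by auto
          then have "?k - Suc (?k - Suc (idx qs q)) = idx qs q" by simp
          then show ?thesis using True sub i by (auto simp: bit_mk bit_loc_index)
        next
          case False
          then show ?thesis using z x high_bit[of z m q] high_bit[of x m q]
            by (auto simp: bit_mk agree_def)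
        qed
      qed
    qed
    show "\<forall>j::nat\<in>{..<2 ^ ?k}. loc_index qs (mk j) = j"
    proof
      fix j :: nat assume j: "j \<in> {..<2 ^ ?k}"
      show "loc_index qs (mk j) = j"
      proof (rule bits_eq)
        fix i
        show "bit (loc_index qs (mk j)) i = bit j i"
        proof (cases "i < ?k")
          case True
          have q1: "qs ! (?k - Suc i) \<in> set qs" using True by simp
          then have q2: "qs ! (?k - Suc i) < m" using sub by blast
          note q = q1 q2
          have "idx qs (qs ! (?k - Suc i)) = ?k - Suc i" using idx_nth[OF d] True by simp
          then have "?k - Suc (idx qs (qs ! (?k - Suc i))) = i" using True by simp
          then show ?thesis using True q by (simp add: bit_loc_index bit_mk)
        next
          case False
          then show ?thesis using j high_bit[of j ?k i] by (auto simp: bit_loc_index)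
        qed
      qed
    qed
    show "loc_index qs ` {z. z < 2^m \<and> agree (set qs) x z} \<subseteq> {..<2 ^ ?k}"
      using loc_index_lt by auto
    show "mk ` {..<2 ^ ?k} \<subseteq> {z. z < 2^m \<and> agree (set qs) x z}"
    proof
      fix w assume "w \<in> mk ` {..<2 ^ ?k}"
      then obtain j where w: "w = mk j" by auto
      have "w < 2^m" unfolding w by (rule bits_lt) (simp add: bit_mk)
      moreover have "agree (set qs) x w"
        unfolding agree_def w using x high_bit[of x m] by (auto simp: bit_mk)
      ultimately show "w \<in> {z. z < 2^m \<and> agree (set qs) x z}" by simp
    qed
  qed
qed

lemma valid_gateD:
  assumes "valid_gate m g"
  shows "length (fst g) = 1 \<or> length (fst g) = 2" "distinct (fst g)" "set (fst g) \<subseteq> {..<m}"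
    "is_unitary (2 ^ length (fst g)) (snd g)"
  using assms unfolding valid_gate_def Let_def by auto

lemma embed_entry:
  assumes "x < 2^m" "y < 2^m"
  shows "embed_gate m g $$ (x,y) = (if agree (set (fst g)) x y
     then snd g $$ (loc_index (fst g) x, loc_index (fst g) y) else 0)"
  using assms cond_agree[OF assms] unfolding embed_gate_def by simp

lemma embed_carrier: "embed_gate m g \<in> carrier_mat (2^m) (2^m)"
  by (simp add: embed_gate_def)

lemma supp_embed: "supp m (set (fst g)) (embed_gate m g)"
  unfolding supp_def
proof (intro conjI allI impI)
  show "embed_gate m g \<in> carrier_mat (2^m) (2^m)" by (rule embed_carrier)
next
  fix x y assume "x < 2^m" "y < 2^m" "\<not> agree (set (fst g)) x y"
  then show "embed_gate m g $$ (x,y) = 0" by (simp add: embed_entry)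
next
  fix x y x' y' assume xy: "x < 2^m" "y < 2^m" "x' < 2^m" "y' < 2^m"
    and a: "agree (set (fst g)) x y" "agree (set (fst g)) x' y'"
       "same (set (fst g)) x x'" "same (set (fst g)) y y'"
  show "embed_gate m g $$ (x,y) = embed_gate m g $$ (x',y')"
    using xy a loc_index_same[OF a(3)] loc_index_same[OF a(4)] by (simp add: embed_entry)
qed

lemma agree_trans: "agree S x y \<Longrightarrow> agree S y z \<Longrightarrow> agree S x z"
  unfolding agree_def by auto

lemma unitary_embed:
  assumes v: "valid_gate m g"
  shows "is_unitary (2^m) (embed_gate m g)"
proof -
  obtain qs U where g: "g = (qs, U)" by (cases g)
  let ?k = "length qs"
  have d: "distinct qs" and sub: "set qs \<subseteq> {..<m}" and uU: "is_unitary (2 ^ ?k) U"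
    using valid_gateD[OF v] g by auto
  have cU: "U \<in> carrier_mat (2^?k) (2^?k)" and UU: "adj U * U = 1\<^sub>m (2^?k)"
    using uU unfolding is_unitary_def by auto
  let ?E = "embed_gate m g"
  have cE: "?E \<in> carrier_mat (2^m) (2^m)" by (rule embed_carrier)
  have "adj ?E * ?E = 1\<^sub>m (2^m)"
  proof (rule eq_matI)
    fix x y assume "x < dim_row (1\<^sub>m (2^m))" "y < dim_col (1\<^sub>m (2^m))"
    then have xy: "x < 2^m" "y < 2^m" by auto
    have "(adj ?E * ?E) $$ (x,y) = (\<Sum>z<2^m. adj ?E $$ (x,z) * ?E $$ (z,y))"
      by (rule mult_entry[OF adj_carrier[OF cE] cE xy])
    also have "\<dots> = (\<Sum>z<2^m. cnj (?E $$ (z,x)) * ?E $$ (z,y))"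
      using cE xy by (intro sum.cong) auto
    finally have e1: "(adj ?E * ?E) $$ (x,y) = (\<Sum>z<2^m. cnj (?E $$ (z,x)) * ?E $$ (z,y))" .
    show "(adj ?E * ?E) $$ (x,y) = 1\<^sub>m (2^m) $$ (x,y)"
    proof (cases "agree (set qs) x y")
      case False
      have zero: "cnj (?E $$ (z,x)) * ?E $$ (z,y) = 0" if "z < 2^m" for z
      proof (cases "agree (set qs) z x \<and> agree (set qs) z y")
        case True
        then have "agree (set qs) x y" using agree_trans agree_sym by metis
        with False show ?thesis by simp
      next
        case False
        then show ?thesis using that xy g by (auto simp: embed_entry)
      qed
      have "(\<Sum>z<2^m. cnj (?E $$ (z,x)) * ?E $$ (z,y)) = 0"
        by (rule sum.neutral) (use zero in auto)
      then have "(adj ?E * ?E) $$ (x,y) = 0" using e1 by simp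
      moreover have "x \<noteq> y" using False unfolding agree_def by auto
      ultimately show ?thesis using xy by simp
    next
      case True
      let ?G = "{z. z < 2^m \<and> agree (set qs) x z}"
      have "(\<Sum>z<2^m. cnj (?E $$ (z,x)) * ?E $$ (z,y)) =
            (\<Sum>z\<in>?G. cnj (?E $$ (z,x)) * ?E $$ (z,y))"
      proof (rule sum.mono_neutral_right)
        show "\<forall>z\<in>{..<2^m} - ?G. cnj (?E $$ (z,x)) * ?E $$ (z,y) = 0"
          using xy g agree_sym by (auto simp: embed_entry)
      qed auto
      also have "\<dots> = (\<Sum>z\<in>?G. cnj (U $$ (loc_index qs z, loc_index qs x)) * U $$ (loc_index qs z, loc_index qs y))"
      proof (rule sum.cong)
        fix z assume z: "z \<in> ?G"
        then have "agree (set qs) z x" "agree (set qs) z y" using True agree_sym agree_trans by blast+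
        then show "cnj (?E $$ (z,x)) * ?E $$ (z,y) =
          cnj (U $$ (loc_index qs z, loc_index qs x)) * U $$ (loc_index qs z, loc_index qs y)"
          using z xy g by (simp add: embed_entry)
      qed simp
      also have "\<dots> = (\<Sum>j<2^?k. cnj (U $$ (j, loc_index qs x)) * U $$ (j, loc_index qs y))"
        by (rule sum.reindex_bij_betw[OF loc_bij[OF d sub xy(1)],
              where g = "\<lambda>j. cnj (U $$ (j, loc_index qs x)) * U $$ (j, loc_index qs y)"])
      also have "\<dots> = (adj U * U) $$ (loc_index qs x, loc_index qs y)"
        using mult_entry[OF adj_carrier[OF cU] cU loc_index_lt loc_index_lt] cU loc_index_lt[of qs]
        by (auto intro!: sum.cong)
      also have "\<dots> = (if loc_index qs x = loc_index qs y then 1 else 0)"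
        using UU loc_index_lt[of qs] by simp
      also have "(loc_index qs x = loc_index qs y) = (x = y)"
      proof
        assume h: "loc_index qs x = loc_index qs y"
        have "x \<in> ?G" "y \<in> ?G" using xy True by (auto simp: agree_def)
        then show "x = y" using h bij_betw_imp_inj_on[OF loc_bij[OF d sub xy(1)]]
          by (auto dest: inj_onD)
      qed simp
      finally show ?thesis using e1 xy by simp
    qed
  qed (use cE in auto)
  then show ?thesis using cE unfolding is_unitary_def by simp
qed

definition nb :: "layer \<Rightarrow> nat set \<Rightarrow> nat set" where
  "nb L S = S \<union> \<Union>{set (fst g) | g. g \<in> set L \<and> set (fst g) \<inter> S \<noteq> {}}"

definition cone_b :: "circuit \<Rightarrow> nat set \<Rightarrow> nat set" where
  "cone_b C S = foldr nb C S"

definition cone_f :: "circuit \<Rightarrow> nat set \<Rightarrow> nat set" where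
  "cone_f C S = foldl (\<lambda>T L. nb L T) S C"

lemma valid_layer_cons:
  assumes "valid_layer m (g # L)"
  shows "valid_gate m g" "valid_layer m L" "\<And>h. h \<in> set L \<Longrightarrow> set (fst g) \<inter> set (fst h) = {}"
proof -
  show "valid_gate m g" using assms unfolding valid_layer_def by auto
  show "valid_layer m L" unfolding valid_layer_def
  proof (intro conjI allI impI ballI)
    fix h assume "h \<in> set L" then show "valid_gate m h" using assms unfolding valid_layer_def by auto
  next
    fix i j assume ij: "i < length L" "j < length L" "i \<noteq> j"
    then have "set (fst ((g#L) ! Suc i)) \<inter> set (fst ((g#L) ! Suc j)) = {}"
      using assms unfolding valid_layer_def by (metis Suc_inject Suc_less_eq length_Cons)
    then show "set (fst (L ! i)) \<inter> set (fst (L ! j)) = {}" by simp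
  qed
  fix h assume "h \<in> set L"
  then obtain j where j: "j < length L" "L ! j = h" by (auto simp: in_set_conv_nth)
  then have "set (fst ((g#L) ! 0)) \<inter> set (fst ((g#L) ! Suc j)) = {}"
    using assms unfolding valid_layer_def by (metis Suc_less_eq length_Cons nat.distinct(1) zero_less_Suc)
  then show "set (fst g) \<inter> set (fst h) = {}" using j by simp
qed

lemma layer_cons: "layer_mat m (g # L) = embed_gate m g * layer_mat m L"
  by (simp add: layer_mat_def)

lemma layer_carrier: "layer_mat m L \<in> carrier_mat (2^m) (2^m)"
proof (induction L)
  case Nil then show ?case by (simp add: layer_mat_def)
next
  case (Cons g L) then show ?case unfolding layer_cons using mult_carrier_mat[OF embed_carrier] by blast
qed

lemma unitary_layer: "valid_layer m L \<Longrightarrow> is_unitary (2^m) (layer_mat m L)"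
proof (induction L)
  case Nil then show ?case by (simp add: layer_mat_def unitary_one)
next
  case (Cons g L)
  show ?case unfolding layer_cons
    by (rule unitary_mult[OF unitary_embed[OF valid_layer_cons(1)[OF Cons.prems]]
          Cons.IH[OF valid_layer_cons(2)[OF Cons.prems]]])
qed

lemma nb_ext: "S \<subseteq> nb L S" by (auto simp: nb_def)

lemma nb_gate: assumes "g \<in> set L" "set (fst g) \<inter> S \<noteq> {}" shows "set (fst g) \<subseteq> nb L S"
  unfolding nb_def using assms by blast

lemma layer_back:
  assumes "valid_layer m L" "supp m S Ob"
  shows "supp m (nb L S) (adj (layer_mat m L) * Ob * layer_mat m L)"
  using assms
proof (induction L arbitrary: S Ob)
  case Nil
  have "adj (1\<^sub>m (2^m)) * Ob * 1\<^sub>m (2^m) = Ob" using suppD(1)[OF Nil.prems(2)] by simp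
  then show ?case using Nil.prems(2) by (simp add: layer_mat_def nb_def)
next
  case (Cons g L)
  let ?E = "embed_gate m g" and ?M = "layer_mat m L" and ?G = "set (fst g)"
  have cE: "?E \<in> carrier_mat (2^m) (2^m)" and cM: "?M \<in> carrier_mat (2^m) (2^m)"
    and cO: "Ob \<in> carrier_mat (2^m) (2^m)"
    using embed_carrier layer_carrier suppD(1)[OF Cons.prems(2)] by auto
  have vg: "valid_gate m g" and vL: "valid_layer m L"
    and dis: "\<And>h. h \<in> set L \<Longrightarrow> ?G \<inter> set (fst h) = {}"
    using valid_layer_cons[OF Cons.prems(1)] by auto
  have eq: "adj (?E * ?M) * Ob * (?E * ?M) = adj ?M * (adj ?E * Ob * ?E) * ?M"
    using cE cM cO adj_carrier[OF cE] adj_carrier[OF cM]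
    by (simp add: adj_mult[OF cE cM] assoc_mult_mat[of _ "2^m" "2^m" _ "2^m" _ "2^m"])
  define S1 where "S1 = (if ?G \<inter> S = {} then S else S \<union> ?G)"
  have s1: "supp m S1 (adj ?E * Ob * ?E)"
  proof (cases "?G \<inter> S = {}")
    case True
    have "adj ?E * Ob * ?E = Ob"
      by (rule conj_disjoint[OF Cons.prems(2) supp_embed]) (use True unitary_embed[OF vg] in
          \<open>auto simp: is_unitary_def\<close>)
    then show ?thesis using True Cons.prems(2) by (simp add: S1_def)
  next
    case False
    then show ?thesis using conj_supp[OF Cons.prems(2) supp_embed] by (simp add: S1_def)
  qed
  have "supp m (nb L S1) (adj ?M * (adj ?E * Ob * ?E) * ?M)" by (rule Cons.IH[OF vL s1])
  moreover have "nb L S1 \<subseteq> nb (g # L) S"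
  proof
    fix q assume q: "q \<in> nb L S1"
    show "q \<in> nb (g # L) S"
    proof (cases "q \<in> S1")
      case True
      show ?thesis
      proof (cases "?G \<inter> S = {}")
        case True
        then show ?thesis using \<open>q \<in> S1\<close> nb_ext[of S "g # L"] by (auto simp: S1_def)
      next
        case False
        then have "?G \<subseteq> nb (g # L) S" by (intro nb_gate) auto
        then show ?thesis using \<open>q \<in> S1\<close> nb_ext[of S "g # L"] False by (auto simp: S1_def)
      qed
    next
      case False
      then obtain h where h: "h \<in> set L" "set (fst h) \<inter> S1 \<noteq> {}" "q \<in> set (fst h)"
        using q unfolding nb_def by blast
      have "S1 \<subseteq> S \<union> ?G" by (auto simp: S1_def)
      then have "set (fst h) \<inter> S \<noteq> {}" using h dis[OF h(1)] by blast
      then have "set (fst h) \<subseteq> nb (g # L) S" using h(1) by (intro nb_gate) auto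
      then show ?thesis using h by blast
    qed
  qed
  ultimately show ?case unfolding layer_cons eq by (rule supp_mono)
qed

lemma layer_fwd:
  assumes "valid_layer m L" "supp m S Ob"
  shows "supp m (nb L S) (layer_mat m L * Ob * adj (layer_mat m L))"
  using assms
proof (induction L arbitrary: S Ob)
  case Nil
  have "1\<^sub>m (2^m) * Ob * adj (1\<^sub>m (2^m)) = Ob" using suppD(1)[OF Nil.prems(2)] by simp
  then show ?case using Nil.prems(2) by (simp add: layer_mat_def nb_def)
next
  case (Cons g L)
  let ?E = "embed_gate m g" and ?M = "layer_mat m L" and ?G = "set (fst g)"
  have cE: "?E \<in> carrier_mat (2^m) (2^m)" and cM: "?M \<in> carrier_mat (2^m) (2^m)"
    and cO: "Ob \<in> carrier_mat (2^m) (2^m)"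
    using embed_carrier layer_carrier suppD(1)[OF Cons.prems(2)] by auto
  have vg: "valid_gate m g" and vL: "valid_layer m L"
    and dis: "\<And>h. h \<in> set L \<Longrightarrow> ?G \<inter> set (fst h) = {}"
    using valid_layer_cons[OF Cons.prems(1)] by auto
  have eq: "(?E * ?M) * Ob * adj (?E * ?M) = adj (adj ?E) * (?M * Ob * adj ?M) * adj ?E"
    using cE cM cO adj_carrier[OF cE] adj_carrier[OF cM]
    by (simp add: adj_mult[OF cE cM] assoc_mult_mat[of _ "2^m" "2^m" _ "2^m" _ "2^m"])
  have O2: "supp m (nb L S) (?M * Ob * adj ?M)" by (rule Cons.IH[OF vL Cons.prems(2)])
  have V: "supp m ?G (adj ?E)" by (rule supp_adj[OF supp_embed])
  have u: "adj (adj ?E) * adj ?E = 1\<^sub>m (2^m)" using unitary_right[OF unitary_embed[OF vg]] by simp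
  have sub: "nb L S \<subseteq> nb (g # L) S" by (auto simp: nb_def)
  show ?case
  proof (cases "?G \<inter> nb L S = {}")
    case True
    have "adj (adj ?E) * (?M * Ob * adj ?M) * adj ?E = ?M * Ob * adj ?M"
      by (rule conj_disjoint[OF O2 V _ u]) (use True in auto)
    then show ?thesis unfolding layer_cons eq using supp_mono[OF O2 sub] by simp
  next
    case False
    then obtain t where t: "t \<in> ?G" "t \<in> nb L S" by auto
    have "t \<in> S"
    proof (rule ccontr)
      assume "t \<notin> S"
      then obtain h where "h \<in> set L" "t \<in> set (fst h)" using t(2) by (auto simp: nb_def)
      then show False using dis[of h] t(1) by blast
    qed
    then have "?G \<subseteq> nb (g # L) S" using t(1) by (intro nb_gate) auto
    then have "nb L S \<union> ?G \<subseteq> nb (g # L) S" using sub by auto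
    then show ?thesis unfolding layer_cons eq using supp_mono[OF conj_supp[OF O2 V]] by simp
  qed
qed

lemma circuit_snoc: "circuit_mat m (C @ [L]) = layer_mat m L * circuit_mat m C"
  by (simp add: circuit_mat_def)

lemma circuit_carrier: "circuit_mat m C \<in> carrier_mat (2^m) (2^m)"
proof (induction C rule: rev_induct)
  case Nil then show ?case by (simp add: circuit_mat_def)
next
  case (snoc L C) then show ?case unfolding circuit_snoc using mult_carrier_mat[OF layer_carrier] by blast
qed

lemma unitary_circuit: "valid_circuit m C \<Longrightarrow> is_unitary (2^m) (circuit_mat m C)"
proof (induction C rule: rev_induct)
  case Nil then show ?case by (simp add: circuit_mat_def unitary_one)
next
  case (snoc L C)
  then have "valid_layer m L" "valid_circuit m C" by (auto simp: valid_circuit_def)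
  then show ?case unfolding circuit_snoc using snoc.IH unitary_mult unitary_layer by blast
qed

lemma circuit_back:
  assumes "valid_circuit m C" "supp m S Ob"
  shows "supp m (cone_b C S) (adj (circuit_mat m C) * Ob * circuit_mat m C)"
  using assms
proof (induction C arbitrary: S Ob rule: rev_induct)
  case Nil
  have "adj (1\<^sub>m (2^m)) * Ob * 1\<^sub>m (2^m) = Ob" using suppD(1)[OF Nil.prems(2)] by simp
  then show ?case using Nil.prems(2) by (simp add: circuit_mat_def cone_b_def)
next
  case (snoc L C)
  let ?L = "layer_mat m L" and ?W = "circuit_mat m C"
  have v: "valid_layer m L" "valid_circuit m C" using snoc.prems by (auto simp: valid_circuit_def)
  have cL: "?L \<in> carrier_mat (2^m) (2^m)" and cW: "?W \<in> carrier_mat (2^m) (2^m)"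
    and cO: "Ob \<in> carrier_mat (2^m) (2^m)"
    using layer_carrier circuit_carrier suppD(1)[OF snoc.prems(2)] by auto
  have eq: "adj (?L * ?W) * Ob * (?L * ?W) = adj ?W * (adj ?L * Ob * ?L) * ?W"
    using cL cW cO adj_carrier[OF cL] adj_carrier[OF cW]
    by (simp add: adj_mult[OF cL cW] assoc_mult_mat[of _ "2^m" "2^m" _ "2^m" _ "2^m"])
  have "supp m (cone_b C (nb L S)) (adj ?W * (adj ?L * Ob * ?L) * ?W)"
    by (rule snoc.IH[OF v(2) layer_back[OF v(1) snoc.prems(2)]])
  moreover have "cone_b (C @ [L]) S = cone_b C (nb L S)" by (simp add: cone_b_def)
  ultimately show ?case unfolding circuit_snoc eq by simp
qed

lemma circuit_fwd:
  assumes "valid_circuit m C" "supp m S Ob"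
  shows "supp m (cone_f C S) (circuit_mat m C * Ob * adj (circuit_mat m C))"
  using assms
proof (induction C arbitrary: S Ob rule: rev_induct)
  case Nil
  have "1\<^sub>m (2^m) * Ob * adj (1\<^sub>m (2^m)) = Ob" using suppD(1)[OF Nil.prems(2)] by simp
  then show ?case using Nil.prems(2) by (simp add: circuit_mat_def cone_f_def)
next
  case (snoc L C)
  let ?L = "layer_mat m L" and ?W = "circuit_mat m C"
  have v: "valid_layer m L" "valid_circuit m C" using snoc.prems by (auto simp: valid_circuit_def)
  have cL: "?L \<in> carrier_mat (2^m) (2^m)" and cW: "?W \<in> carrier_mat (2^m) (2^m)"
    and cO: "Ob \<in> carrier_mat (2^m) (2^m)"
    using layer_carrier circuit_carrier suppD(1)[OF snoc.prems(2)] by auto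
  have eq: "(?L * ?W) * Ob * adj (?L * ?W) = ?L * (?W * Ob * adj ?W) * adj ?L"
    using cL cW cO adj_carrier[OF cL] adj_carrier[OF cW]
    by (simp add: adj_mult[OF cL cW] assoc_mult_mat[of _ "2^m" "2^m" _ "2^m" _ "2^m"])
  have "supp m (nb L (cone_f C S)) (?L * (?W * Ob * adj ?W) * adj ?L)"
    by (rule layer_fwd[OF v(1) snoc.IH[OF v(2) snoc.prems(2)]])
  moreover have "cone_f (C @ [L]) S = nb L (cone_f C S)" by (simp add: cone_f_def)
  ultimately show ?case unfolding circuit_snoc eq by simp
qed

lemma nb_mem: "q \<in> nb L S \<longleftrightarrow> q \<in> S \<or> (\<exists>g\<in>set L. q \<in> set (fst g) \<and> set (fst g) \<inter> S \<noteq> {})"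
  unfolding nb_def by blast

lemma nb_sym: "(nb L S \<inter> T \<noteq> {}) = (S \<inter> nb L T \<noteq> {})"
proof
  assume "nb L S \<inter> T \<noteq> {}"
  then obtain q where q: "q \<in> nb L S" "q \<in> T" by auto
  show "S \<inter> nb L T \<noteq> {}"
  proof (cases "q \<in> S")
    case True then show ?thesis using q nb_ext[of T L] by auto
  next
    case False
    have "\<exists>g\<in>set L. q \<in> set (fst g) \<and> set (fst g) \<inter> S \<noteq> {}" using q(1) False nb_mem[of q L S] by blast
    then obtain g where g: "g \<in> set L" "q \<in> set (fst g)" "set (fst g) \<inter> S \<noteq> {}" by blast
    then obtain s where s: "s \<in> set (fst g)" "s \<in> S" by auto
    have "s \<in> nb L T" using g s q nb_mem[of s L T] by auto
    then show ?thesis using s by auto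
  qed
next
  assume "S \<inter> nb L T \<noteq> {}"
  then obtain q where q: "q \<in> nb L T" "q \<in> S" by auto
  show "nb L S \<inter> T \<noteq> {}"
  proof (cases "q \<in> T")
    case True then show ?thesis using q nb_ext[of S L] by auto
  next
    case False
    have "\<exists>g\<in>set L. q \<in> set (fst g) \<and> set (fst g) \<inter> T \<noteq> {}" using q(1) False nb_mem[of q L T] by blast
    then obtain g where g: "g \<in> set L" "q \<in> set (fst g)" "set (fst g) \<inter> T \<noteq> {}" by blast
    then obtain s where s: "s \<in> set (fst g)" "s \<in> T" by auto
    have "s \<in> nb L S" using g s q nb_mem[of s L S] by auto
    then show ?thesis using s by auto
  qed
qed

lemma cone_dual: "(cone_b C S \<inter> T \<noteq> {}) = (S \<inter> cone_f C T \<noteq> {})"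
proof (induction C arbitrary: T)
  case Nil then show ?case by (simp add: cone_b_def cone_f_def)
next
  case (Cons L C)
  have "(cone_b (L # C) S \<inter> T \<noteq> {}) = (nb L (cone_b C S) \<inter> T \<noteq> {})" by (simp add: cone_b_def)
  also have "\<dots> = (cone_b C S \<inter> nb L T \<noteq> {})" by (rule nb_sym)
  also have "\<dots> = (S \<inter> cone_f C (nb L T) \<noteq> {})" by (rule Cons.IH)
  also have "\<dots> = (S \<inter> cone_f (L # C) T \<noteq> {})" by (simp add: cone_f_def)
  finally show ?case .
qed

lemma nb_card:
  assumes v: "valid_layer m L" and fin: "finite S"
  shows "finite (nb L S) \<and> card (nb L S) \<le> 2 * card S"
proof -
  define P where "P s = {s} \<union> \<Union>{set (fst g) | g. g \<in> set L \<and> s \<in> set (fst g)}" for s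
  have eq: "nb L S = (\<Union>s\<in>S. P s)"
  proof
    show "nb L S \<subseteq> (\<Union>s\<in>S. P s)"
    proof
      fix q assume "q \<in> nb L S"
      then consider "q \<in> S" | g where "g \<in> set L" "q \<in> set (fst g)" "set (fst g) \<inter> S \<noteq> {}"
        using nb_mem[of q L S] by blast
      then show "q \<in> (\<Union>s\<in>S. P s)"
      proof cases
        case 1 then show ?thesis by (auto simp: P_def)
      next
        case 2
        then obtain s where "s \<in> S" "s \<in> set (fst g)" by auto
        then show ?thesis using 2 unfolding P_def by blast
      qed
    qed
    show "(\<Union>s\<in>S. P s) \<subseteq> nb L S"
    proof
      fix q assume "q \<in> (\<Union>s\<in>S. P s)"
      then obtain s where s: "s \<in> S" "q \<in> P s" by auto
      then consider "q = s" | g where "g \<in> set L" "s \<in> set (fst g)" "q \<in> set (fst g)"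
        unfolding P_def by blast
      then show "q \<in> nb L S"
      proof cases
        case 1 then show ?thesis using s nb_ext by auto
      next
        case 2 then show ?thesis using s nb_mem[of q L S] by auto
      qed
    qed
  qed
  have P: "finite (P s) \<and> card (P s) \<le> 2" for s
  proof (cases "\<exists>g\<in>set L. s \<in> set (fst g)")
    case False
    then have "P s = {s}" unfolding P_def by auto
    then show ?thesis by simp
  next
    case True
    then obtain g where g: "g \<in> set L" "s \<in> set (fst g)" by auto
    have uniq: "h = g" if hL: "h \<in> set L" and hs: "s \<in> set (fst h)" for h
    proof (rule ccontr)
      assume "h \<noteq> g"
      obtain i where i: "i < length L" "L ! i = g" using g(1) by (auto simp: in_set_conv_nth)
      obtain j where j: "j < length L" "L ! j = h" using hL in_set_conv_nth[of h L] by blast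
      have "i \<noteq> j" using i j \<open>h \<noteq> g\<close> by auto
      have dd: "\<forall>i<length L. \<forall>j<length L. i \<noteq> j \<longrightarrow> set (fst (L ! i)) \<inter> set (fst (L ! j)) = {}"
        using v unfolding valid_layer_def by blast
      have "set (fst (L ! i)) \<inter> set (fst (L ! j)) = {}" using dd i(1) j(1) \<open>i \<noteq> j\<close> by blast
      then have "set (fst g) \<inter> set (fst h) = {}" using i j by simp
      then show False using g hs by auto
    qed
    have "\<Union>{set (fst h) | h. h \<in> set L \<and> s \<in> set (fst h)} = set (fst g)"
    proof
      show "\<Union>{set (fst h) | h. h \<in> set L \<and> s \<in> set (fst h)} \<subseteq> set (fst g)"
      proof
        fix q assume "q \<in> \<Union>{set (fst h) | h. h \<in> set L \<and> s \<in> set (fst h)}"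
        then obtain h where "h \<in> set L" "s \<in> set (fst h)" "q \<in> set (fst h)" by blast
        with uniq show "q \<in> set (fst g)" by blast
      qed
      show "set (fst g) \<subseteq> \<Union>{set (fst h) | h. h \<in> set L \<and> s \<in> set (fst h)}"
        using g by blast
    qed
    then have "P s = set (fst g)" unfolding P_def using g(2) by blast
    moreover have "length (fst g) \<le> 2" using valid_gateD(1)[of m g] v g(1) unfolding valid_layer_def by auto
    ultimately show ?thesis using card_length[of "fst g"] by auto
  qed
  have "finite (nb L S)" unfolding eq using fin P by (intro finite_UN_I) auto
  moreover have "card (nb L S) \<le> (\<Sum>s\<in>S. card (P s))" unfolding eq by (rule card_UN_le[OF fin])
  moreover have "(\<Sum>s\<in>S. card (P s)) \<le> (\<Sum>s\<in>S. 2)" by (rule sum_mono) (use P in auto)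
  ultimately show ?thesis by simp
qed

lemma cone_b_card:
  assumes "valid_circuit m C" "finite S"
  shows "finite (cone_b C S) \<and> card (cone_b C S) \<le> 2 ^ length C * card S"
  using assms
proof (induction C)
  case Nil then show ?case by (simp add: cone_b_def)
next
  case (Cons L C)
  have v: "valid_layer m L" "valid_circuit m C" using Cons.prems by (auto simp: valid_circuit_def)
  have ih: "finite (cone_b C S)" "card (cone_b C S) \<le> 2 ^ length C * card S" using Cons.IH[OF v(2) Cons.prems(2)] by auto
  have "cone_b (L # C) S = nb L (cone_b C S)" by (simp add: cone_b_def)
  with nb_card[OF v(1) ih(1)] ih(2) show ?case by auto
qed

lemma cone_f_card:
  assumes "valid_circuit m C" "finite S"
  shows "finite (cone_f C S) \<and> card (cone_f C S) \<le> 2 ^ length C * card S"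
  using assms
proof (induction C arbitrary: S)
  case Nil then show ?case by (simp add: cone_f_def)
next
  case (Cons L C)
  have v: "valid_layer m L" "valid_circuit m C" using Cons.prems by (auto simp: valid_circuit_def)
  have nb: "finite (nb L S)" "card (nb L S) \<le> 2 * card S" using nb_card[OF v(1) Cons.prems(2)] by auto
  have ih: "finite (cone_f C (nb L S))" "card (cone_f C (nb L S)) \<le> 2 ^ length C * card (nb L S)"
    using Cons.IH[OF v(2) nb(1)] by auto
  have e: "cone_f (L # C) S = cone_f C (nb L S)" by (simp add: cone_f_def)
  have "card (cone_f C (nb L S)) \<le> 2 ^ length C * (2 * card S)"
    using ih(2) nb(2) order_trans mult_le_mono2 by blast
  then show ?case using ih e by (simp add: mult_ac)
qed

lemma cone_b_ext: "S \<subseteq> cone_b C S"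
  by (induction C) (auto simp: cone_b_def nb_def)

lemma cone_f_ext: "S \<subseteq> cone_f C S"
proof (induction C arbitrary: S)
  case Nil then show ?case by (simp add: cone_f_def)
next
  case (Cons L C)
  then show ?case using nb_ext[of S L] by (auto simp: cone_f_def)
qed

definition ip :: "complex vec \<Rightarrow> complex vec \<Rightarrow> complex" where
  "ip u w = (\<Sum>i<dim_vec u. cnj (u $ i) * w $ i)"

definition nsq :: "complex vec \<Rightarrow> real" where
  "nsq v = (\<Sum>i<dim_vec v. (cmod (v $ i))\<^sup>2)"

definition ev :: "complex vec \<Rightarrow> complex mat \<Rightarrow> complex" where
  "ev v M = ip v (M *\<^sub>v v)"

lemma nsq_nonneg: "nsq v \<ge> 0"
  unfolding nsq_def by (intro sum_nonneg) auto

lemma ip_self: "ip v v = of_real (nsq v)"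
  unfolding ip_def nsq_def of_real_sum
  by (intro sum.cong refl) (metis complex_norm_square of_real_power mult.commute)

lemma mult_vec_entry:
  assumes "W \<in> carrier_mat n k" "v \<in> carrier_vec k" "a < n"
  shows "(W *\<^sub>v v) $ a = (\<Sum>i<k. W $$ (a,i) * v $ i)"
  using assms by (auto simp: scalar_prod_def lessThan_atLeast0 intro!: sum.cong)

lemma ip_minus_left:
  assumes "u \<in> carrier_vec n" "v \<in> carrier_vec n" "w \<in> carrier_vec n"
  shows "ip (u - v) w = ip u w - ip v w"
  using assms unfolding ip_def by (simp add: sum_subtractf[symmetric] algebra_simps)

lemma ip_minus_right:
  assumes "u \<in> carrier_vec n" "v \<in> carrier_vec n" "w \<in> carrier_vec n"
  shows "ip u (v - w) = ip u v - ip u w"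
  using assms unfolding ip_def by (simp add: sum_subtractf[symmetric] algebra_simps)

lemma ip_smult_left: "ip (c \<cdot>\<^sub>v u) w = cnj c * ip u w"
  unfolding ip_def by (simp add: sum_distrib_left mult_ac)

lemma ip_smult_right: "dim_vec w = dim_vec u \<Longrightarrow> ip u (c \<cdot>\<^sub>v w) = c * ip u w"
  unfolding ip_def by (simp add: sum_distrib_left mult_ac)

lemma nsq_smult: "nsq (c \<cdot>\<^sub>v v) = (cmod c)\<^sup>2 * nsq v"
  unfolding nsq_def by (simp add: sum_distrib_left norm_mult power_mult_distrib)

lemma cs_real:
  fixes a b :: "nat \<Rightarrow> real"
  assumes "finite I" "\<And>i. a i \<ge> 0" "\<And>i. b i \<ge> 0"
  shows "(\<Sum>i\<in>I. a i * b i) \<le> sqrt (\<Sum>i\<in>I. (a i)\<^sup>2) * sqrt (\<Sum>i\<in>I. (b i)\<^sup>2)"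
proof -
  define A where "A = sqrt (\<Sum>i\<in>I. (a i)\<^sup>2)"
  define B where "B = sqrt (\<Sum>i\<in>I. (b i)\<^sup>2)"
  have A0: "A \<ge> 0" and B0: "B \<ge> 0" unfolding A_def B_def by (auto intro: sum_nonneg)
  have AA: "A\<^sup>2 = (\<Sum>i\<in>I. (a i)\<^sup>2)" unfolding A_def by (simp add: sum_nonneg)
  have BB: "B\<^sup>2 = (\<Sum>i\<in>I. (b i)\<^sup>2)" unfolding B_def by (simp add: sum_nonneg)
  show ?thesis
  proof (cases "A = 0 \<or> B = 0")
    case True
    then have "(\<forall>i\<in>I. a i = 0) \<or> (\<forall>i\<in>I. b i = 0)"
      using AA BB assms(1) sum_nonneg_eq_0_iff[of I "\<lambda>i. (a i)\<^sup>2"] sum_nonneg_eq_0_iff[of I "\<lambda>i. (b i)\<^sup>2"]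
      by auto
    then have "(\<Sum>i\<in>I. a i * b i) = 0" by auto
    then show ?thesis by (simp add: sum_nonneg)
  next
    case False
    then have Ap: "A > 0" and Bp: "B > 0" using A0 B0 by auto
    have "a i * b i \<le> (B / A * (a i)\<^sup>2 + A / B * (b i)\<^sup>2) / 2" for i
    proof -
      have "0 \<le> (B * a i - A * b i)\<^sup>2" by simp
      then have "2 * (A * B) * (a i * b i) \<le> B\<^sup>2 * (a i)\<^sup>2 + A\<^sup>2 * (b i)\<^sup>2"
        by (simp add: power2_eq_square algebra_simps)
      then have "a i * b i \<le> (B\<^sup>2 * (a i)\<^sup>2 + A\<^sup>2 * (b i)\<^sup>2) / (2 * (A * B))"
        using Ap Bp by (simp add: field_simps)
      also have "\<dots> = (B / A * (a i)\<^sup>2 + A / B * (b i)\<^sup>2) / 2"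
        using Ap Bp by (simp add: field_simps power2_eq_square)
      finally show ?thesis .
    qed
    then have "(\<Sum>i\<in>I. a i * b i) \<le> (\<Sum>i\<in>I. (B / A * (a i)\<^sup>2 + A / B * (b i)\<^sup>2) / 2)"
      by (rule sum_mono)
    also have "\<dots> = (\<Sum>i\<in>I. B / A * (a i)\<^sup>2 + A / B * (b i)\<^sup>2) / 2"
      by (rule sum_divide_distrib[symmetric])
    also have "\<dots> = (B / A * A\<^sup>2 + A / B * B\<^sup>2) / 2"
      unfolding AA BB by (simp add: sum.distrib sum_distrib_left)
    also have "\<dots> = A * B" using Ap Bp by (simp add: field_simps power2_eq_square)
    finally show ?thesis unfolding A_def B_def .
  qed
qed

lemma cs:
  assumes "dim_vec w = dim_vec u"
  shows "cmod (ip u w) \<le> sqrt (nsq u) * sqrt (nsq w)"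
proof -
  have "cmod (ip u w) \<le> (\<Sum>i<dim_vec u. cmod (u $ i) * cmod (w $ i))"
    unfolding ip_def by (rule order_trans[OF norm_sum]) (simp add: norm_mult)
  also have "\<dots> \<le> sqrt (nsq u) * sqrt (nsq w)"
    unfolding nsq_def using assms cs_real[of "{..<dim_vec u}" "\<lambda>i. cmod (u$i)" "\<lambda>i. cmod (w$i)"] by simp
  finally show ?thesis .
qed

lemma ip_adj:
  assumes W: "W \<in> carrier_mat n k" and v: "v \<in> carrier_vec k" and x: "x \<in> carrier_vec n"
  shows "ip (W *\<^sub>v v) x = ip v (adj W *\<^sub>v x)"
proof -
  have "ip (W *\<^sub>v v) x = (\<Sum>a<n. cnj (\<Sum>i<k. W $$ (a,i) * v $ i) * x $ a)"
    unfolding ip_def using W v by (simp add: mult_vec_entry del: index_mult_mat_vec)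
  also have "\<dots> = (\<Sum>a<n. \<Sum>i<k. cnj (v $ i) * (cnj (W $$ (a,i)) * x $ a))"
    by (simp add: sum_distrib_right sum_distrib_left mult_ac)
  also have "\<dots> = (\<Sum>i<k. \<Sum>a<n. cnj (v $ i) * (cnj (W $$ (a,i)) * x $ a))"
    by (rule sum.swap)
  also have "\<dots> = (\<Sum>i<k. cnj (v $ i) * (\<Sum>a<n. adj W $$ (i,a) * x $ a))"
    using W by (simp add: sum_distrib_left)
  also have "\<dots> = ip v (adj W *\<^sub>v x)"
    unfolding ip_def using W v x adj_carrier[OF W] by (simp add: mult_vec_entry del: index_mult_mat_vec)
  finally show ?thesis .
qed

lemma ev_conj:
  assumes W: "W \<in> carrier_mat n n" and v: "v \<in> carrier_vec n" and M: "M \<in> carrier_mat n n"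
  shows "ev (W *\<^sub>v v) M = ev v (adj W * M * W)"
proof -
  have "ev (W *\<^sub>v v) M = ip (W *\<^sub>v v) (M *\<^sub>v (W *\<^sub>v v))" by (simp add: ev_def)
  also have "\<dots> = ip v (adj W *\<^sub>v (M *\<^sub>v (W *\<^sub>v v)))"
    by (rule ip_adj[OF W v]) (use M W v in simp)
  also have "adj W *\<^sub>v (M *\<^sub>v (W *\<^sub>v v)) = (adj W * M * W) *\<^sub>v v"
    using W M v adj_carrier[OF W] by (simp add: assoc_mult_mat_vec[of _ n n _ n])
  finally show ?thesis by (simp add: ev_def)
qed

lemma nsq_unitary:
  assumes U: "is_unitary n O'" and v: "v \<in> carrier_vec n"
  shows "nsq (O' *\<^sub>v v) = nsq v"
proof -
  have c: "O' \<in> carrier_mat n n" "adj O' * O' = 1\<^sub>m n" using U unfolding is_unitary_def by auto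
  have "of_real (nsq (O' *\<^sub>v v)) = ip (O' *\<^sub>v v) (O' *\<^sub>v v)" by (simp add: ip_self)
  also have "\<dots> = ip v (adj O' *\<^sub>v (O' *\<^sub>v v))" by (rule ip_adj[OF c(1) v]) (use c v in simp)
  also have "adj O' *\<^sub>v (O' *\<^sub>v v) = v"
    using c v adj_carrier[OF c(1)] by (simp add: assoc_mult_mat_vec[symmetric, of _ n n _ n])
  finally show ?thesis by (simp add: ip_self)
qed

lemma cnj_mult_self: "cnj z * z = complex_of_real ((cmod z)\<^sup>2)"
  using complex_norm_square[of z] by (simp add: mult.commute)

lemma ev_support:
  assumes v: "v \<in> carrier_vec N" and M: "M \<in> carrier_mat N N" and P: "P \<subseteq> {..<N}"
    and vz: "\<And>i. i < N \<Longrightarrow> i \<notin> P \<Longrightarrow> v $ i = 0"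
    and Mz: "\<And>i j. i \<in> P \<Longrightarrow> j \<in> P \<Longrightarrow> i \<noteq> j \<Longrightarrow> M $$ (i,j) = 0"
  shows "ev v M = (\<Sum>i\<in>P. of_real ((cmod (v $ i))\<^sup>2) * M $$ (i,i))"
proof -
  have fP: "finite P" using P finite_subset by blast
  have inner: "(M *\<^sub>v v) $ i = M $$ (i,i) * v $ i" if i: "i \<in> P" for i
  proof -
    have iN: "i < N" using i P by auto
    have "(M *\<^sub>v v) $ i = (\<Sum>j<N. M $$ (i,j) * v $ j)" by (rule mult_vec_entry[OF M v iN])
    also have "\<dots> = M $$ (i,i) * v $ i"
      by (rule sum_single) (use iN i vz Mz in auto)
    finally show ?thesis .
  qed
  have "ev v M = (\<Sum>i<N. cnj (v $ i) * (M *\<^sub>v v) $ i)" unfolding ev_def ip_def using v by simp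
  also have "\<dots> = (\<Sum>i\<in>P. cnj (v $ i) * (M *\<^sub>v v) $ i)"
    by (rule sum.mono_neutral_right) (use P vz in auto)
  also have "\<dots> = (\<Sum>i\<in>P. of_real ((cmod (v $ i))\<^sup>2) * M $$ (i,i))"
  proof (rule sum.cong[OF refl])
    fix i assume "i \<in> P"
    then show "cnj (v $ i) * (M *\<^sub>v v) $ i = of_real ((cmod (v $ i))\<^sup>2) * M $$ (i,i)"
    proof -
      have "cnj (v $ i) * (M *\<^sub>v v) $ i = (cnj (v $ i) * v $ i) * M $$ (i,i)"
        using inner[OF \<open>i \<in> P\<close>] by (simp add: mult_ac)
      then show ?thesis by (simp add: cnj_mult_self)
    qed
  qed
  finally show ?thesis .
qed

lemma ip_cnj: "dim_vec w = dim_vec u \<Longrightarrow> cnj (ip u w) = ip w u"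
  unfolding ip_def by (simp add: mult.commute)

lemma cmod_diff_sq: "(cmod (a - b))\<^sup>2 = (cmod a)\<^sup>2 + (cmod b)\<^sup>2 - 2 * Re (a * cnj b)"
  unfolding cmod_power2 by (simp add: power2_eq_square algebra_simps)

lemma ev_approx:
  assumes x: "x \<in> carrier_vec N" and y: "y \<in> carrier_vec N"
    and nx: "nsq x = 1" and ny: "nsq y = 1" and U: "is_unitary N O'"
  shows "cmod (ev x O' - ev y O') \<le>
     2 * sqrt (\<Sum>i<N. \<Sum>j<N. (cmod (x $ i * cnj (x $ j) - y $ i * cnj (y $ j)))\<^sup>2)"
proof -
  have cO: "O' \<in> carrier_mat N N" using U unfolding is_unitary_def by auto
  define s where "s = ip y x"
  define c where "c = (if s = 0 then 1 else s / cmod s)"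
  have c1: "cmod c = 1" by (auto simp: c_def norm_divide)
  define y' where "y' = c \<cdot>\<^sub>v y"
  have y': "y' \<in> carrier_vec N" using y by (simp add: y'_def)
  have ny': "nsq y' = 1" using ny c1 by (simp add: y'_def nsq_smult)
  have dx: "dim_vec x = N" and dy: "dim_vec y = N" using x y by auto
  have s': "ip y' x = of_real (cmod s)"
  proof (cases "s = 0")
    case True then show ?thesis by (simp add: y'_def ip_smult_left c_def s_def[symmetric])
  next
    case False
    have "ip y' x = cnj c * s" by (simp add: y'_def ip_smult_left s_def)
    also have "\<dots> = s * cnj s / of_real (cmod s)" using False by (simp add: c_def)
    also have "\<dots> = of_real (cmod s)" using False
      by (simp add: complex_norm_square[symmetric] power2_eq_square)
    finally show ?thesis .
  qed
  have ev': "ev y' O' = ev y O'"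
  proof -
    have "O' *\<^sub>v y' = c \<cdot>\<^sub>v (O' *\<^sub>v y)" unfolding y'_def by (rule mult_mat_vec[OF cO y])
    then have "ev y' O' = cnj c * (c * ev y O')"
      using cO y by (simp add: ev_def y'_def ip_smult_left ip_smult_right)
    also have "cnj c * c = 1" using c1 by (metis complex_norm_square mult.commute of_real_1 power_one)
    then have "cnj c * (c * ev y O') = ev y O'" by (simp add: mult.assoc[symmetric])
    finally show ?thesis .
  qed
  have scs: "cmod s \<le> 1" using cs[of x y] dx dy nx ny by (simp add: s_def)
  have dxy: "x - y' \<in> carrier_vec N" using x y' by simp
  have nd: "nsq (x - y') = 2 - 2 * cmod s"
  proof -
    have "of_real (nsq (x - y')) = ip (x - y') (x - y')" by (simp add: ip_self)
    also have "\<dots> = ip x x - ip x y' - (ip y' x - ip y' y')"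
      using x y' by (simp add: ip_minus_left[OF x y' dxy] ip_minus_right[OF x x y'] ip_minus_right[OF y' x y'])
    also have "ip x y' = cnj (ip y' x)" using ip_cnj[of x y'] x y' by simp
    finally have e: "of_real (nsq (x - y')) = ip x x - cnj (ip y' x) - (ip y' x - ip y' y')" .
    have "ip x x = 1" "ip y' y' = 1" using nx ny' by (auto simp: ip_self)
    then have "of_real (nsq (x - y')) = (2 - 2 * cmod s :: complex)" using s' e by simp
    then show ?thesis by (metis of_real_1 of_real_diff of_real_eq_iff of_real_mult of_real_numeral)
  qed
  define F where "F = (\<Sum>i<N. \<Sum>j<N. (cmod (x $ i * cnj (x $ j) - y $ i * cnj (y $ j)))\<^sup>2)"
  have F: "F = 2 - 2 * (cmod s)\<^sup>2"
  proof -
    have "F = (\<Sum>i<N. \<Sum>j<N. (cmod (x $ i))\<^sup>2 * (cmod (x $ j))\<^sup>2 + (cmod (y $ i))\<^sup>2 * (cmod (y $ j))\<^sup>2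
              - 2 * Re ((x $ i * cnj (y $ i)) * (cnj (x $ j) * y $ j)))"
      unfolding F_def cmod_diff_sq by (intro sum.cong refl) (simp add: norm_mult power_mult_distrib mult_ac)
    also have "\<dots> = (\<Sum>i<N. \<Sum>j<N. (cmod (x $ i))\<^sup>2 * (cmod (x $ j))\<^sup>2)
        + (\<Sum>i<N. \<Sum>j<N. (cmod (y $ i))\<^sup>2 * (cmod (y $ j))\<^sup>2)
        - 2 * (\<Sum>i<N. \<Sum>j<N. Re ((x $ i * cnj (y $ i)) * (cnj (x $ j) * y $ j)))"
      by (simp only: sum.distrib sum_subtractf sum_distrib_left[symmetric])
    also have "(\<Sum>i<N. \<Sum>j<N. (cmod (x $ i))\<^sup>2 * (cmod (x $ j))\<^sup>2) = 1"
      using sum_product[of "\<lambda>i. (cmod (x $ i))\<^sup>2" "{..<N}" "\<lambda>j. (cmod (x $ j))\<^sup>2" "{..<N}"] nx dx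
      by (simp add: nsq_def)
    also have "(\<Sum>i<N. \<Sum>j<N. (cmod (y $ i))\<^sup>2 * (cmod (y $ j))\<^sup>2) = 1"
      using sum_product[of "\<lambda>i. (cmod (y $ i))\<^sup>2" "{..<N}" "\<lambda>j. (cmod (y $ j))\<^sup>2" "{..<N}"] ny dy
      by (simp add: nsq_def)
    also have "(\<Sum>i<N. \<Sum>j<N. Re ((x $ i * cnj (y $ i)) * (cnj (x $ j) * y $ j)))
        = Re ((\<Sum>i<N. x $ i * cnj (y $ i)) * (\<Sum>j<N. cnj (x $ j) * y $ j))"
      by (simp only: sum_product Re_sum)
    also have "(\<Sum>i<N. x $ i * cnj (y $ i)) = s" unfolding s_def ip_def using dy by (simp add: mult.commute)
    also have "(\<Sum>j<N. cnj (x $ j) * y $ j) = cnj s" unfolding s_def ip_def using dy by (simp add: cnj_sum mult.commute)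
    also have "Re (s * cnj s) = (cmod s)\<^sup>2" by (simp add: complex_norm_square[symmetric])
    finally show ?thesis by simp
  qed
  have Ox: "nsq (O' *\<^sub>v x) = 1" using nsq_unitary[OF U x] nx by simp
  have Od: "nsq (O' *\<^sub>v (x - y')) = nsq (x - y')" using nsq_unitary[OF U dxy] .
  have "ev x O' - ev y' O' = ip (x - y') (O' *\<^sub>v x) + ip y' (O' *\<^sub>v (x - y'))"
  proof -
    have "ip (x - y') (O' *\<^sub>v x) = ip x (O' *\<^sub>v x) - ip y' (O' *\<^sub>v x)"
      by (rule ip_minus_left[OF x y']) (use cO x in simp)
    moreover have "O' *\<^sub>v (x - y') = O' *\<^sub>v x - O' *\<^sub>v y'" by (rule mult_minus_distrib_mat_vec[OF cO x y'])
    moreover have "ip y' (O' *\<^sub>v x - O' *\<^sub>v y') = ip y' (O' *\<^sub>v x) - ip y' (O' *\<^sub>v y')"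
      by (rule ip_minus_right[OF y']) (use cO x y' in simp_all)
    ultimately show ?thesis by (simp add: ev_def)
  qed
  then have "cmod (ev x O' - ev y O') \<le> cmod (ip (x - y') (O' *\<^sub>v x)) + cmod (ip y' (O' *\<^sub>v (x - y')))"
    using ev' by (metis norm_triangle_ineq)
  also have "\<dots> \<le> sqrt (nsq (x - y')) * sqrt (nsq (O' *\<^sub>v x)) + sqrt (nsq y') * sqrt (nsq (O' *\<^sub>v (x - y')))"
    by (intro add_mono cs) (use cO x y' in simp_all)
  also have "\<dots> = 2 * sqrt (2 - 2 * cmod s)" using Ox Od ny' nd by simp
  also have "\<dots> \<le> 2 * sqrt F"
  proof -
    have "cmod s * cmod s \<le> cmod s" using scs by (simp add: mult_le_one mult_left_le)
    then have "2 - 2 * cmod s \<le> F" unfolding F by (simp add: power2_eq_square)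
    then show ?thesis by simp
  qed
  finally show ?thesis unfolding F_def .
qed

definition tr :: "complex mat \<Rightarrow> complex" where
  "tr M = (\<Sum>i<dim_row M. M $$ (i,i))"

lemma tr_mult_comm:
  assumes X: "X \<in> carrier_mat n k" and Y: "Y \<in> carrier_mat k n"
  shows "tr (X * Y) = tr (Y * X)"
proof -
  have "tr (X * Y) = (\<Sum>i<n. (X * Y) $$ (i,i))" unfolding tr_def using X by simp
  also have "\<dots> = (\<Sum>i<n. \<Sum>z<k. X $$ (i,z) * Y $$ (z,i))"
    by (intro sum.cong refl) (rule mult_entry[OF X Y]; simp)
  also have "\<dots> = (\<Sum>z<k. \<Sum>i<n. Y $$ (z,i) * X $$ (i,z))"
    by (subst sum.swap) (simp add: mult.commute)
  also have "\<dots> = (\<Sum>z<k. (Y * X) $$ (z,z))"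
    by (intro sum.cong refl) (rule mult_entry[OF Y X, symmetric]; simp)
  also have "\<dots> = tr (Y * X)" unfolding tr_def using Y by simp
  finally show ?thesis .
qed

lemma order_prod_linear:
  "Polynomial.order z (\<Prod>e\<leftarrow>es. [:- e, 1:]) = count_list (es :: complex list) z"
proof (induction es)
  case Nil then show ?case by simp
next
  case (Cons e es)
  have nz: "prod_list (map (\<lambda>e. [:- e, 1:]) es) \<noteq> (0 :: complex poly)"
    unfolding prod_list_zero_iff by auto
  have l: "[:- e, 1:] \<noteq> (0 :: complex poly)" by simp
  have "[:- e, 1:] * (\<Prod>e\<leftarrow>es. [:- e, 1:]) \<noteq> (0 :: complex poly)"
    using nz l by (simp only: mult_eq_0_iff) blast
  then have "Polynomial.order z (\<Prod>e\<leftarrow>e # es. [:- e, 1:]) = Polynomial.order z [:- e, 1:] + Polynomial.order z (\<Prod>e\<leftarrow>es. [:- e, 1:])"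
    unfolding list.map prod_list.Cons by (rule order_mult)
  moreover have "Polynomial.order z [:- e, 1:] = (if z = e then 1 else 0)"
  proof (cases "z = e")
    case True then show ?thesis using order_power_n_n[of z 1] by simp
  next
    case False then show ?thesis by (simp add: order_0I)
  qed
  ultimately show ?case using Cons.IH by simp
qed

lemma sum_list_count: "sum_list (xs :: complex list) = (\<Sum>x\<in>set xs. of_nat (count_list xs x) * x)"
proof (induction xs)
  case Nil then show ?case by simp
next
  case (Cons a xs)
  have e1: "(\<Sum>x\<in>insert a (set xs). of_nat (count_list xs x) * x) = (\<Sum>x\<in>set xs. of_nat (count_list xs x) * x)"
  proof (cases "a \<in> set xs")
    case True then show ?thesis by (simp add: insert_absorb)
  next
    case False then show ?thesis by (simp add: count_list_0_iff)
  qed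
  have "(\<Sum>x\<in>set (a # xs). of_nat (count_list (a # xs) x) * x)
      = (\<Sum>x\<in>insert a (set xs). of_nat (count_list xs x) * x + (if x = a then x else 0))"
    by (intro sum.cong refl) (auto simp: algebra_simps)
  also have "\<dots> = (\<Sum>x\<in>insert a (set xs). of_nat (count_list xs x) * x) + a"
    by (simp add: sum.distrib)
  finally show ?case using e1 Cons.IH by simp
qed

lemma roots_prod_linear:
  "{x. poly (\<Prod>e\<leftarrow>es. [:- e, 1:]) x = 0} = set (es :: complex list)"
  by (induction es) (auto simp: poly_prod_list)

lemma psd_eig:
  assumes A: "A \<in> carrier_mat n n" and e: "poly (char_poly (adj A * A)) e = 0"
  shows "e = of_real (Re e) \<and> Re e \<ge> 0"
proof -
  have B: "adj A * A \<in> carrier_mat n n" using A adj_carrier[OF A] by simp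
  have "eigenvalue (adj A * A) e" using eigenvalue_root_char_poly[OF B] e by simp
  then obtain v where v: "v \<in> carrier_vec n" "v \<noteq> 0\<^sub>v n" "(adj A * A) *\<^sub>v v = e \<cdot>\<^sub>v v"
    unfolding eigenvalue_def eigenvector_def using B by auto
  have "nsq v \<noteq> 0"
  proof
    assume "nsq v = 0"
    then have "\<forall>i\<in>{..<dim_vec v}. (cmod (v $ i))\<^sup>2 = 0"
      unfolding nsq_def by (subst sum_nonneg_eq_0_iff[symmetric]) auto
    then have "v = 0\<^sub>v n" using v(1) by (intro eq_vecI) auto
    with v(2) show False by simp
  qed
  then have np: "nsq v > 0" using nsq_nonneg[of v] by simp
  have "of_real (nsq (A *\<^sub>v v)) = ip (A *\<^sub>v v) (A *\<^sub>v v)" by (simp add: ip_self)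
  also have "\<dots> = ip v (adj A *\<^sub>v (A *\<^sub>v v))" by (rule ip_adj[OF A v(1)]) (use A v in simp)
  also have "adj A *\<^sub>v (A *\<^sub>v v) = (adj A * A) *\<^sub>v v"
    using A v adj_carrier[OF A] by (simp add: assoc_mult_mat_vec[of _ n n _ n])
  also have "(adj A * A) *\<^sub>v v = e \<cdot>\<^sub>v v" by (rule v(3))
  also have "ip v (e \<cdot>\<^sub>v v) = e * of_real (nsq v)" by (simp add: ip_smult_right ip_self)
  finally have "e = of_real (nsq (A *\<^sub>v v) / nsq v)" using np
    by (simp add: field_simps)
  then show ?thesis using np nsq_nonneg[of "A *\<^sub>v v"] by simp
qed

lemma sq_sum_ge:
  fixes a :: "'a \<Rightarrow> real"
  assumes "finite I" "\<And>i. i \<in> I \<Longrightarrow> a i \<ge> 0"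
  shows "(\<Sum>i\<in>I. (a i)\<^sup>2) \<le> (\<Sum>i\<in>I. a i)\<^sup>2"
proof -
  have "(\<Sum>i\<in>I. (a i)\<^sup>2) \<le> (\<Sum>i\<in>I. a i * (\<Sum>j\<in>I. a j))"
    by (intro sum_mono) (use assms in \<open>auto simp: power2_eq_square intro!: mult_left_mono member_le_sum\<close>)
  also have "\<dots> = (\<Sum>i\<in>I. a i)\<^sup>2" by (simp add: power2_eq_square sum_distrib_right)
  finally show ?thesis .
qed

lemma trace_norm_ge:
  assumes A: "A \<in> carrier_mat n n"
  shows "sqrt (\<Sum>i<n. \<Sum>j<n. (cmod (A $$ (i,j)))\<^sup>2) \<le> trace_norm A"
proof -
  let ?B = "adj A * A"
  have B: "?B \<in> carrier_mat n n" using A adj_carrier[OF A] by simp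
  obtain es where es: "char_poly ?B = (\<Prod>a\<leftarrow>es. [:- a, 1:])" "length es = n"
    using char_poly_factorized[OF B] by blast
  have roots: "{x. poly (char_poly ?B) x = 0} = set es" using es(1) roots_prod_linear by simp
  have ord: "Polynomial.order z (char_poly ?B) = count_list es z" for z using es(1) order_prod_linear by simp
  have real: "z = of_real (Re z) \<and> Re z \<ge> 0" if "z \<in> set es" for z
    using psd_eig[OF A] roots that by blast
  have tn: "trace_norm A = (\<Sum>z\<in>set es. real (count_list es z) * sqrt (Re z))"
    unfolding trace_norm_def Let_def roots ord by simp
  obtain T P Q where sch: "schur_decomposition ?B es = (T, P, Q)" by (cases "schur_decomposition ?B es") auto
  from schur_decomposition[OF B es(1) sch]
  have sw: "similar_mat_wit ?B T P Q" and dT: "diag_mat T = es" by auto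
  from similar_mat_witD2[OF B sw] have cT: "T \<in> carrier_mat n n" and cP: "P \<in> carrier_mat n n"
    and cQ: "Q \<in> carrier_mat n n" and QP: "Q * P = 1\<^sub>m n" and BT: "?B = P * T * Q" by auto
  have "tr ?B = tr ((P * T) * Q)" using BT by simp
  also have "\<dots> = tr (Q * (P * T))" by (rule tr_mult_comm) (use cP cT cQ in auto)
  also have "Q * (P * T) = (Q * P) * T" using cP cT cQ by simp
  also have "\<dots> = T" using QP cT by simp
  also have "tr T = sum_list es"
  proof -
    have "sum_list es = sum_list (map (\<lambda>i. T $$ (i,i)) [0..<n])" using dT cT by (simp add: diag_mat_def)
    also have "\<dots> = (\<Sum>i<n. T $$ (i,i))" by (simp add: sum_list_sum_nth atLeast0LessThan)
    finally show ?thesis using cT by (simp add: tr_def)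
  qed
  finally have trB: "tr ?B = sum_list es" .
  have "tr ?B = (\<Sum>i<n. ?B $$ (i,i))" unfolding tr_def using A by simp
  also have "\<dots> = (\<Sum>i<n. \<Sum>z<n. adj A $$ (i,z) * A $$ (z,i))"
    by (intro sum.cong refl) (rule mult_entry[OF adj_carrier[OF A] A]; simp)
  also have "\<dots> = (\<Sum>i<n. \<Sum>z<n. cnj (A $$ (z,i)) * A $$ (z,i))"
    using A by (intro sum.cong refl) simp
  also have "\<dots> = of_real (\<Sum>i<n. \<Sum>z<n. (cmod (A $$ (z,i)))\<^sup>2)"
    by (simp add: cnj_mult_self)
  also have "(\<Sum>i<n. \<Sum>z<n. (cmod (A $$ (z,i)))\<^sup>2) = (\<Sum>i<n. \<Sum>j<n. (cmod (A $$ (i,j)))\<^sup>2)"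
    by (rule sum.swap)
  finally have trF: "tr ?B = of_real (\<Sum>i<n. \<Sum>j<n. (cmod (A $$ (i,j)))\<^sup>2)" .
  have "sum_list es = (\<Sum>z\<in>set es. of_nat (count_list es z) * z)"
    by (rule sum_list_count)
  then have "Re (sum_list es) = (\<Sum>z\<in>set es. real (count_list es z) * Re z)"
    by (simp add: Re_sum)
  moreover have "sum_list es = of_real (\<Sum>i<n. \<Sum>j<n. (cmod (A $$ (i,j)))\<^sup>2)"
    using trF unfolding trB .
  then have "Re (sum_list es) = (\<Sum>i<n. \<Sum>j<n. (cmod (A $$ (i,j)))\<^sup>2)"
    by (simp only: Re_complex_of_real)
  ultimately have Fsum: "(\<Sum>i<n. \<Sum>j<n. (cmod (A $$ (i,j)))\<^sup>2) = (\<Sum>z\<in>set es. real (count_list es z) * Re z)"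
    by simp
  have "(\<Sum>z\<in>set es. real (count_list es z) * Re z) \<le> (\<Sum>z\<in>set es. (real (count_list es z) * sqrt (Re z))\<^sup>2)"
  proof (rule sum_mono)
    fix z assume z: "z \<in> set es"
    have "count_list es z \<noteq> 0" using z by (simp add: count_list_0_iff)
    then have c1: "real (count_list es z) \<ge> 1" by simp
    have "real (count_list es z) * Re z \<le> real (count_list es z) * real (count_list es z) * Re z"
      using c1 real[OF z] by (simp add: mult_right_mono)
    moreover have "(real (count_list es z) * sqrt (Re z))\<^sup>2 = (real (count_list es z))\<^sup>2 * Re z"
      using real[OF z] by (simp add: power_mult_distrib)
    ultimately show "real (count_list es z) * Re z \<le> (real (count_list es z) * sqrt (Re z))\<^sup>2"
      by (metis power2_eq_square)
  qed
  also have "\<dots> \<le> (\<Sum>z\<in>set es. real (count_list es z) * sqrt (Re z))\<^sup>2"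
    by (rule sq_sum_ge) (use real in auto)
  finally have h: "(\<Sum>i<n. \<Sum>j<n. (cmod (A $$ (i,j)))\<^sup>2) \<le> (\<Sum>z\<in>set es. real (count_list es z) * sqrt (Re z))\<^sup>2"
    using Fsum by simp
  have "sqrt (\<Sum>i<n. \<Sum>j<n. (cmod (A $$ (i,j)))\<^sup>2) \<le> sqrt ((\<Sum>z\<in>set es. real (count_list es z) * sqrt (Re z))\<^sup>2)"
    by (rule real_sqrt_le_mono[OF h])
  also have "\<dots> = (\<Sum>z\<in>set es. real (count_list es z) * sqrt (Re z))"
    using real by (intro real_sqrt_abs[THEN trans] abs_of_nonneg sum_nonneg) auto
  finally show ?thesis using tn by simp
qed

lemma bit_ones: "bit (2^n - 1 :: nat) k \<longleftrightarrow> k < n"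
  using bit_mask_iff[of n k, where 'a = nat] by (simp add: mask_eq_exp_minus_1)

lemma bit_idx:
  assumes "(a2::nat) < 2^n"
  shows "bit (a1 * 2^n + a2) k \<longleftrightarrow> (if k < n then bit a2 k else bit a1 (k - n))"
proof -
  have "a1 * 2^n + a2 = push_bit n a1 + a2" by (simp add: push_bit_eq_mult)
  also have "\<dots> = Bit_Operations.or (push_bit n a1) a2"
  proof (rule disjunctive_add)
    fix k
    show "\<not> bit (push_bit n a1) k \<or> \<not> bit a2 k"
      using assms high_bit[of a2 n k] by (auto simp: bit_push_bit_iff_nat)
  qed
  finally show ?thesis using assms high_bit[of a2 n k] by (auto simp: bit_or_iff bit_push_bit_iff_nat)
qed

lemma cat_dim[simp]: "dim_vec (cat_vec \<gamma> m) = 2^m"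
  by (simp add: cat_vec_def)

lemma cat_carrier: "cat_vec \<gamma> m \<in> carrier_vec (2^m)"
  by (simp add: cat_vec_def)

lemma ones_pos: "m \<ge> 1 \<Longrightarrow> (2::nat)^m - 1 \<noteq> 0"
  using one_less_power[of "2::nat" m] by simp

lemma cat_entry:
  assumes "m \<ge> 1" "i < 2^m"
  shows "cat_vec \<gamma> m $ i = (if i = 0 then complex_of_real (sqrt \<gamma>)
      else if i = 2 ^ m - 1 then complex_of_real (sqrt (1 - \<gamma>)) else 0)"
  using assms by (simp add: cat_vec_def)

lemma cat_sq0: "\<gamma> \<in> {0..1} \<Longrightarrow> (cmod (complex_of_real (sqrt \<gamma>)))\<^sup>2 = \<gamma>"
  by simp

lemma cat_sq1: "\<gamma> \<in> {0..1} \<Longrightarrow> (cmod (complex_of_real (sqrt (1 - \<gamma>))))\<^sup>2 = 1 - \<gamma>"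
  by simp

lemma sum_two:
  assumes "a \<noteq> b" shows "(\<Sum>i\<in>{a,b}. f i) = f a + f b"
  using assms by simp

lemma ev_cat:
  assumes m: "m \<ge> 1" and g: "\<gamma> \<in> {0..1}" and M: "M \<in> carrier_mat (2^m) (2^m)"
    and z1: "M $$ (0, 2^m - 1) = 0" and z2: "M $$ (2^m - 1, 0) = 0"
  shows "ev (cat_vec \<gamma> m) M = of_real \<gamma> * M $$ (0,0) + of_real (1 - \<gamma>) * M $$ (2^m - 1, 2^m - 1)"
proof -
  have ne: "(0::nat) \<noteq> 2^m - 1" using ones_pos[OF m] by simp
  have "ev (cat_vec \<gamma> m) M = (\<Sum>i\<in>{0, 2^m - 1}. of_real ((cmod (cat_vec \<gamma> m $ i))\<^sup>2) * M $$ (i,i))"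
  proof (rule ev_support[OF cat_carrier M])
    show "{0, 2^m - 1} \<subseteq> {..<(2::nat)^m}" by auto
    show "\<And>i. i < 2^m \<Longrightarrow> i \<notin> {0, 2^m - 1} \<Longrightarrow> cat_vec \<gamma> m $ i = 0"
      using m by (auto simp: cat_entry)
    show "\<And>i j. i \<in> {0, 2^m - 1} \<Longrightarrow> j \<in> {0, 2^m - 1} \<Longrightarrow> i \<noteq> j \<Longrightarrow> M $$ (i,j) = 0"
      using z1 z2 by auto
  qed
  also have "\<dots> = of_real \<gamma> * M $$ (0,0) + of_real (1 - \<gamma>) * M $$ (2^m - 1, 2^m - 1)"
    using ne m g by (simp add: sum_two cat_entry del: of_real_power)
  finally show ?thesis .
qed

lemma nsq_cat: assumes "m \<ge> 1" "\<gamma> \<in> {0..1}" shows "nsq (cat_vec \<gamma> m) = 1"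
proof -
  have "ev (cat_vec \<gamma> m) (1\<^sub>m (2^m)) = of_real \<gamma> + of_real (1 - \<gamma>)"
    using ev_cat[OF assms, of "1\<^sub>m (2^m)"] ones_pos[OF assms(1)] by simp
  moreover have "ev (cat_vec \<gamma> m) (1\<^sub>m (2^m)) = of_real (nsq (cat_vec \<gamma> m))"
    unfolding ev_def using cat_carrier[of \<gamma> m] by (simp add: ip_self)
  ultimately show ?thesis by (metis add_diff_cancel_left' diff_add_cancel of_real_1 of_real_add of_real_eq_iff)
qed

lemma proj_carrier: "v \<in> carrier_vec N \<Longrightarrow> proj v \<in> carrier_mat N N"
  by (simp add: proj_def)

lemma proj_conj:
  assumes W: "W \<in> carrier_mat N N" and v: "v \<in> carrier_vec N"
  shows "W * proj v * adj W = proj (W *\<^sub>v v)"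
proof (rule eq_matI)
  fix i j assume "i < dim_row (proj (W *\<^sub>v v))" "j < dim_col (proj (W *\<^sub>v v))"
  then have i: "i < N" and j: "j < N" using W by (auto simp: proj_def)
  have cP: "proj v \<in> carrier_mat N N" using proj_carrier[OF v] .
  have cWP: "W * proj v \<in> carrier_mat N N" using W cP by simp
  have "(W * proj v * adj W) $$ (i,j) = (\<Sum>b<N. (W * proj v) $$ (i,b) * adj W $$ (b,j))"
    by (rule mult_entry[OF cWP adj_carrier[OF W] i j])
  also have "\<dots> = (\<Sum>b<N. (\<Sum>a<N. W $$ (i,a) * (v $ a * cnj (v $ b))) * cnj (W $$ (j,b)))"
  proof (intro sum.cong refl)
    fix b assume b: "b \<in> {..<N}"
    have "(W * proj v) $$ (i,b) = (\<Sum>a<N. W $$ (i,a) * proj v $$ (a,b))"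
      using b by (intro mult_entry[OF W cP i]) auto
    also have "\<dots> = (\<Sum>a<N. W $$ (i,a) * (v $ a * cnj (v $ b)))"
      using v b by (intro sum.cong refl) (auto simp: proj_def)
    finally show "(W * proj v) $$ (i,b) * adj W $$ (b,j) = (\<Sum>a<N. W $$ (i,a) * (v $ a * cnj (v $ b))) * cnj (W $$ (j,b))"
      using W b j by simp
  qed
  also have "\<dots> = (\<Sum>a<N. W $$ (i,a) * v $ a) * cnj (\<Sum>b<N. W $$ (j,b) * v $ b)"
    by (simp add: sum_distrib_left sum_distrib_right cnj_sum mult_ac)
  also have "\<dots> = proj (W *\<^sub>v v) $$ (i,j)"
    using W v i j by (simp add: proj_def mult_vec_entry del: index_mult_mat_vec)
  finally show "(W * proj v * adj W) $$ (i,j) = proj (W *\<^sub>v v) $$ (i,j)" .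
qed (use W v in \<open>auto simp: proj_def\<close>)

definition tvec :: "real \<Rightarrow> nat \<Rightarrow> complex vec" where
  "tvec \<beta> n = vec (2^n * 2^n) (\<lambda>i. cat_vec \<beta> n $ (i div 2^n) * cat_vec \<beta> n $ (i mod 2^n))"

lemma tensor_proj: "tensor_mat (cat_dm \<beta> n) (cat_dm \<beta> n) = proj (tvec \<beta> n)"
proof (rule eq_matI)
  fix i j assume ij: "i < dim_row (proj (tvec \<beta> n))" "j < dim_col (proj (tvec \<beta> n))"
  then have i: "i < 2^n * 2^n" and j: "j < 2^n * 2^n" by (auto simp: proj_def tvec_def)
  have "i div 2^n < 2^n" "j div 2^n < 2^n" using i j by (auto simp: less_mult_imp_div_less)
  then show "tensor_mat (cat_dm \<beta> n) (cat_dm \<beta> n) $$ (i,j) = proj (tvec \<beta> n) $$ (i,j)"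
    using i j by (simp add: tensor_mat_def cat_dm_def proj_def tvec_def)
qed (auto simp: tensor_mat_def cat_dm_def proj_def tvec_def)

lemma tvec_carrier: "tvec \<beta> n \<in> carrier_vec (2^(2*n))"
  by (simp add: tvec_def power_add mult_2)

lemma proj_diff_entry:
  assumes "x \<in> carrier_vec N" "y \<in> carrier_vec N" "i < N" "j < N"
  shows "(proj x - proj y) $$ (i,j) = x $ i * cnj (x $ j) - y $ i * cnj (y $ j)"
  using assms by (simp add: proj_def)

lemma ev_bound_tn:
  assumes x: "x \<in> carrier_vec N" and y: "y \<in> carrier_vec N"
    and nx: "nsq x = 1" and ny: "nsq y = 1" and U: "is_unitary N O'"
  shows "cmod (ev x O' - ev y O') \<le> 2 * trace_norm (proj x - proj y)"
proof -
  have c: "proj x - proj y \<in> carrier_mat N N" using proj_carrier[OF y] by (rule minus_carrier_mat)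
  have "(\<Sum>i<N. \<Sum>j<N. (cmod (x $ i * cnj (x $ j) - y $ i * cnj (y $ j)))\<^sup>2)
       = (\<Sum>i<N. \<Sum>j<N. (cmod ((proj x - proj y) $$ (i,j)))\<^sup>2)"
    using x y by (intro sum.cong refl) (simp add: proj_diff_entry)
  then show ?thesis using ev_approx[OF x y nx ny U] trace_norm_ge[OF c] by simp
qed

lemma ev_eq_proj:
  assumes x: "x \<in> carrier_vec N" and y: "y \<in> carrier_vec N"
    and nx: "nsq x = 1" and ny: "nsq y = 1" and U: "is_unitary N O'" and e: "proj x = proj y"
  shows "ev x O' = ev y O'"
proof -
  have "(\<Sum>i<N. \<Sum>j<N. (cmod (x $ i * cnj (x $ j) - y $ i * cnj (y $ j)))\<^sup>2) = 0"
  proof (intro sum.neutral ballI)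
    fix i j assume "i \<in> {..<N}" "j \<in> {..<N}"
    then have "(proj x) $$ (i,j) = (proj y) $$ (i,j)" using e by simp
    then show "(cmod (x $ i * cnj (x $ j) - y $ i * cnj (y $ j)))\<^sup>2 = 0"
      using x y \<open>i \<in> {..<N}\<close> \<open>j \<in> {..<N}\<close> by (simp add: proj_def)
  qed
  then show ?thesis using ev_approx[OF x y nx ny U] by simp
qed

definition ee :: "nat \<Rightarrow> nat \<Rightarrow> nat \<Rightarrow> nat" where
  "ee n a1 a2 = a1 * 2^n + a2"

abbreviation "p1 n \<equiv> (2::nat)^n - 1"

lemma p1_lt: "p1 n < 2^n" by simp

lemma p1_ge: "n \<ge> 1 \<Longrightarrow> p1 n \<ge> 1"
  using ones_pos[of n] by simp

lemma bit_e00: "bit (ee n 0 0) k = False" by (simp add: ee_def)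
lemma bit_e01: "bit (ee n 0 (p1 n)) k \<longleftrightarrow> k < n"
  unfolding ee_def using bit_ones[of n k] by simp
lemma bit_e10: "bit (ee n (p1 n) 0) k \<longleftrightarrow> n \<le> k \<and> k < 2 * n"
  unfolding ee_def using bit_idx[of 0 n "p1 n" k] bit_ones[of n "k - n"] by auto
lemma bit_e11: "bit (ee n (p1 n) (p1 n)) k \<longleftrightarrow> k < 2 * n"
  unfolding ee_def using bit_idx[of "p1 n" n "p1 n" k] bit_ones[of n "k - n"] bit_ones[of n k] p1_lt[of n]
  by auto

lemma ee_lt: "a1 < 2^n \<Longrightarrow> a2 < 2^n \<Longrightarrow> ee n a1 a2 < 2^(2*n)"
proof -
  assume a: "a1 < 2^n" "a2 < 2^n"
  have "a1 * 2^n + a2 < a1 * 2^n + 2^n" using a by simp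
  also have "\<dots> = (a1 + 1) * 2^n" by simp
  also have "\<dots> \<le> 2^n * 2^n" using a by (intro mult_right_mono) auto
  finally show ?thesis by (simp add: ee_def power_add mult_2)
qed

lemma ee_div: "a2 < 2^n \<Longrightarrow> ee n a1 a2 div 2^n = a1"
  by (simp add: ee_def)
lemma ee_mod: "a2 < 2^n \<Longrightarrow> ee n a1 a2 mod 2^n = a2"
  by (simp add: ee_def)

definition EE :: "nat \<Rightarrow> nat set" where
  "EE n = {ee n 0 0, ee n 0 (p1 n), ee n (p1 n) 0, ee n (p1 n) (p1 n)}"

lemma ee_distinct:
  assumes "n \<ge> 1"
  shows "ee n 0 0 \<noteq> ee n 0 (p1 n)" "ee n 0 0 \<noteq> ee n (p1 n) 0" "ee n 0 0 \<noteq> ee n (p1 n) (p1 n)"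
    "ee n 0 (p1 n) \<noteq> ee n (p1 n) 0" "ee n 0 (p1 n) \<noteq> ee n (p1 n) (p1 n)" "ee n (p1 n) 0 \<noteq> ee n (p1 n) (p1 n)"
proof -
  have b: "n - 1 < n" "n \<le> 2 * n - 1" "2 * n - 1 < 2 * n" "0 < n" using assms by auto
  show "ee n 0 0 \<noteq> ee n 0 (p1 n)" using bit_e00[of n "n-1"] bit_e01[of n "n-1"] b by auto
  show "ee n 0 0 \<noteq> ee n (p1 n) 0" using bit_e00[of n "2*n-1"] bit_e10[of n "2*n-1"] b by auto
  show "ee n 0 0 \<noteq> ee n (p1 n) (p1 n)" using bit_e00[of n "0"] bit_e11[of n "0"] b by auto
  show "ee n 0 (p1 n) \<noteq> ee n (p1 n) 0" using bit_e01[of n "0"] bit_e10[of n "0"] b by auto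
  show "ee n 0 (p1 n) \<noteq> ee n (p1 n) (p1 n)" using bit_e01[of n "2*n-1"] bit_e11[of n "2*n-1"] b by auto
  show "ee n (p1 n) 0 \<noteq> ee n (p1 n) (p1 n)" using bit_e10[of n "0"] bit_e11[of n "0"] b by auto
qed

lemma tvec_entry:
  assumes "i < 2^(2*n)"
  shows "tvec \<beta> n $ i = cat_vec \<beta> n $ (i div 2^n) * cat_vec \<beta> n $ (i mod 2^n)"
  using assms by (simp add: tvec_def power_add mult_2)

lemma ev_t:
  assumes n: "n \<ge> 1" and b: "\<beta> \<in> {0..1}" and M: "M \<in> carrier_mat (2^(2*n)) (2^(2*n))"
    and off: "\<And>u v. u \<in> EE n \<Longrightarrow> v \<in> EE n \<Longrightarrow> u \<noteq> v \<Longrightarrow> M $$ (u,v) = 0"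
  shows "ev (tvec \<beta> n) M =
      of_real (\<beta> * \<beta>) * M $$ (ee n 0 0, ee n 0 0)
    + of_real (\<beta> * (1 - \<beta>)) * M $$ (ee n 0 (p1 n), ee n 0 (p1 n))
    + of_real ((1 - \<beta>) * \<beta>) * M $$ (ee n (p1 n) 0, ee n (p1 n) 0)
    + of_real ((1 - \<beta>) * (1 - \<beta>)) * M $$ (ee n (p1 n) (p1 n), ee n (p1 n) (p1 n))"
proof -
  have pl: "p1 n < 2^n" "(0::nat) < 2^n" by auto
  have p0: "p1 n \<noteq> 0" using ones_pos[OF n] .
  have sub: "EE n \<subseteq> {..<2^(2*n)}" using ee_lt[OF pl(2) pl(2)] ee_lt[OF pl(2) pl(1)] ee_lt[OF pl(1) pl(2)]
    ee_lt[OF pl(1) pl(1)] by (auto simp: EE_def)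
  have cv: "cat_vec \<beta> n $ a = (if a = 0 then complex_of_real (sqrt \<beta>)
      else if a = p1 n then complex_of_real (sqrt (1 - \<beta>)) else 0)" if "a < 2^n" for a
    using cat_entry[OF n that] by simp
  have "ev (tvec \<beta> n) M = (\<Sum>i\<in>EE n. of_real ((cmod (tvec \<beta> n $ i))\<^sup>2) * M $$ (i,i))"
  proof (rule ev_support[OF tvec_carrier M sub])
    fix i assume i: "i < 2^(2*n)" "i \<notin> EE n"
    have d: "i div 2^n < 2^n" using i(1) by (simp add: power_add mult_2 less_mult_imp_div_less)
    have md: "i mod 2^n < 2^n" by simp
    have ie: "i = ee n (i div 2^n) (i mod 2^n)" using div_mult_mod_eq[of i "2^n"] by (simp add: ee_def)
    show "tvec \<beta> n $ i = 0"
    proof (cases "(i div 2^n = 0 \<or> i div 2^n = p1 n) \<and> (i mod 2^n = 0 \<or> i mod 2^n = p1 n)")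
      case True
      then have "i \<in> EE n" using ie unfolding EE_def by (metis insert_iff)
      with i show ?thesis by simp
    next
      case False
      then show ?thesis using i(1) d md by (auto simp: tvec_entry cv)
    qed
  next
    fix u v assume "u \<in> EE n" "v \<in> EE n" "u \<noteq> v"
    then show "M $$ (u,v) = 0" by (rule off)
  qed
  also have "\<dots> = of_real (\<beta> * \<beta>) * M $$ (ee n 0 0, ee n 0 0)
    + of_real (\<beta> * (1 - \<beta>)) * M $$ (ee n 0 (p1 n), ee n 0 (p1 n))
    + of_real ((1 - \<beta>) * \<beta>) * M $$ (ee n (p1 n) 0, ee n (p1 n) 0)
    + of_real ((1 - \<beta>) * (1 - \<beta>)) * M $$ (ee n (p1 n) (p1 n), ee n (p1 n) (p1 n))"
  proof -
    have v: "tvec \<beta> n $ ee n a1 a2 = cat_vec \<beta> n $ a1 * cat_vec \<beta> n $ a2" if "a1 < 2^n" "a2 < 2^n" for a1 a2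
      using that ee_lt[OF that] by (simp add: tvec_entry ee_div ee_mod)
    have s4: "(\<Sum>i\<in>EE n. g i) = g (ee n 0 0) + g (ee n 0 (p1 n)) + g (ee n (p1 n) 0) + g (ee n (p1 n) (p1 n))"
      for g :: "nat \<Rightarrow> complex"
      unfolding EE_def using ee_distinct[OF n] by (simp add: algebra_simps)
    have c0: "cmod (cat_vec \<beta> n $ 0) = sqrt \<beta>" using b by (simp add: cv)
    have c1: "cmod (cat_vec \<beta> n $ (2^n - Suc 0)) = sqrt (1 - \<beta>)" using b p0 cv[of "p1 n"] by simp
    have sb: "sqrt \<beta> * sqrt \<beta> = \<beta>" "sqrt (1-\<beta>) * sqrt (1-\<beta>) = 1 - \<beta>" using b by auto
    have t00: "(cmod (tvec \<beta> n $ ee n 0 0))\<^sup>2 = \<beta> * \<beta>"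
      using pl by (simp add: v norm_mult c0 c1 power2_eq_square sb)
    have t01: "(cmod (tvec \<beta> n $ ee n 0 (p1 n)))\<^sup>2 = \<beta> * (1 - \<beta>)"
      using pl by (simp add: v norm_mult c0 c1 power2_eq_square sb) (metis mult.assoc mult.commute sb)
    have t10: "(cmod (tvec \<beta> n $ ee n (p1 n) 0))\<^sup>2 = (1 - \<beta>) * \<beta>"
      using pl by (simp add: v norm_mult c0 c1 power2_eq_square sb) (metis mult.assoc mult.commute sb)
    have t11: "(cmod (tvec \<beta> n $ ee n (p1 n) (p1 n)))\<^sup>2 = (1 - \<beta>) * (1 - \<beta>)"
      using pl by (simp add: v norm_mult c0 c1 power2_eq_square sb)
    show ?thesis unfolding s4 t00 t01 t10 t11 ..
  qed
  finally show ?thesis .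
qed

lemma EE_bits:
  assumes "u \<in> EE n" "n \<ge> 1"
  shows "u = ee n (if bit u n then p1 n else 0) (if bit u 0 then p1 n else 0)"
  using assms bit_e00[of n] bit_e01[of n] bit_e10[of n] bit_e11[of n] unfolding EE_def by auto

lemma EE_off:
  assumes n: "n \<ge> 1" and M: "supp (2*n) S M" and k1: "n \<le> k1" "k1 < 2*n" "k1 \<notin> S"
    and k2: "k2 < n" "k2 \<notin> S"
    and u: "u \<in> EE n" and v: "v \<in> EE n" and uv: "u \<noteq> v"
  shows "M $$ (u,v) = 0"
proof -
  have pl: "p1 n < 2^n" "(0::nat) < 2^n" by auto
  have sub: "EE n \<subseteq> {..<2^(2*n)}" using ee_lt[OF pl(2) pl(2)] ee_lt[OF pl(2) pl(1)] ee_lt[OF pl(1) pl(2)]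
    ee_lt[OF pl(1) pl(1)] by (auto simp: EE_def)
  have "\<not> agree S u v"
  proof
    assume a: "agree S u v"
    have "bit u k1 = bit v k1" "bit u k2 = bit v k2" using a k1 k2 by (auto simp: agree_def)
    moreover have "bit w k1 = bit w n" "bit w k2 = bit w 0" if "w \<in> EE n" for w
      using that k1 k2 bit_e00[of n] bit_e01[of n] bit_e10[of n] bit_e11[of n] unfolding EE_def by auto
    ultimately have "bit u n = bit v n" "bit u 0 = bit v 0" using u v by auto
    then have "u = v" using EE_bits[OF u n] EE_bits[OF v n] by metis
    with uv show False by simp
  qed
  then show ?thesis using suppD(2)[OF M] u v sub by auto
qed

lemma abs_prod_le1: "\<bar>a::real\<bar> \<le> 1 \<Longrightarrow> \<bar>b\<bar> \<le> 1 \<Longrightarrow> \<bar>a * b\<bar> \<le> 1"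
  by (simp add: abs_mult mult_le_one)

lemma prod_close:
  fixes P Q m e :: real
  assumes "\<bar>P - m\<bar> \<le> e" "\<bar>Q - m\<bar> \<le> e" "\<bar>Q\<bar> \<le> 1" "\<bar>m\<bar> \<le> 1"
  shows "\<bar>P * Q - m * m\<bar> \<le> 2 * e"
proof -
  have "P * Q - m * m = (P - m) * Q + m * (Q - m)" by (simp add: algebra_simps)
  then have "\<bar>P * Q - m * m\<bar> \<le> \<bar>P - m\<bar> * \<bar>Q\<bar> + \<bar>m\<bar> * \<bar>Q - m\<bar>"
    by (metis abs_mult abs_triangle_ineq)
  also have "\<dots> \<le> e * 1 + 1 * e"
    using assms by (intro add_mono mult_mono) auto
  finally show ?thesis by simp
qed

lemma mix_abs: "0 \<le> (a::real) \<Longrightarrow> a \<le> 1 \<Longrightarrow> \<bar>f\<bar> \<le> 1 \<Longrightarrow> \<bar>g\<bar> \<le> 1 \<Longrightarrow> \<bar>a * f + (1 - a) * g\<bar> \<le> 1"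
proof -
  assume a: "0 \<le> a" "a \<le> 1" "\<bar>f\<bar> \<le> 1" "\<bar>g\<bar> \<le> 1"
  have "\<bar>a * f + (1 - a) * g\<bar> \<le> a * \<bar>f\<bar> + (1 - a) * \<bar>g\<bar>"
    using a by (metis abs_mult abs_of_nonneg abs_triangle_ineq diff_ge_0_iff_ge)
  also have "\<dots> \<le> a * 1 + (1 - a) * 1" using a by (intro add_mono mult_left_mono) auto
  finally show ?thesis by simp
qed

lemma RB:
  fixes \<alpha> m \<eta> fa ga fa' ga' fb gb fb' gb' :: real
  assumes al: "0 \<le> \<alpha>" "\<alpha> \<le> 1" and mm: "\<bar>m\<bar> \<le> 1" and et: "\<eta> \<ge> 0"
    and fg: "\<bar>fa\<bar> \<le> 1" "\<bar>ga\<bar> \<le> 1" "\<bar>fa'\<bar> \<le> 1" "\<bar>ga'\<bar> \<le> 1"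
            "\<bar>fb\<bar> \<le> 1" "\<bar>gb\<bar> \<le> 1" "\<bar>fb'\<bar> \<le> 1" "\<bar>gb'\<bar> \<le> 1"
    and s: "\<bar>\<alpha> * fa + (1 - \<alpha>) * ga - m\<bar> \<le> \<eta>" "\<bar>\<alpha> * fa' + (1 - \<alpha>) * ga' - m\<bar> \<le> \<eta>"
           "\<bar>\<alpha> * fb + (1 - \<alpha>) * gb - m\<bar> \<le> \<eta>" "\<bar>\<alpha> * fb' + (1 - \<alpha>) * gb' - m\<bar> \<le> \<eta>"
    and p: "\<bar>\<alpha> * (fa * fa') + (1 - \<alpha>) * (ga * ga') - 1\<bar> \<le> \<eta>"
           "\<bar>\<alpha> * (fb * fb') + (1 - \<alpha>) * (gb * gb') - 1\<bar> \<le> \<eta>"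
           "\<bar>\<alpha> * (fa * fb) + (1 - \<alpha>) * (ga * gb) - m * m\<bar> \<le> \<eta>"
           "\<bar>\<alpha> * (fa' * fb') + (1 - \<alpha>) * (ga' * gb') - m * m\<bar> \<le> \<eta>"
  shows "1 - m * m \<le> 6 * \<eta>"
proof -
  define P where "P f g = \<alpha> * f + (1 - \<alpha>) * g" for f g
  have cov: "\<alpha> * (f * f') + (1 - \<alpha>) * (g * g') - P f g * P f' g' = \<alpha> * (1 - \<alpha>) * (f - g) * (f' - g')"
    for f g f' g' unfolding P_def by (simp add: algebra_simps)
  have Pb: "\<bar>P f g\<bar> \<le> 1" if "\<bar>f\<bar> \<le> 1" "\<bar>g\<bar> \<le> 1" for f g
    unfolding P_def using mix_abs[OF al that] .
  have c1: "\<bar>P fa ga * P fa' ga' - m * m\<bar> \<le> 2 * \<eta>"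
    by (rule prod_close) (use s Pb fg mm in \<open>auto simp: P_def\<close>)
  have c2: "\<bar>P fb gb * P fb' gb' - m * m\<bar> \<le> 2 * \<eta>"
    by (rule prod_close) (use s Pb fg mm in \<open>auto simp: P_def\<close>)
  have c3: "\<bar>P fa ga * P fb gb - m * m\<bar> \<le> 2 * \<eta>"
    by (rule prod_close) (use s Pb fg mm in \<open>auto simp: P_def\<close>)
  have c4: "\<bar>P fa' ga' * P fb' gb' - m * m\<bar> \<le> 2 * \<eta>"
    by (rule prod_close) (use s Pb fg mm in \<open>auto simp: P_def\<close>)
  define X where "X = \<alpha> * (1 - \<alpha>) * (fa - ga) * (fa' - ga')"
  define Y where "Y = \<alpha> * (1 - \<alpha>) * (fb - gb) * (fb' - gb')"
  define U where "U = \<alpha> * (1 - \<alpha>) * (fa - ga) * (fb - gb)"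
  define V where "V = \<alpha> * (1 - \<alpha>) * (fa' - ga') * (fb' - gb')"
  have XY: "X * Y = U * V" unfolding X_def Y_def U_def V_def by (simp add: algebra_simps)
  have X: "X \<ge> 1 - m * m - 3 * \<eta>" using cov[of fa fa' ga ga'] p(1) c1 unfolding X_def by linarith
  have Y: "Y \<ge> 1 - m * m - 3 * \<eta>" using cov[of fb fb' gb gb'] p(2) c2 unfolding Y_def by linarith
  have U: "\<bar>U\<bar> \<le> 3 * \<eta>" using cov[of fa fb ga gb] p(3) c3 unfolding U_def by linarith
  have V: "\<bar>V\<bar> \<le> 3 * \<eta>" using cov[of fa' fb' ga' gb'] p(4) c4 unfolding V_def by linarith
  show ?thesis
  proof (rule ccontr)
    assume "\<not> 1 - m * m \<le> 6 * \<eta>"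
    then have c: "1 - m * m - 3 * \<eta> > 3 * \<eta>" by simp
    have "(3 * \<eta>) * (3 * \<eta>) < (1 - m * m - 3 * \<eta>) * (1 - m * m - 3 * \<eta>)"
      using c et by (intro mult_strict_mono) auto
    also have "\<dots> \<le> X * Y" using X Y c et by (intro mult_mono) auto
    also have "\<dots> = U * V" by (rule XY)
    also have "\<dots> \<le> \<bar>U\<bar> * \<bar>V\<bar>" by (simp add: abs_mult[symmetric])
    also have "\<dots> \<le> (3 * \<eta>) * (3 * \<eta>)" using U V et by (intro mult_mono) auto
    finally show False by simp
  qed
qed

lemma RF:
  fixes \<beta> \<mu> \<eta> h00 h01 h10 h11 k00 k01 k10 k11 :: real
  assumes b: "0 \<le> \<beta>" "\<beta> \<le> 1" and mu: "\<bar>\<mu>\<bar> \<le> 1" and et: "\<eta> \<ge> 0"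
    and h: "\<bar>h00\<bar> \<le> 1" "\<bar>h01\<bar> \<le> 1" "\<bar>h10\<bar> \<le> 1" "\<bar>h11\<bar> \<le> 1"
    and k: "\<bar>k00\<bar> \<le> 1" "\<bar>k01\<bar> \<le> 1" "\<bar>k10\<bar> \<le> 1" "\<bar>k11\<bar> \<le> 1"
  defines "w00 \<equiv> \<beta> * \<beta>" and "w01 \<equiv> \<beta> * (1 - \<beta>)" and "w10 \<equiv> (1 - \<beta>) * \<beta>" and "w11 \<equiv> (1 - \<beta>) * (1 - \<beta>)"
  assumes s1: "\<bar>w00 * h00 + w01 * h01 + w10 * h10 + w11 * h11 - \<mu>\<bar> \<le> \<eta>"
    and s2: "\<bar>w00 * k00 + w01 * k01 + w10 * k10 + w11 * k11 - \<mu>\<bar> \<le> \<eta>"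
    and s3: "\<bar>w00 * (h00 * k00) + w01 * (h01 * k01) + w10 * (h10 * k10) + w11 * (h11 * k11) - 1\<bar> \<le> \<eta>"
  shows "1 - \<mu> * \<mu> \<le> 8 * (\<beta> * (1 - \<beta>)) + 3 * \<eta>"
proof -
  have w: "w00 \<ge> 0" "w01 \<ge> 0" "w10 \<ge> 0" "w11 \<ge> 0" using b unfolding w00_def w01_def w10_def w11_def by auto
  have ws: "w00 + w01 + w10 + w11 = 1" unfolding w00_def w01_def w10_def w11_def by (simp add: algebra_simps)
  define Q where "Q = w00 * h00 + w01 * h01 + w10 * h10 + w11 * h11"
  define Q' where "Q' = w00 * k00 + w01 * k01 + w10 * k10 + w11 * k11"
  have Qb: "\<bar>Q'\<bar> \<le> 1"
  proof -
    have "\<bar>Q'\<bar> \<le> w00 * \<bar>k00\<bar> + w01 * \<bar>k01\<bar> + w10 * \<bar>k10\<bar> + w11 * \<bar>k11\<bar>"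
      unfolding Q'_def using w by (simp add: abs_mult abs_triangle_ineq order_trans[OF abs_triangle_ineq])
    also have "\<dots> \<le> w00 * 1 + w01 * 1 + w10 * 1 + w11 * 1"
      using w k by (intro add_mono mult_left_mono) auto
    finally show ?thesis using ws by simp
  qed
  have c: "\<bar>Q * Q' - \<mu> * \<mu>\<bar> \<le> 2 * \<eta>"
    by (rule prod_close) (use s1 s2 Qb mu in \<open>auto simp: Q_def Q'_def\<close>)
  define D where "D a b c d = (a - b) * (c - d)" for a b c d :: real
  have Dle: "D a b c d \<le> 4" if "\<bar>a\<bar> \<le> 1" "\<bar>b\<bar> \<le> 1" "\<bar>c\<bar> \<le> 1" "\<bar>d\<bar> \<le> 1" for a b c d
  proof -
    have "D a b c d \<le> \<bar>a - b\<bar> * \<bar>c - d\<bar>" unfolding D_def by (simp add: abs_mult[symmetric])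
    also have "\<dots> \<le> 2 * 2" using that by (intro mult_mono) auto
    finally show ?thesis by simp
  qed
  have ident: "w00 * (h00 * k00) + w01 * (h01 * k01) + w10 * (h10 * k10) + w11 * (h11 * k11) - Q * Q'
     = w00 * w01 * D h00 h01 k00 k01 + w00 * w10 * D h00 h10 k00 k10 + w00 * w11 * D h00 h11 k00 k11
     + w01 * w10 * D h01 h10 k01 k10 + w01 * w11 * D h01 h11 k01 k11 + w10 * w11 * D h10 h11 k10 k11"
  proof -
    have "w00 * (h00 * k00) + w01 * (h01 * k01) + w10 * (h10 * k10) + w11 * (h11 * k11)
        = (w00 + w01 + w10 + w11) * (w00 * (h00 * k00) + w01 * (h01 * k01) + w10 * (h10 * k10) + w11 * (h11 * k11))"
      using ws by simp
    then show ?thesis unfolding Q_def Q'_def D_def by (simp add: algebra_simps)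
  qed
  have "w00 * w01 * D h00 h01 k00 k01 + w00 * w10 * D h00 h10 k00 k10 + w00 * w11 * D h00 h11 k00 k11
     + w01 * w10 * D h01 h10 k01 k10 + w01 * w11 * D h01 h11 k01 k11 + w10 * w11 * D h10 h11 k10 k11
     \<le> w00 * w01 * 4 + w00 * w10 * 4 + w00 * w11 * 4 + w01 * w10 * 4 + w01 * w11 * 4 + w10 * w11 * 4"
    using w h k by (intro add_mono mult_left_mono Dle) auto
  also have "\<dots> = 8 * (\<beta> * (1 - \<beta>)) * (1 - \<beta> * (1 - \<beta>))"
    unfolding w00_def w01_def w10_def w11_def by (simp add: algebra_simps)
  also have "\<dots> \<le> 8 * (\<beta> * (1 - \<beta>))"
  proof -
    have "0 \<le> \<beta> * (1 - \<beta>)" using b by simp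
    moreover have "\<beta> * (1 - \<beta>) \<le> 1" using b by (simp add: mult_le_one)
    ultimately show ?thesis by (simp add: mult_left_le)
  qed
  finally have "w00 * (h00 * k00) + w01 * (h01 * k01) + w10 * (h10 * k10) + w11 * (h11 * k11) - Q * Q'
     \<le> 8 * (\<beta> * (1 - \<beta>))" using ident by simp
  then show ?thesis using s3 c by linarith
qed

definition sx :: real where "sx = 1 / ln 4"

lemma ln4_gt1: "ln (4::real) > 1"
proof -
  have "exp 1 < (4::real)" using exp_le by simp
  then have "ln (exp 1) < ln (4::real)" by (subst ln_less_cancel_iff) auto
  then show ?thesis by simp
qed

lemma sx_pos: "0 < sx" and sx_lt1: "sx < 1"
  using ln4_gt1 by (auto simp: sx_def)

lemma sx_ln4: "sx * ln 4 = 1"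
  using ln4_gt1 by (simp add: sx_def)

definition tx :: real where "tx = 1 - sx"

lemma tx_pos: "0 < tx" using sx_lt1 by (simp add: tx_def)

lemma neg_xlnx:
  assumes "0 < x" "x \<le> 1"
  shows "- x * ln x \<le> x powr sx / tx"
proof -
  have "ln (x powr (- tx)) \<le> x powr (- tx) - 1" using assms by (intro ln_le_minus_one) auto
  then have "- tx * ln x \<le> x powr (- tx)" using assms by simp
  then have "- ln x \<le> x powr (- tx) / tx" using tx_pos by (simp add: field_simps)
  then have "x * (- ln x) \<le> x * (x powr (- tx) / tx)" using assms by (intro mult_left_mono) auto
  also have "x * (x powr (- tx) / tx) = x powr sx / tx"
  proof -
    have "x powr (1 + - tx) = x powr 1 * x powr (- tx)" by (rule powr_add)
    moreover have "1 + - tx = sx" by (simp add: tx_def)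
    ultimately have "x powr sx = x * x powr (- tx)" using assms by simp
    then show ?thesis by simp
  qed
  finally show ?thesis by simp
qed

lemma neg_1mx:
  fixes x :: real
  assumes "0 < x" "x < 1"
  shows "- (1 - x) * ln (1 - x) \<le> x"
proof -
  have "ln (1 / (1 - x)) \<le> 1 / (1 - x) - 1" using assms by (intro ln_le_minus_one) auto
  then have "- ln (1 - x) \<le> x / (1 - x)" using assms by (simp add: ln_div field_simps)
  then have "(1 - x) * (- ln (1 - x)) \<le> (1 - x) * (x / (1 - x))" using assms by (intro mult_left_mono) auto
  then have h: "(1 - x) * (- ln (1 - x)) \<le> x" using assms by simp
  show ?thesis using h by (simp only: mult_minus_left mult_minus_right)
qed

definition KH :: real where "KH = 2 * (1 / tx + 1) / ln 2"

lemma KH_pos: "KH > 0"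
  using tx_pos ln_gt_zero[of "2::real"] unfolding KH_def by (intro divide_pos_pos mult_pos_pos add_pos_pos) auto

lemma KH_ln2: "KH * ln 2 = 2 * (1 / tx + 1)"
  using ln_gt_zero[of "2::real"] unfolding KH_def by simp

lemma H_half:
  assumes "0 < x" "x \<le> 1/2"
  shows "bin_entropy x \<le> KH * (x * (1 - x)) powr sx"
proof -
  have x1: "x < 1" using assms by simp
  have H: "bin_entropy x = (- x * ln x + - (1 - x) * ln (1 - x)) / ln 2"
    using assms x1 by (simp add: bin_entropy_def log_def field_simps)
  have xs: "x \<le> x powr sx"
  proof -
    have "x powr 1 \<le> x powr sx" using assms sx_lt1 by (intro powr_mono') auto
    then show ?thesis using assms by simp
  qed
  have "- x * ln x + - (1 - x) * ln (1 - x) \<le> x powr sx / tx + x powr sx"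
    using neg_xlnx[of x] neg_1mx[OF assms(1) x1] xs assms by linarith
  also have "\<dots> = x powr sx * (1 / tx + 1)" by (simp add: field_simps)
  also have "x powr sx \<le> (2 * (x * (1 - x))) powr sx"
    using assms sx_pos by (intro powr_mono2) (auto simp: field_simps)
  also have "(2 * (x * (1 - x))) powr sx = 2 powr sx * (x * (1 - x)) powr sx"
    using assms by (simp add: powr_mult)
  also have "2 powr sx \<le> 2 powr (1::real)" using sx_lt1 by (intro powr_mono) auto
  then have "2 powr sx * (x * (1 - x)) powr sx \<le> 2 * (x * (1 - x)) powr sx"
    by (intro mult_right_mono) auto
  finally have "- x * ln x + - (1 - x) * ln (1 - x) \<le> 2 * (x * (1 - x)) powr sx * (1 / tx + 1)"
    using tx_pos by (simp add: mult_right_mono)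
  also have "2 * (x * (1 - x)) powr sx * (1 / tx + 1) = (KH * ln 2) * (x * (1 - x)) powr sx"
    unfolding KH_ln2 by (simp add: mult_ac)
  finally have "- x * ln x + - (1 - x) * ln (1 - x) \<le> (KH * (x * (1 - x)) powr sx) * ln 2"
    by (simp add: mult_ac)
  then show ?thesis unfolding H using ln_gt_zero[of "2::real"] by (simp add: pos_divide_le_eq)
qed

lemma H_bound:
  assumes "0 \<le> x" "x \<le> 1"
  shows "bin_entropy x \<le> KH * (x * (1 - x)) powr sx"
proof (cases "x = 0 \<or> x = 1")
  case True then show ?thesis by (auto simp: bin_entropy_def)
next
  case False
  then have x: "0 < x" "x < 1" using assms by auto
  show ?thesis
  proof (cases "x \<le> 1/2")
    case True then show ?thesis using H_half x by auto
  next
    case False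
    have "bin_entropy x = bin_entropy (1 - x)" using x by (simp add: bin_entropy_def algebra_simps)
    also have "\<dots> \<le> KH * ((1 - x) * (1 - (1 - x))) powr sx" using H_half[of "1 - x"] x False by auto
    finally show ?thesis by (simp add: mult.commute)
  qed
qed

lemma H_nonneg:
  assumes "0 \<le> x" "x \<le> 1"
  shows "bin_entropy x \<ge> 0"
proof (cases "x = 0 \<or> x = 1")
  case True then show ?thesis by (auto simp: bin_entropy_def)
next
  case False
  then have x: "0 < x" "x < 1" using assms by auto
  have "log 2 x \<le> 0" "log 2 (1 - x) \<le> 0" using x by auto
  then have t: "x * log 2 x \<le> 0" "(1 - x) * log 2 (1 - x) \<le> 0" using x
    by (auto simp: mult_nonneg_nonpos)
  have "bin_entropy x = - (x * log 2 x) - ((1 - x) * log 2 (1 - x))"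
    using x by (simp add: bin_entropy_def)
  then show ?thesis using t by linarith
qed

lemma Delta_bound:
  fixes \<alpha> \<beta> \<epsilon> C :: real
  assumes a: "0 \<le> \<alpha>" "\<alpha> \<le> 1" and b: "0 \<le> \<beta>" "\<beta> \<le> 1" and e: "\<epsilon> > 0" and C: "C > 0"
    and pa: "\<alpha> * (1 - \<alpha>) \<le> C * \<epsilon>" and pb: "\<beta> * (1 - \<beta>) \<le> C * \<epsilon>"
  shows "\<bar>2 * bin_entropy \<beta> - bin_entropy \<alpha>\<bar> powr (ln 4) \<le> (3 * KH) powr (ln 4) * C * \<epsilon>"
proof -
  have Ha: "0 \<le> bin_entropy \<alpha>" "bin_entropy \<alpha> \<le> KH * (C * \<epsilon>) powr sx"
  proof -
    show "0 \<le> bin_entropy \<alpha>" using H_nonneg a by auto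
    have "(\<alpha> * (1 - \<alpha>)) powr sx \<le> (C * \<epsilon>) powr sx" using pa a sx_pos by (intro powr_mono2) auto
    then show "bin_entropy \<alpha> \<le> KH * (C * \<epsilon>) powr sx"
      using H_bound[OF a] KH_pos by (meson mult_left_mono less_imp_le order_trans)
  qed
  have Hb: "0 \<le> bin_entropy \<beta>" "bin_entropy \<beta> \<le> KH * (C * \<epsilon>) powr sx"
  proof -
    show "0 \<le> bin_entropy \<beta>" using H_nonneg b by auto
    have "(\<beta> * (1 - \<beta>)) powr sx \<le> (C * \<epsilon>) powr sx" using pb b sx_pos by (intro powr_mono2) auto
    then show "bin_entropy \<beta> \<le> KH * (C * \<epsilon>) powr sx"
      using H_bound[OF b] KH_pos by (meson mult_left_mono less_imp_le order_trans)
  qed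
  have D: "\<bar>2 * bin_entropy \<beta> - bin_entropy \<alpha>\<bar> \<le> 3 * KH * (C * \<epsilon>) powr sx"
    using Ha Hb by linarith
  have "\<bar>2 * bin_entropy \<beta> - bin_entropy \<alpha>\<bar> powr (ln 4) \<le> (3 * KH * (C * \<epsilon>) powr sx) powr (ln 4)"
    using D ln4_gt1 by (intro powr_mono2) auto
  also have "\<dots> = (3 * KH) powr (ln 4) * ((C * \<epsilon>) powr sx) powr (ln 4)"
    using KH_pos by (simp add: powr_mult)
  also have "((C * \<epsilon>) powr sx) powr (ln 4) = C * \<epsilon>"
    using C e by (simp add: powr_powr sx_ln4)
  finally show ?thesis by (simp add: mult.assoc)
qed

lemma zmat_entry:
  "u < 2^m \<Longrightarrow> v < 2^m \<Longrightarrow> zmat m q $$ (u,v) = (if u = v then (if bit u q then -1 else 1) else 0)"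
  by (simp add: zmat_def diagm_def)

lemma bit_top: "k < m \<Longrightarrow> bit (2^m - 1 :: nat) k" using bit_ones by simp

lemma not_agree_0_top:
  assumes "k < m" "k \<notin> S" shows "\<not> agree S 0 (2^m - 1)"
  using assms bit_top[OF assms(1)] unfolding agree_def by auto

lemma ev_cat_supp:
  assumes m: "m \<ge> 1" and g: "\<gamma> \<in> {0..1}" and M: "supp m S M" and k: "k < m" "k \<notin> S"
  shows "ev (cat_vec \<gamma> m) M = of_real \<gamma> * M $$ (0,0) + of_real (1 - \<gamma>) * M $$ (2^m - 1, 2^m - 1)"
proof (rule ev_cat[OF m g suppD(1)[OF M]])
  have na: "\<not> agree S 0 (2^m - 1)" using not_agree_0_top[OF k] .
  show "M $$ (0, 2^m - 1) = 0" using suppD(2)[OF M] na by simp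
  have na': "\<not> agree S (2^m - 1) 0" using na agree_sym by metis
  show "M $$ (2^m - 1, 0) = 0" using suppD(2)[OF M, of "2^m - 1" 0] na' by simp
qed

lemma diag_conj_real:
  assumes U: "U \<in> carrier_mat (2^m) (2^m)" and UU: "adj U * U = 1\<^sub>m (2^m)" and x: "x < 2^m"
  shows "\<exists>r. (adj U * zmat m q * U) $$ (x,x) = of_real r \<and> \<bar>r\<bar> \<le> 1"
proof -
  let ?N = "2^m :: nat"
  define z where "z a = (if bit (a::nat) q then -1 else 1 :: real)" for a
  have cZ: "zmat m q \<in> carrier_mat ?N ?N" by (rule zmat_carrier)
  have cAZ: "adj U * zmat m q \<in> carrier_mat ?N ?N" using adj_carrier[OF U] cZ by simp
  have e1: "(adj U * zmat m q) $$ (x,b) = cnj (U $$ (b,x)) * of_real (z b)" if b: "b < ?N" for b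
  proof -
    have "(adj U * zmat m q) $$ (x,b) = (\<Sum>a<?N. adj U $$ (x,a) * zmat m q $$ (a,b))"
      by (rule mult_entry[OF adj_carrier[OF U] cZ x b])
    also have "\<dots> = adj U $$ (x,b) * zmat m q $$ (b,b)"
      by (rule sum_single) (use b in \<open>auto simp: zmat_entry\<close>)
    finally show ?thesis using U x b by (simp add: zmat_entry z_def)
  qed
  define r where "r = (\<Sum>b<?N. z b * (cmod (U $$ (b,x)))\<^sup>2)"
  have "(adj U * zmat m q * U) $$ (x,x) = (\<Sum>b<?N. (adj U * zmat m q) $$ (x,b) * U $$ (b,x))"
    by (rule mult_entry[OF cAZ U x x])
  also have "\<dots> = (\<Sum>b<?N. of_real (z b * (cmod (U $$ (b,x)))\<^sup>2))"
  proof (rule sum.cong[OF refl])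
    fix b assume "b \<in> {..<?N}"
    then have "(adj U * zmat m q) $$ (x,b) * U $$ (b,x) = of_real (z b) * (cnj (U $$ (b,x)) * U $$ (b,x))"
      using e1 by (simp add: mult_ac)
    then show "(adj U * zmat m q) $$ (x,b) * U $$ (b,x) = of_real (z b * (cmod (U $$ (b,x)))\<^sup>2)"
      by (simp only: cnj_mult_self of_real_mult)
  qed
  also have "\<dots> = of_real r" by (simp add: r_def)
  finally have eq: "(adj U * zmat m q * U) $$ (x,x) = of_real r" .
  have "(adj U * U) $$ (x,x) = (\<Sum>b<?N. adj U $$ (x,b) * U $$ (b,x))"
    by (rule mult_entry[OF adj_carrier[OF U] U x x])
  also have "\<dots> = (\<Sum>b<?N. of_real ((cmod (U $$ (b,x)))\<^sup>2))"
    using U x by (intro sum.cong refl) (simp add: cnj_mult_self)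
  finally have "of_real (\<Sum>b<?N. (cmod (U $$ (b,x)))\<^sup>2) = (1::complex)" using UU x by simp
  then have s1: "(\<Sum>b<?N. (cmod (U $$ (b,x)))\<^sup>2) = 1" by (metis of_real_eq_1_iff)
  have "\<bar>r\<bar> \<le> (\<Sum>b<?N. \<bar>z b * (cmod (U $$ (b,x)))\<^sup>2\<bar>)" unfolding r_def by (rule sum_abs)
  also have "\<dots> = (\<Sum>b<?N. (cmod (U $$ (b,x)))\<^sup>2)" by (intro sum.cong refl) (simp add: z_def abs_mult)
  finally have "\<bar>r\<bar> \<le> 1" using s1 by simp
  then show ?thesis using eq by blast
qed

lemma conj_prod:
  assumes W: "W \<in> carrier_mat N N" and WW: "W * adj W = 1\<^sub>m N"
    and A: "A \<in> carrier_mat N N" and B: "B \<in> carrier_mat N N"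
  shows "adj W * (A * B) * W = (adj W * A * W) * (adj W * B * W)"
proof -
  have aW: "adj W \<in> carrier_mat N N" using adj_carrier[OF W] .
  have "(adj W * A * W) * (adj W * B * W) = adj W * A * (W * adj W) * B * W"
    using W aW A B by (simp add: assoc_mult_mat[of _ N N _ N _ N])
  also have "\<dots> = adj W * (A * B) * W" using WW W aW A B by (simp add: assoc_mult_mat[of _ N N _ N _ N])
  finally show ?thesis by simp
qed

lemma ev_fwd_cancel:
  assumes W: "W \<in> carrier_mat N N" and WW: "adj W * W = 1\<^sub>m N" and v: "v \<in> carrier_vec N"
    and Z: "Z \<in> carrier_mat N N"
  shows "ev (W *\<^sub>v v) (W * Z * adj W) = ev v Z"
proof -
  have aW: "adj W \<in> carrier_mat N N" using adj_carrier[OF W] .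
  have "ev (W *\<^sub>v v) (W * Z * adj W) = ev v (adj W * (W * Z * adj W) * W)"
    by (rule ev_conj[OF W v]) (use W Z aW in simp)
  also have "adj W * (W * Z * adj W) * W = (adj W * W) * Z * (adj W * W)"
    using W aW Z by (simp add: assoc_mult_mat[of _ N N _ N _ N])
  also have "\<dots> = Z" using WW Z by simp
  finally show ?thesis .
qed

lemma pick:
  assumes "finite X" "card X < n"
  shows "\<exists>k. lo \<le> k \<and> k < lo + n \<and> k \<notin> X"
proof (rule ccontr)
  assume "\<not> ?thesis"
  then have "{lo..<lo+n} \<subseteq> X" by auto
  then have "card {lo..<lo+n} \<le> card X" by (rule card_mono[OF assms(1)])
  with assms(2) show False by simp
qed

lemma ev_t_diag:
  assumes n: "n \<ge> 1" and b: "\<beta> \<in> {0..1}"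
  shows "ev (tvec \<beta> n) (diagm (2*n) f) =
      of_real (\<beta> * \<beta>) * f (ee n 0 0) + of_real (\<beta> * (1 - \<beta>)) * f (ee n 0 (p1 n))
    + of_real ((1 - \<beta>) * \<beta>) * f (ee n (p1 n) 0) + of_real ((1 - \<beta>) * (1 - \<beta>)) * f (ee n (p1 n) (p1 n))"
proof -
  have pl: "p1 n < 2^n" "(0::nat) < 2^n" by auto
  have lt: "ee n 0 0 < 2^(2*n)" "ee n 0 (p1 n) < 2^(2*n)" "ee n (p1 n) 0 < 2^(2*n)" "ee n (p1 n) (p1 n) < 2^(2*n)"
    using ee_lt[OF pl(2) pl(2)] ee_lt[OF pl(2) pl(1)] ee_lt[OF pl(1) pl(2)] ee_lt[OF pl(1) pl(1)] by auto
  have sub: "EE n \<subseteq> {..<2^(2*n)}" using lt by (auto simp: EE_def)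
  have e: "ev (tvec \<beta> n) (diagm (2*n) f) =
      of_real (\<beta> * \<beta>) * diagm (2*n) f $$ (ee n 0 0, ee n 0 0)
    + of_real (\<beta> * (1 - \<beta>)) * diagm (2*n) f $$ (ee n 0 (p1 n), ee n 0 (p1 n))
    + of_real ((1 - \<beta>) * \<beta>) * diagm (2*n) f $$ (ee n (p1 n) 0, ee n (p1 n) 0)
    + of_real ((1 - \<beta>) * (1 - \<beta>)) * diagm (2*n) f $$ (ee n (p1 n) (p1 n), ee n (p1 n) (p1 n))"
  proof (rule ev_t[OF n b])
    show "diagm (2 * n) f \<in> carrier_mat (2 ^ (2 * n)) (2 ^ (2 * n))" by (simp add: diagm_def)
    fix u v assume uv: "u \<in> EE n" "v \<in> EE n" "u \<noteq> v"
    then have "u < 2^(2*n)" "v < 2^(2*n)" using sub by auto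
    then show "diagm (2 * n) f $$ (u, v) = 0" using uv(3) by (simp add: diagm_def)
  qed
  have d: "diagm (2*n) f $$ (u,u) = f u" if "u < 2^(2*n)" for u using that by (simp add: diagm_def)
  show ?thesis unfolding e d[OF lt(1)] d[OF lt(2)] d[OF lt(3)] d[OF lt(4)] ..
qed

lemma hyp_real: "cmod (complex_of_real A - complex_of_real B) \<le> \<eta> \<Longrightarrow> \<bar>A - B\<bar> \<le> \<eta>"
  by (metis norm_of_real of_real_diff)

lemma bit_e01': "bit (ee n 0 (2^n - Suc 0)) k \<longleftrightarrow> k < n" using bit_e01[of n k] by simp
lemma bit_e10': "bit (ee n (2^n - Suc 0) 0) k \<longleftrightarrow> n \<le> k \<and> k < 2 * n" using bit_e10[of n k] by simp
lemma bit_e11': "bit (ee n (2^n - Suc 0) (2^n - Suc 0)) k \<longleftrightarrow> k < 2 * n" using bit_e11[of n k] by simp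

lemma zz_diag: "zmat m q * zmat m q' = diagm m (\<lambda>i. (if bit i q then -1 else 1) * (if bit i q' then -1 else 1))"
  unfolding zmat_def diagm_mult ..

lemma ev_t_z:
  assumes n: "n \<ge> 1" and b: "\<beta> \<in> {0..1}" and q: "q < 2*n"
  shows "ev (tvec \<beta> n) (zmat (2*n) q) = of_real (2*\<beta> - 1)"
proof (cases "q < n")
  case True
  have q2: "q < n * 2" using q by simp
  then show ?thesis using True unfolding zmat_def ev_t_diag[OF n b]
    by (simp add: bit_e00 bit_e01' bit_e10' bit_e11' q algebra_simps flip: of_real_mult of_real_add of_real_diff)
next
  case False
  have q2: "q < n * 2" using q by simp
  then show ?thesis using False unfolding zmat_def ev_t_diag[OF n b]
    by (simp add: bit_e00 bit_e01' bit_e10' bit_e11' q algebra_simps flip: of_real_mult of_real_add of_real_diff)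
qed

lemma ev_t_zz_same:
  assumes n: "n \<ge> 1" and b: "\<beta> \<in> {0..1}" and q: "q < 2*n" "q' < 2*n" and s: "q < n \<longleftrightarrow> q' < n"
  shows "ev (tvec \<beta> n) (zmat (2*n) q * zmat (2*n) q') = 1"
proof (cases "q < n")
  case True
  have q2: "q < n * 2" "q' < n * 2" using q by simp_all
  then show ?thesis using s True unfolding zz_diag ev_t_diag[OF n b]
    by (simp add: bit_e00 bit_e01' bit_e10' bit_e11' q algebra_simps flip: of_real_mult of_real_add of_real_diff)
next
  case False
  have q2: "q < n * 2" "q' < n * 2" using q by simp_all
  then show ?thesis using s False unfolding zz_diag ev_t_diag[OF n b]
    by (simp add: bit_e00 bit_e01' bit_e10' bit_e11' q algebra_simps flip: of_real_mult of_real_add of_real_diff)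
qed

lemma ev_t_zz_cross:
  assumes n: "n \<ge> 1" and b: "\<beta> \<in> {0..1}" and q: "n \<le> q" "q < 2*n" "q' < n"
  shows "ev (tvec \<beta> n) (zmat (2*n) q * zmat (2*n) q') = of_real ((2*\<beta> - 1) * (2*\<beta> - 1))"
  using q(1,3) \<open>q < 2*n\<close> unfolding zz_diag ev_t_diag[OF n b]
  by (simp add: bit_e00 bit_e01' bit_e10' bit_e11' algebra_simps flip: of_real_mult of_real_add of_real_diff)

lemma pow4: "(4::nat)^d = 2^d * 2^d"
  by (metis power_mult_distrib numeral_times_numeral semiring_norm(12) semiring_norm(13))

lemma ev_cat_z:
  assumes m: "m \<ge> 1" and g: "\<gamma> \<in> {0..1}" and q: "q < m"
  shows "ev (cat_vec \<gamma> m) (zmat m q) = of_real (2 * \<gamma> - 1)"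
proof -
  have ne: "(0::nat) \<noteq> 2^m - 1" using ones_pos[OF m] by simp
  have "ev (cat_vec \<gamma> m) (zmat m q) = of_real \<gamma> * zmat m q $$ (0,0) + of_real (1 - \<gamma>) * zmat m q $$ (2^m - 1, 2^m - 1)"
    by (rule ev_cat[OF m g zmat_carrier]) (use ne in \<open>auto simp: zmat_entry\<close>)
  also have "\<dots> = of_real (2 * \<gamma> - 1)" using q bit_top[OF q] by (simp add: zmat_entry algebra_simps)
  finally show ?thesis .
qed

lemma ev_cat_zz:
  assumes m: "m \<ge> 1" and g: "\<gamma> \<in> {0..1}" and q: "q < m" "q' < m"
  shows "ev (cat_vec \<gamma> m) (zmat m q * zmat m q') = 1"
proof -
  have ne: "(0::nat) \<noteq> 2^m - 1" using ones_pos[OF m] by simp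
  have c: "zmat m q * zmat m q' \<in> carrier_mat (2^m) (2^m)" using zmat_carrier by (simp add: zz_diag diagm_def)
  have "ev (cat_vec \<gamma> m) (zmat m q * zmat m q') = of_real \<gamma> * (zmat m q * zmat m q') $$ (0,0)
       + of_real (1 - \<gamma>) * (zmat m q * zmat m q') $$ (2^m - 1, 2^m - 1)"
    by (rule ev_cat[OF m g c]) (use ne in \<open>auto simp: zz_diag diagm_def\<close>)
  also have "\<dots> = 1" using q bit_top[OF q(1)] bit_top[OF q(2)] by (simp add: zz_diag diagm_def algebra_simps)
  finally show ?thesis .
qed

context
  fixes n :: nat and C :: circuit and \<alpha> \<beta> \<eta> :: real
  assumes n1: "n \<ge> 1" and vc: "valid_circuit (2*n) C" and sh: "2 * 4^(length C) < n"
    and al: "\<alpha> \<in> {0..1}" and be: "\<beta> \<in> {0..1}" and et: "\<eta> \<ge> 0"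
    and hyp: "\<And>O'. is_unitary (2^(2*n)) O' \<Longrightarrow>
       cmod (ev (circuit_mat (2*n) C *\<^sub>v cat_vec \<alpha> (2*n)) O' - ev (tvec \<beta> n) O') \<le> \<eta>"
begin

lemma m1: "2 * n \<ge> 1" using n1 by simp

lemma uW: "is_unitary (2^(2*n)) (circuit_mat (2*n) C)" by (rule unitary_circuit[OF vc])
lemma cW: "circuit_mat (2*n) C \<in> carrier_mat (2^(2*n)) (2^(2*n))" by (rule circuit_carrier)
lemma aWW: "adj (circuit_mat (2*n) C) * circuit_mat (2*n) C = 1\<^sub>m (2^(2*n))"
  using uW unfolding is_unitary_def by simp
lemma WaW: "circuit_mat (2*n) C * adj (circuit_mat (2*n) C) = 1\<^sub>m (2^(2*n))"
  by (rule unitary_right[OF uW])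
lemma caW: "adj (circuit_mat (2*n) C) \<in> carrier_mat (2^(2*n)) (2^(2*n))" by (rule adj_carrier[OF cW])

lemma sh2: "2 ^ length C < n" "4 ^ length C < n" "2 * 2 ^ length C < n"
proof -
  have "(2::nat) ^ length C \<le> 4 ^ length C" by (simp add: power_mono)
  then show "2 ^ length C < n" "4 ^ length C < n" "2 * 2 ^ length C < n" using sh by linarith+
qed

lemma cb1: "finite (cone_b C {q}) \<and> card (cone_b C {q}) \<le> 2 ^ length C"
  using cone_b_card[OF vc, of "{q}"] by simp
lemma cf1: "finite (cone_f C {q}) \<and> card (cone_f C {q}) \<le> 2 ^ length C"
  using cone_f_card[OF vc, of "{q}"] by simp
lemma cbf: "finite (cone_f C (cone_b C {q})) \<and> card (cone_f C (cone_b C {q})) \<le> 4 ^ length C"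
proof -
  have "finite (cone_f C (cone_b C {q})) \<and> card (cone_f C (cone_b C {q})) \<le> 2 ^ length C * card (cone_b C {q})"
    using cone_f_card[OF vc] cb1 by blast
  moreover have "2 ^ length C * card (cone_b C {q}) \<le> 2 ^ length C * 2 ^ length C" using cb1 by simp
  ultimately show ?thesis unfolding pow4 using order_trans by blast
qed
lemma cfb: "finite (cone_b C (cone_f C {q})) \<and> card (cone_b C (cone_f C {q})) \<le> 4 ^ length C"
proof -
  have "finite (cone_b C (cone_f C {q})) \<and> card (cone_b C (cone_f C {q})) \<le> 2 ^ length C * card (cone_f C {q})"
    using cone_b_card[OF vc] cf1 by blast
  moreover have "2 ^ length C * card (cone_f C {q}) \<le> 2 ^ length C * 2 ^ length C" using cf1 by simp
  ultimately show ?thesis unfolding pow4 using order_trans by blast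
qed

lemma disj_b: "q \<notin> cone_f C (cone_b C {p}) \<Longrightarrow> cone_b C {q} \<inter> cone_b C {p} = {}"
  using cone_dual[of C "{q}" "cone_b C {p}"] by auto
lemma disj_f: "q \<notin> cone_b C (cone_f C {p}) \<Longrightarrow> cone_f C {p} \<inter> cone_f C {q} = {}"
  using cone_dual[of C "cone_f C {p}" "{q}"] by auto

lemma outside2:
  assumes "finite A" "finite B" "card A \<le> 2 ^ length C" "card B \<le> 2 ^ length C"
  shows "\<exists>k. k < 2 * n \<and> k \<notin> A \<union> B"
proof -
  have "card (A \<union> B) \<le> card A + card B" by (rule card_Un_le)
  also have "\<dots> < 2 * n" using assms sh2 by linarith
  finally show ?thesis using pick[of "A \<union> B" "2*n" 0] assms by auto
qed

lemma outside_blocks: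
  assumes "finite A" "finite B" "card A \<le> 2 ^ length C" "card B \<le> 2 ^ length C"
  shows "\<exists>k1 k2. n \<le> k1 \<and> k1 < 2 * n \<and> k1 \<notin> A \<union> B \<and> k2 < n \<and> k2 \<notin> A \<union> B"
proof -
  have "card (A \<union> B) \<le> card A + card B" by (rule card_Un_le)
  also have "\<dots> < n" using assms sh2 by linarith
  finally have c: "card (A \<union> B) < n" .
  obtain k1 where "n \<le> k1" "k1 < n + n" "k1 \<notin> A \<union> B" using pick[OF _ c, of n] assms by auto
  moreover obtain k2 where "k2 < n" "k2 \<notin> A \<union> B" using pick[OF _ c, of 0] assms by auto
  ultimately show ?thesis by (intro exI[of _ k1] exI[of _ k2]) auto
qed


definition fq :: "nat \<Rightarrow> real" where
  "fq q = Re ((adj (circuit_mat (2*n) C) * zmat (2*n) q * circuit_mat (2*n) C) $$ (0,0))"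
definition gq :: "nat \<Rightarrow> real" where
  "gq q = Re ((adj (circuit_mat (2*n) C) * zmat (2*n) q * circuit_mat (2*n) C) $$ (2^(2*n) - 1, 2^(2*n) - 1))"

lemma Msupp: "supp (2*n) (cone_b C {q}) (adj (circuit_mat (2*n) C) * zmat (2*n) q * circuit_mat (2*n) C)"
  by (rule circuit_back[OF vc supp_zmat])

lemma Mdiag:
  assumes "x < 2^(2*n)"
  shows "(adj (circuit_mat (2*n) C) * zmat (2*n) q * circuit_mat (2*n) C) $$ (x,x)
     = of_real (Re ((adj (circuit_mat (2*n) C) * zmat (2*n) q * circuit_mat (2*n) C) $$ (x,x)))
     \<and> \<bar>Re ((adj (circuit_mat (2*n) C) * zmat (2*n) q * circuit_mat (2*n) C) $$ (x,x))\<bar> \<le> 1"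
  using diag_conj_real[OF cW aWW assms, of q] by auto

lemma top_lt: "2^(2*n) - 1 < (2::nat)^(2*n)" "(0::nat) < 2^(2*n)" by auto

lemma fg_bd: "\<bar>fq q\<bar> \<le> 1" "\<bar>gq q\<bar> \<le> 1"
  using Mdiag[OF top_lt(2), of q] Mdiag[OF top_lt(1), of q] by (auto simp: fq_def gq_def)

lemma fg_eq:
  "(adj (circuit_mat (2*n) C) * zmat (2*n) q * circuit_mat (2*n) C) $$ (0,0) = of_real (fq q)"
  "(adj (circuit_mat (2*n) C) * zmat (2*n) q * circuit_mat (2*n) C) $$ (2^(2*n) - 1, 2^(2*n) - 1) = of_real (gq q)"
  using Mdiag[OF top_lt(2), of q] Mdiag[OF top_lt(1), of q] by (auto simp: fq_def gq_def)

lemma fg_eq2: "(adj (circuit_mat (2*n) C) * zmat (2*n) q * circuit_mat (2*n) C) $$ (2^(2*n) - Suc 0, 2^(2*n) - Suc 0) = of_real (gq q)"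
  using fg_eq(2)[of q] by simp

lemma ev_xz:
  "ev (circuit_mat (2*n) C *\<^sub>v cat_vec \<alpha> (2*n)) (zmat (2*n) q) = of_real (\<alpha> * fq q + (1 - \<alpha>) * gq q)"
proof -
  have "ev (circuit_mat (2*n) C *\<^sub>v cat_vec \<alpha> (2*n)) (zmat (2*n) q)
      = ev (cat_vec \<alpha> (2*n)) (adj (circuit_mat (2*n) C) * zmat (2*n) q * circuit_mat (2*n) C)"
    by (rule ev_conj[OF cW cat_carrier zmat_carrier])
  also obtain k where "k < 2*n" "k \<notin> cone_b C {q} \<union> cone_b C {q}" using outside2 cb1 by metis
  then have "ev (cat_vec \<alpha> (2*n)) (adj (circuit_mat (2*n) C) * zmat (2*n) q * circuit_mat (2*n) C)
     = of_real \<alpha> * of_real (fq q) + of_real (1 - \<alpha>) * of_real (gq q)"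
    using ev_cat_supp[OF m1 al Msupp, of k] by (simp add: fg_eq fg_eq2)
  finally show ?thesis by simp
qed

lemma ev_xzz:
  assumes d: "cone_b C {q} \<inter> cone_b C {q'} = {}"
  shows "ev (circuit_mat (2*n) C *\<^sub>v cat_vec \<alpha> (2*n)) (zmat (2*n) q * zmat (2*n) q')
     = of_real (\<alpha> * (fq q * fq q') + (1 - \<alpha>) * (gq q * gq q'))"
proof -
  let ?M = "\<lambda>q. adj (circuit_mat (2*n) C) * zmat (2*n) q * circuit_mat (2*n) C"
  have "ev (circuit_mat (2*n) C *\<^sub>v cat_vec \<alpha> (2*n)) (zmat (2*n) q * zmat (2*n) q')
      = ev (cat_vec \<alpha> (2*n)) (adj (circuit_mat (2*n) C) * (zmat (2*n) q * zmat (2*n) q') * circuit_mat (2*n) C)"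
    by (rule ev_conj[OF cW cat_carrier mult_carrier_mat[OF zmat_carrier zmat_carrier]])
  also have "adj (circuit_mat (2*n) C) * (zmat (2*n) q * zmat (2*n) q') * circuit_mat (2*n) C = ?M q * ?M q'"
    by (rule conj_prod[OF cW WaW zmat_carrier zmat_carrier])
  also obtain k where k: "k < 2*n" "k \<notin> cone_b C {q} \<union> cone_b C {q'}" using outside2 cb1 by metis
  then have "ev (cat_vec \<alpha> (2*n)) (?M q * ?M q')
     = of_real \<alpha> * (?M q * ?M q') $$ (0,0) + of_real (1 - \<alpha>) * (?M q * ?M q') $$ (2^(2*n) - 1, 2^(2*n) - 1)"
    using ev_cat_supp[OF m1 al supp_mult[OF Msupp Msupp], of k] by simp
  also have "(?M q * ?M q') $$ (0,0) = of_real (fq q * fq q')"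
    using diag_prod[OF Msupp Msupp d top_lt(2)] by (simp add: fg_eq)
  also have "(?M q * ?M q') $$ (2^(2*n) - 1, 2^(2*n) - 1) = of_real (gq q * gq q')"
    using diag_prod[OF Msupp Msupp d top_lt(1)] by (simp add: fg_eq fg_eq2)
  finally show ?thesis by simp
qed

lemma bw_single:
  assumes "q < 2*n"
  shows "\<bar>\<alpha> * fq q + (1 - \<alpha>) * gq q - (2*\<beta> - 1)\<bar> \<le> \<eta>"
  using hyp[OF unitary_zmat, of q] ev_xz[of q] ev_t_z[OF n1 be assms] by (intro hyp_real) simp

lemma bw_pair_same:
  assumes "q < 2*n" "q' < 2*n" "q < n \<longleftrightarrow> q' < n" "cone_b C {q} \<inter> cone_b C {q'} = {}"
  shows "\<bar>\<alpha> * (fq q * fq q') + (1 - \<alpha>) * (gq q * gq q') - 1\<bar> \<le> \<eta>"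
  using hyp[OF unitary_mult[OF unitary_zmat unitary_zmat], of q q'] ev_xzz[OF assms(4)]
    ev_t_zz_same[OF n1 be assms(1-3)] by (intro hyp_real) simp

lemma bw_pair_cross:
  assumes "n \<le> q" "q < 2*n" "q' < n" "cone_b C {q} \<inter> cone_b C {q'} = {}"
  shows "\<bar>\<alpha> * (fq q * fq q') + (1 - \<alpha>) * (gq q * gq q') - (2*\<beta> - 1) * (2*\<beta> - 1)\<bar> \<le> \<eta>"
  using hyp[OF unitary_mult[OF unitary_zmat unitary_zmat], of q q'] ev_xzz[OF assms(4)]
    ev_t_zz_cross[OF n1 be assms(1-3)] by (intro hyp_real) simp

lemma bw_bound: "1 - (2*\<beta> - 1) * (2*\<beta> - 1) \<le> 6 * \<eta>"
proof -
  let ?A = "cone_f C (cone_b C {n})"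
  have A: "finite ?A" "card ?A < n" using cbf[of n] sh2 by auto
  obtain a' where a': "n \<le> a'" "a' < n + n" "a' \<notin> ?A" using pick[OF A, of n] by auto
  obtain b where b: "b < n" "b \<notin> ?A" using pick[OF A, of 0] by auto
  let ?B = "cone_f C (cone_b C {b}) \<union> cone_f C (cone_b C {a'})"
  have B: "finite ?B" "card ?B < n"
  proof -
    show "finite ?B" using cbf by auto
    have "card ?B \<le> card (cone_f C (cone_b C {b})) + card (cone_f C (cone_b C {a'}))" by (rule card_Un_le)
    also have "\<dots> \<le> 4 ^ length C + 4 ^ length C" using cbf by (intro add_mono) auto
    finally show "card ?B < n" using sh by linarith
  qed
  obtain b' where b': "b' < n" "b' \<notin> ?B" using pick[OF B, of 0] by auto
  have d1: "cone_b C {n} \<inter> cone_b C {a'} = {}" using disj_b[OF a'(3)] by blast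
  have d2: "cone_b C {b} \<inter> cone_b C {b'} = {}" using disj_b[of b' b] b' by blast
  have d3: "cone_b C {n} \<inter> cone_b C {b} = {}" using disj_b[OF b(2)] by blast
  have d4: "cone_b C {a'} \<inter> cone_b C {b'} = {}" using disj_b[of b' a'] b' by blast
  have q: "n < 2*n" "a' < 2*n" "b < 2*n" "b' < 2*n" using n1 a' b b' by auto
  show ?thesis
  proof (rule RB)
    show "0 \<le> \<alpha>" "\<alpha> \<le> 1" "0 \<le> \<eta>" using al et by auto
    show "\<bar>2 * \<beta> - 1\<bar> \<le> 1" using be by auto
    show "\<bar>fq n\<bar> \<le> 1" "\<bar>gq n\<bar> \<le> 1" "\<bar>fq a'\<bar> \<le> 1" "\<bar>gq a'\<bar> \<le> 1"
         "\<bar>fq b\<bar> \<le> 1" "\<bar>gq b\<bar> \<le> 1" "\<bar>fq b'\<bar> \<le> 1" "\<bar>gq b'\<bar> \<le> 1" using fg_bd by auto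
    show "\<bar>\<alpha> * fq n + (1 - \<alpha>) * gq n - (2 * \<beta> - 1)\<bar> \<le> \<eta>"
         "\<bar>\<alpha> * fq a' + (1 - \<alpha>) * gq a' - (2 * \<beta> - 1)\<bar> \<le> \<eta>"
         "\<bar>\<alpha> * fq b + (1 - \<alpha>) * gq b - (2 * \<beta> - 1)\<bar> \<le> \<eta>"
         "\<bar>\<alpha> * fq b' + (1 - \<alpha>) * gq b' - (2 * \<beta> - 1)\<bar> \<le> \<eta>"
      using bw_single q by auto
    show "\<bar>\<alpha> * (fq n * fq a') + (1 - \<alpha>) * (gq n * gq a') - 1\<bar> \<le> \<eta>"
      by (rule bw_pair_same) (use q a' d1 in auto)
    show "\<bar>\<alpha> * (fq b * fq b') + (1 - \<alpha>) * (gq b * gq b') - 1\<bar> \<le> \<eta>"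
      by (rule bw_pair_same) (use q b b' d2 in auto)
    show "\<bar>\<alpha> * (fq n * fq b) + (1 - \<alpha>) * (gq n * gq b) - (2 * \<beta> - 1) * (2 * \<beta> - 1)\<bar> \<le> \<eta>"
      by (rule bw_pair_cross) (use q b d3 in auto)
    show "\<bar>\<alpha> * (fq a' * fq b') + (1 - \<alpha>) * (gq a' * gq b') - (2 * \<beta> - 1) * (2 * \<beta> - 1)\<bar> \<le> \<eta>"
      by (rule bw_pair_cross) (use q a' b' d4 in auto)
  qed
qed


definition hq :: "nat \<Rightarrow> nat \<Rightarrow> real" where
  "hq q u = Re ((circuit_mat (2*n) C * zmat (2*n) q * adj (circuit_mat (2*n) C)) $$ (u,u))"

lemma Nsupp: "supp (2*n) (cone_f C {q}) (circuit_mat (2*n) C * zmat (2*n) q * adj (circuit_mat (2*n) C))"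
  by (rule circuit_fwd[OF vc supp_zmat])

lemma Ndiag:
  assumes "u < 2^(2*n)"
  shows "(circuit_mat (2*n) C * zmat (2*n) q * adj (circuit_mat (2*n) C)) $$ (u,u) = of_real (hq q u)
     \<and> \<bar>hq q u\<bar> \<le> 1"
proof -
  have "adj (adj (circuit_mat (2*n) C)) * adj (circuit_mat (2*n) C) = 1\<^sub>m (2^(2*n))" using WaW by simp
  from diag_conj_real[OF caW this assms, of q] show ?thesis by (auto simp: hq_def)
qed

lemma ee_lts: "ee n 0 0 < 2^(2*n)" "ee n 0 (p1 n) < 2^(2*n)" "ee n (p1 n) 0 < 2^(2*n)" "ee n (p1 n) (p1 n) < 2^(2*n)"
proof -
  have pl: "p1 n < 2^n" "(0::nat) < 2^n" by auto
  show "ee n 0 0 < 2^(2*n)" "ee n 0 (p1 n) < 2^(2*n)" "ee n (p1 n) 0 < 2^(2*n)" "ee n (p1 n) (p1 n) < 2^(2*n)"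
    using ee_lt[OF pl(2) pl(2)] ee_lt[OF pl(2) pl(1)] ee_lt[OF pl(1) pl(2)] ee_lt[OF pl(1) pl(1)] by auto
qed

lemma unitary_N: "is_unitary (2^(2*n)) (circuit_mat (2*n) C * zmat (2*n) q * adj (circuit_mat (2*n) C))"
  by (rule unitary_mult[OF unitary_mult[OF uW unitary_zmat] unitary_adj[OF uW]])

lemma ev_xN: "q < 2*n \<Longrightarrow> ev (circuit_mat (2*n) C *\<^sub>v cat_vec \<alpha> (2*n))
    (circuit_mat (2*n) C * zmat (2*n) q * adj (circuit_mat (2*n) C)) = of_real (2*\<alpha> - 1)"
  using ev_fwd_cancel[OF cW aWW cat_carrier zmat_carrier] ev_cat_z[OF m1 al] by simp

lemma NN:
  "circuit_mat (2*n) C * (zmat (2*n) q * zmat (2*n) q') * adj (circuit_mat (2*n) C)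
   = (circuit_mat (2*n) C * zmat (2*n) q * adj (circuit_mat (2*n) C)) *
     (circuit_mat (2*n) C * zmat (2*n) q' * adj (circuit_mat (2*n) C))"
proof -
  have "adj (circuit_mat (2*n) C) * adj (adj (circuit_mat (2*n) C)) = 1\<^sub>m (2^(2*n))" using aWW by simp
  from conj_prod[OF caW this zmat_carrier zmat_carrier, of q q'] show ?thesis by simp
qed

lemma ev_xNN: "q < 2*n \<Longrightarrow> q' < 2*n \<Longrightarrow> ev (circuit_mat (2*n) C *\<^sub>v cat_vec \<alpha> (2*n))
    ((circuit_mat (2*n) C * zmat (2*n) q * adj (circuit_mat (2*n) C)) *
     (circuit_mat (2*n) C * zmat (2*n) q' * adj (circuit_mat (2*n) C))) = 1"
  using ev_fwd_cancel[OF cW aWW cat_carrier mult_carrier_mat[OF zmat_carrier zmat_carrier]]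
    ev_cat_zz[OF m1 al] by (simp add: NN)

lemma ev_tN:
  assumes k: "n \<le> k1" "k1 < 2*n" "k1 \<notin> cone_f C {q}" "k2 < n" "k2 \<notin> cone_f C {q}"
  shows "ev (tvec \<beta> n) (circuit_mat (2*n) C * zmat (2*n) q * adj (circuit_mat (2*n) C))
    = of_real (\<beta> * \<beta> * hq q (ee n 0 0) + \<beta> * (1 - \<beta>) * hq q (ee n 0 (p1 n))
       + (1 - \<beta>) * \<beta> * hq q (ee n (p1 n) 0) + (1 - \<beta>) * (1 - \<beta>) * hq q (ee n (p1 n) (p1 n)))"
proof -
  have "ev (tvec \<beta> n) (circuit_mat (2*n) C * zmat (2*n) q * adj (circuit_mat (2*n) C))
    = of_real (\<beta> * \<beta>) * of_real (hq q (ee n 0 0)) + of_real (\<beta> * (1 - \<beta>)) * of_real (hq q (ee n 0 (p1 n)))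
    + of_real ((1 - \<beta>) * \<beta>) * of_real (hq q (ee n (p1 n) 0)) + of_real ((1 - \<beta>) * (1 - \<beta>)) * of_real (hq q (ee n (p1 n) (p1 n)))"
    unfolding Ndiag[OF ee_lts(1), THEN conjunct1, symmetric] Ndiag[OF ee_lts(2), THEN conjunct1, symmetric]
      Ndiag[OF ee_lts(3), THEN conjunct1, symmetric] Ndiag[OF ee_lts(4), THEN conjunct1, symmetric]
  proof (rule ev_t[OF n1 be suppD(1)[OF Nsupp]])
    fix u v assume "u \<in> EE n" "v \<in> EE n" "u \<noteq> v"
    then show "(circuit_mat (2*n) C * zmat (2*n) q * adj (circuit_mat (2*n) C)) $$ (u,v) = 0"
      using EE_off[OF n1 Nsupp k] by blast
  qed
  then show ?thesis by simp
qed

lemma ev_tNN: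
  assumes d: "cone_f C {q} \<inter> cone_f C {q'} = {}"
    and k: "n \<le> k1" "k1 < 2*n" "k1 \<notin> cone_f C {q} \<union> cone_f C {q'}" "k2 < n" "k2 \<notin> cone_f C {q} \<union> cone_f C {q'}"
  shows "ev (tvec \<beta> n) ((circuit_mat (2*n) C * zmat (2*n) q * adj (circuit_mat (2*n) C)) *
     (circuit_mat (2*n) C * zmat (2*n) q' * adj (circuit_mat (2*n) C)))
    = of_real (\<beta> * \<beta> * (hq q (ee n 0 0) * hq q' (ee n 0 0)) + \<beta> * (1 - \<beta>) * (hq q (ee n 0 (p1 n)) * hq q' (ee n 0 (p1 n)))
       + (1 - \<beta>) * \<beta> * (hq q (ee n (p1 n) 0) * hq q' (ee n (p1 n) 0))
       + (1 - \<beta>) * (1 - \<beta>) * (hq q (ee n (p1 n) (p1 n)) * hq q' (ee n (p1 n) (p1 n))))"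
proof -
  let ?N = "\<lambda>q. circuit_mat (2*n) C * zmat (2*n) q * adj (circuit_mat (2*n) C)"
  have S: "supp (2*n) (cone_f C {q} \<union> cone_f C {q'}) (?N q * ?N q')" by (rule supp_mult[OF Nsupp Nsupp])
  have dg: "(?N q * ?N q') $$ (u,u) = of_real (hq q u * hq q' u)" if "u < 2^(2*n)" for u
    using diag_prod[OF Nsupp Nsupp d that] Ndiag[OF that, of q] Ndiag[OF that, of q'] by simp
  have "ev (tvec \<beta> n) (?N q * ?N q')
    = of_real (\<beta> * \<beta>) * of_real (hq q (ee n 0 0) * hq q' (ee n 0 0))
    + of_real (\<beta> * (1 - \<beta>)) * of_real (hq q (ee n 0 (p1 n)) * hq q' (ee n 0 (p1 n)))
    + of_real ((1 - \<beta>) * \<beta>) * of_real (hq q (ee n (p1 n) 0) * hq q' (ee n (p1 n) 0))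
    + of_real ((1 - \<beta>) * (1 - \<beta>)) * of_real (hq q (ee n (p1 n) (p1 n)) * hq q' (ee n (p1 n) (p1 n)))"
    unfolding dg[OF ee_lts(1), symmetric] dg[OF ee_lts(2), symmetric] dg[OF ee_lts(3), symmetric] dg[OF ee_lts(4), symmetric]
  proof (rule ev_t[OF n1 be suppD(1)[OF S]])
    fix u v assume "u \<in> EE n" "v \<in> EE n" "u \<noteq> v"
    then show "(?N q * ?N q') $$ (u,v) = 0" using EE_off[OF n1 S k] by blast
  qed
  then show ?thesis by simp
qed

lemma fw_bound: "1 - (2*\<alpha> - 1) * (2*\<alpha> - 1) \<le> 8 * (\<beta> * (1 - \<beta>)) + 3 * \<eta>"
proof -
  let ?X = "cone_b C (cone_f C {0})"
  have X: "finite ?X" "card ?X < n" using cfb[of 0] sh2 by auto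
  obtain p where p: "p < n" "p \<notin> ?X" using pick[OF X, of 0] by auto
  have d: "cone_f C {0} \<inter> cone_f C {p} = {}" by (rule disj_f[OF p(2)])
  obtain k1 k2 where k: "n \<le> k1" "k1 < 2*n" "k1 \<notin> cone_f C {0} \<union> cone_f C {p}" "k2 < n" "k2 \<notin> cone_f C {0} \<union> cone_f C {p}"
    using outside_blocks[of "cone_f C {0}" "cone_f C {p}"] cf1 by blast
  have q: "0 < 2*n" "p < 2*n" using n1 p by auto
  let ?N = "\<lambda>q. circuit_mat (2*n) C * zmat (2*n) q * adj (circuit_mat (2*n) C)"
  let ?x = "circuit_mat (2*n) C *\<^sub>v cat_vec \<alpha> (2*n)"
  have h0: "cmod (ev ?x (?N 0) - ev (tvec \<beta> n) (?N 0)) \<le> \<eta>" by (rule hyp[OF unitary_N])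
  have hp: "cmod (ev ?x (?N p) - ev (tvec \<beta> n) (?N p)) \<le> \<eta>" by (rule hyp[OF unitary_N])
  have hpp: "cmod (ev ?x (?N 0 * ?N p) - ev (tvec \<beta> n) (?N 0 * ?N p)) \<le> \<eta>"
    by (rule hyp[OF unitary_mult[OF unitary_N unitary_N]])
  note e0 = ev_tN[of k1 0 k2] and ep = ev_tN[of k1 p k2]
  have s1: "\<bar>(2*\<alpha> - 1) - (\<beta> * \<beta> * hq 0 (ee n 0 0) + \<beta> * (1 - \<beta>) * hq 0 (ee n 0 (p1 n))
       + (1 - \<beta>) * \<beta> * hq 0 (ee n (p1 n) 0) + (1 - \<beta>) * (1 - \<beta>) * hq 0 (ee n (p1 n) (p1 n)))\<bar> \<le> \<eta>"
    using h0 ev_xN[OF q(1)] e0 k by (intro hyp_real) auto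
  have s2: "\<bar>(2*\<alpha> - 1) - (\<beta> * \<beta> * hq p (ee n 0 0) + \<beta> * (1 - \<beta>) * hq p (ee n 0 (p1 n))
       + (1 - \<beta>) * \<beta> * hq p (ee n (p1 n) 0) + (1 - \<beta>) * (1 - \<beta>) * hq p (ee n (p1 n) (p1 n)))\<bar> \<le> \<eta>"
    using hp ev_xN[OF q(2)] ep k by (intro hyp_real) auto
  have s3: "\<bar>1 - (\<beta> * \<beta> * (hq 0 (ee n 0 0) * hq p (ee n 0 0)) + \<beta> * (1 - \<beta>) * (hq 0 (ee n 0 (p1 n)) * hq p (ee n 0 (p1 n)))
       + (1 - \<beta>) * \<beta> * (hq 0 (ee n (p1 n) 0) * hq p (ee n (p1 n) 0))
       + (1 - \<beta>) * (1 - \<beta>) * (hq 0 (ee n (p1 n) (p1 n)) * hq p (ee n (p1 n) (p1 n))))\<bar> \<le> \<eta>"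
    using hpp ev_xNN[OF q] ev_tNN[OF d k] by (intro hyp_real) simp
  show ?thesis
  proof (rule RF)
    show "0 \<le> \<beta>" "\<beta> \<le> 1" "0 \<le> \<eta>" using be et by auto
    show "\<bar>2 * \<alpha> - 1\<bar> \<le> 1" using al by auto
    show "\<bar>hq 0 (ee n 0 0)\<bar> \<le> 1" "\<bar>hq 0 (ee n 0 (p1 n))\<bar> \<le> 1" "\<bar>hq 0 (ee n (p1 n) 0)\<bar> \<le> 1"
      "\<bar>hq 0 (ee n (p1 n) (p1 n))\<bar> \<le> 1" using Ndiag ee_lts by auto
    show "\<bar>hq p (ee n 0 0)\<bar> \<le> 1" "\<bar>hq p (ee n 0 (p1 n))\<bar> \<le> 1" "\<bar>hq p (ee n (p1 n) 0)\<bar> \<le> 1"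
      "\<bar>hq p (ee n (p1 n) (p1 n))\<bar> \<le> 1" using Ndiag ee_lts by auto
  qed (use s1 s2 s3 in \<open>simp_all add: abs_minus_commute\<close>)
qed

end

lemma nsq_tvec: assumes n: "n \<ge> 1" and b: "\<beta> \<in> {0..1}" shows "nsq (tvec \<beta> n) = 1"
proof -
  have I: "diagm (2*n) (\<lambda>_. 1) = 1\<^sub>m (2^(2*n))" by (rule eq_matI) (auto simp: diagm_def)
  have "ev (tvec \<beta> n) (1\<^sub>m (2^(2*n))) = of_real (nsq (tvec \<beta> n))"
    unfolding ev_def using tvec_carrier[of \<beta> n] by (simp add: ip_self)
  moreover have "ev (tvec \<beta> n) (1\<^sub>m (2^(2*n))) = 1"
    unfolding I[symmetric] ev_t_diag[OF n b]
    by (simp add: algebra_simps flip: of_real_mult of_real_add of_real_diff)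
  ultimately show ?thesis by (metis of_real_eq_1_iff)
qed

lemma core:
  fixes n :: nat and C :: circuit and \<alpha> \<beta> \<eta> :: real
  assumes n1: "n \<ge> 1" and vc: "valid_circuit (2*n) C" and sh: "2 * 4^(length C) < n"
    and al: "\<alpha> \<in> {0..1}" and be: "\<beta> \<in> {0..1}" and et: "\<eta> \<ge> 0"
    and hyp: "\<And>O'. is_unitary (2^(2*n)) O' \<Longrightarrow>
       cmod (ev (circuit_mat (2*n) C *\<^sub>v cat_vec \<alpha> (2*n)) O' - ev (tvec \<beta> n) O') \<le> \<eta>"
  shows "\<beta> * (1 - \<beta>) \<le> 2 * \<eta> \<and> \<alpha> * (1 - \<alpha>) \<le> 4 * \<eta>"
proof -
  have b: "1 - (2*\<beta> - 1) * (2*\<beta> - 1) \<le> 6 * \<eta>" by (rule bw_bound[OF n1 vc sh al be et hyp])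
  have f: "1 - (2*\<alpha> - 1) * (2*\<alpha> - 1) \<le> 8 * (\<beta> * (1 - \<beta>)) + 3 * \<eta>" by (rule fw_bound[OF n1 vc sh al be et hyp])
  have "1 - (2*\<beta> - 1) * (2*\<beta> - 1) = 4 * (\<beta> * (1 - \<beta>))" "1 - (2*\<alpha> - 1) * (2*\<alpha> - 1) = 4 * (\<alpha> * (1 - \<alpha>))"
    by (simp_all add: algebra_simps)
  then show ?thesis using b f et by linarith
qed

lemma depth_from:
  fixes L :: real and n d :: nat
  assumes L: "L \<ge> 3" "L \<le> real n" and nd: "n \<le> 2 * 4^d"
  shows "real d \<ge> 1 / (2 * ln 4) * ln L"
proof -
  have d1: "d \<ge> 1"
  proof (rule ccontr)
    assume "\<not> d \<ge> 1" then have "d = 0" by simp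
    then have "n \<le> 2" using nd by simp
    then show False using L by simp
  qed
  have "real n \<le> real (2 * 4 ^ d)" using nd by (simp only: of_nat_le_iff)
  then have "L \<le> 2 * 4 ^ d" using L by simp
  then have "ln L \<le> ln (2 * 4 ^ d)" using L by (intro ln_mono) auto
  also have "\<dots> = ln 2 + real d * ln 4" by (simp add: ln_mult ln_realpow)
  also have "ln 2 \<le> real d * ln (4::real)"
  proof -
    have "ln (2::real) \<le> ln 4" by (intro ln_mono) auto
    also have "\<dots> \<le> real d * ln 4" using d1 ln4_gt1 by simp
    finally show ?thesis .
  qed
  finally have "ln L \<le> 2 * ln 4 * real d" by (simp add: mult_ac)
  then show ?thesis using ln4_gt1 by (simp add: field_simps)
qed

lemma psi_proj:
  "circuit_mat (2*n) U * cat_dm \<alpha> (2*n) * adj (circuit_mat (2*n) U) = proj (circuit_mat (2*n) U *\<^sub>v cat_vec \<alpha> (2*n))"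
  unfolding cat_dm_def by (rule proj_conj[OF circuit_carrier cat_carrier])

theorem theorem7p3:
  shows
  "(\<exists>c>0. \<exists>N. \<forall>n \<ge> 2. \<forall>\<alpha> \<beta> :: real. \<forall>U :: circuit.
      \<alpha> \<in> {0..1} \<longrightarrow> \<beta> \<in> {0..1} \<longrightarrow> real n \<ge> N \<longrightarrow>
      valid_circuit (2*n) U \<longrightarrow>
      circuit_mat (2*n) U * cat_dm \<alpha> (2*n) * adj (circuit_mat (2*n) U)
        = tensor_mat (cat_dm \<beta> n) (cat_dm \<beta> n) \<longrightarrow>
      bin_entropy \<alpha> \<noteq> 2 * bin_entropy \<beta> \<longrightarrow>
      real (depth U) \<ge> c * ln (real n))
   \<and>
   (\<exists>c>0. \<exists>N. \<forall>n \<ge> 2. \<forall>\<alpha> \<beta> \<epsilon> :: real. \<forall>V :: circuit. \<forall>\<psi>.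
      \<alpha> \<in> {0..1} \<longrightarrow> \<beta> \<in> {0..1} \<longrightarrow> \<epsilon> > 0 \<longrightarrow>
      valid_circuit (2*n) V \<longrightarrow>
      \<psi> = circuit_mat (2*n) V * cat_dm \<alpha> (2*n) * adj (circuit_mat (2*n) V) \<longrightarrow>
      trace_norm (\<psi> - tensor_mat (cat_dm \<beta> n) (cat_dm \<beta> n)) \<le> \<epsilon> \<longrightarrow>
      min (real n) (\<bar>2 * bin_entropy \<beta> - bin_entropy \<alpha>\<bar> powr (ln 4) / \<epsilon>) \<ge> N \<longrightarrow>
      real (depth V) \<ge> c * ln (min (real n) (\<bar>2 * bin_entropy \<beta> - bin_entropy \<alpha>\<bar> powr (ln 4) / \<epsilon>)))"
proof (intro conjI)
  have c0: "1 / (2 * ln 4) > (0::real)" using ln4_gt1 by simp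
  show "\<exists>c>0. \<exists>N. \<forall>n \<ge> 2. \<forall>\<alpha> \<beta> :: real. \<forall>U :: circuit.
      \<alpha> \<in> {0..1} \<longrightarrow> \<beta> \<in> {0..1} \<longrightarrow> real n \<ge> N \<longrightarrow>
      valid_circuit (2*n) U \<longrightarrow>
      circuit_mat (2*n) U * cat_dm \<alpha> (2*n) * adj (circuit_mat (2*n) U)
        = tensor_mat (cat_dm \<beta> n) (cat_dm \<beta> n) \<longrightarrow>
      bin_entropy \<alpha> \<noteq> 2 * bin_entropy \<beta> \<longrightarrow>
      real (depth U) \<ge> c * ln (real n)"
  proof (rule exI[of _ "1 / (2 * ln 4)"], intro conjI c0, rule exI[of _ 3], intro allI impI)
    fix n :: nat and \<alpha> \<beta> :: real and U :: circuit
    assume n2: "2 \<le> n" and al: "\<alpha> \<in> {0..1}" and be: "\<beta> \<in> {0..1}" and N: "3 \<le> real n"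
      and vc: "valid_circuit (2*n) U"
      and eq: "circuit_mat (2*n) U * cat_dm \<alpha> (2*n) * adj (circuit_mat (2*n) U) = tensor_mat (cat_dm \<beta> n) (cat_dm \<beta> n)"
      and H: "bin_entropy \<alpha> \<noteq> 2 * bin_entropy \<beta>"
    have n1: "n \<ge> 1" and m1: "2 * n \<ge> 1" using n2 by auto
    show "1 / (2 * ln 4) * ln (real n) \<le> real (depth U)"
    proof (cases "2 * 4 ^ length U < n")
      case True
      let ?x = "circuit_mat (2*n) U *\<^sub>v cat_vec \<alpha> (2*n)"
      have px: "proj ?x = proj (tvec \<beta> n)" using eq unfolding psi_proj tensor_proj .
      have xc: "?x \<in> carrier_vec (2^(2*n))" by (rule mult_mat_vec_carrier[OF circuit_carrier cat_carrier])
      have nx: "nsq ?x = 1" using nsq_unitary[OF unitary_circuit[OF vc] cat_carrier] nsq_cat[OF m1 al] by simp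
      have hyp: "cmod (ev ?x O' - ev (tvec \<beta> n) O') \<le> 0" if "is_unitary (2^(2*n)) O'" for O'
        using ev_eq_proj[OF xc tvec_carrier nx nsq_tvec[OF n1 be] that px] by simp
      have "\<beta> * (1 - \<beta>) \<le> 2 * 0 \<and> \<alpha> * (1 - \<alpha>) \<le> 4 * 0"
        by (rule core[OF n1 vc True al be _ hyp]) simp
      moreover have "0 \<le> \<beta> * (1 - \<beta>)" "0 \<le> \<alpha> * (1 - \<alpha>)" using al be by auto
      ultimately have "\<beta> * (1 - \<beta>) = 0" "\<alpha> * (1 - \<alpha>) = 0" by linarith+
      then have "(\<beta> = 0 \<or> \<beta> = 1) \<and> (\<alpha> = 0 \<or> \<alpha> = 1)" by simp
      then have "bin_entropy \<alpha> = 0" "bin_entropy \<beta> = 0" by (auto simp: bin_entropy_def)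
      with H show ?thesis by simp
    next
      case False
      then show ?thesis using depth_from[of "real n" n "length U"] N by (simp add: depth_def)
    qed
  qed
  define K0 :: real where "K0 = (3 * KH) powr (ln 4) * 8"
  show "\<exists>c>0. \<exists>N. \<forall>n \<ge> 2. \<forall>\<alpha> \<beta> \<epsilon> :: real. \<forall>V :: circuit. \<forall>\<psi>.
      \<alpha> \<in> {0..1} \<longrightarrow> \<beta> \<in> {0..1} \<longrightarrow> \<epsilon> > 0 \<longrightarrow>
      valid_circuit (2*n) V \<longrightarrow>
      \<psi> = circuit_mat (2*n) V * cat_dm \<alpha> (2*n) * adj (circuit_mat (2*n) V) \<longrightarrow>
      trace_norm (\<psi> - tensor_mat (cat_dm \<beta> n) (cat_dm \<beta> n)) \<le> \<epsilon> \<longrightarrow>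
      min (real n) (\<bar>2 * bin_entropy \<beta> - bin_entropy \<alpha>\<bar> powr (ln 4) / \<epsilon>) \<ge> N \<longrightarrow>
      real (depth V) \<ge> c * ln (min (real n) (\<bar>2 * bin_entropy \<beta> - bin_entropy \<alpha>\<bar> powr (ln 4) / \<epsilon>))"
  proof (rule exI[of _ "1 / (2 * ln 4)"], intro conjI c0, rule exI[of _ "max 3 (K0 + 1)"], intro allI impI)
    fix n :: nat and \<alpha> \<beta> \<epsilon> :: real and V :: circuit and \<psi> :: "complex mat"
    assume n2: "2 \<le> n" and al: "\<alpha> \<in> {0..1}" and be: "\<beta> \<in> {0..1}" and ep: "0 < \<epsilon>"
      and vc: "valid_circuit (2*n) V"
      and ps: "\<psi> = circuit_mat (2*n) V * cat_dm \<alpha> (2*n) * adj (circuit_mat (2*n) V)"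
      and tn: "trace_norm (\<psi> - tensor_mat (cat_dm \<beta> n) (cat_dm \<beta> n)) \<le> \<epsilon>"
      and N: "max 3 (K0 + 1) \<le> min (real n) (\<bar>2 * bin_entropy \<beta> - bin_entropy \<alpha>\<bar> powr (ln 4) / \<epsilon>)"
    let ?L = "min (real n) (\<bar>2 * bin_entropy \<beta> - bin_entropy \<alpha>\<bar> powr (ln 4) / \<epsilon>)"
    have n1: "n \<ge> 1" and m1: "2 * n \<ge> 1" using n2 by auto
    show "1 / (2 * ln 4) * ln ?L \<le> real (depth V)"
    proof (cases "2 * 4 ^ length V < n")
      case True
      let ?x = "circuit_mat (2*n) V *\<^sub>v cat_vec \<alpha> (2*n)"
      have px: "\<psi> - tensor_mat (cat_dm \<beta> n) (cat_dm \<beta> n) = proj ?x - proj (tvec \<beta> n)"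
        using ps unfolding psi_proj tensor_proj by simp
      have xc: "?x \<in> carrier_vec (2^(2*n))" by (rule mult_mat_vec_carrier[OF circuit_carrier cat_carrier])
      have nx: "nsq ?x = 1" using nsq_unitary[OF unitary_circuit[OF vc] cat_carrier] nsq_cat[OF m1 al] by simp
      have hyp: "cmod (ev ?x O' - ev (tvec \<beta> n) O') \<le> 2 * \<epsilon>" if "is_unitary (2^(2*n)) O'" for O'
        using ev_bound_tn[OF xc tvec_carrier nx nsq_tvec[OF n1 be] that] tn px by simp
      have "\<beta> * (1 - \<beta>) \<le> 2 * (2 * \<epsilon>) \<and> \<alpha> * (1 - \<alpha>) \<le> 4 * (2 * \<epsilon>)"
        by (rule core[OF n1 vc True al be _ hyp]) (use ep in simp)
      then have pa: "\<alpha> * (1 - \<alpha>) \<le> 8 * \<epsilon>" and pb: "\<beta> * (1 - \<beta>) \<le> 8 * \<epsilon>" using ep by auto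
      have "\<bar>2 * bin_entropy \<beta> - bin_entropy \<alpha>\<bar> powr (ln 4) \<le> (3 * KH) powr (ln 4) * 8 * \<epsilon>"
        by (rule Delta_bound) (use al be ep pa pb in auto)
      then have "\<bar>2 * bin_entropy \<beta> - bin_entropy \<alpha>\<bar> powr (ln 4) / \<epsilon> \<le> K0"
        using ep by (simp add: K0_def pos_divide_le_eq)
      then show ?thesis using N by linarith
    next
      case False
      have L3: "?L \<ge> 3" using N by linarith
      have "?L \<le> real n" by simp
      then show ?thesis using depth_from[OF L3 _, of n "length V"] False by (simp add: depth_def)
    qed
  qed
qed

end
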